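(* Consider system (SICMR) with all parameters positive, on the set $\Omega$. 1. If $\mathcal{R}_0\le 1$, the disease-free equilibrium $E_0=(\alpha/\mu,0,0,0,0)$ is globally asymptotically stable in $\Omega$; if $\mathcal{R}_0>1$, $E_0$ is unstable. 2. If $p<m+d+\mu$ and $1<\mathcal{R}_0<1+\frac{\varepsilon bc}{a\mu}$, then $E_1$ is unstable. 3. If $p<m+d+\mu$, $\mathcal{R}_0>1$ and $\mathcal{R}_0\ge 1+\frac{\varepsilon bc}{a\mu}$, then $E_1$ is locally asymptotically stable and every solution starting in $\Omega$ with $I(0)>0$ converges to $E_1$. 4. If $p>m+d+\mu$ and $1<\mathcal{R}_0\le 1+\frac{\varepsilon bc}{a\mu}$, then $E_1$ is locally asymptotically stable and every solution starting in $\Omega$ with $I(0)>0$ converges to $E_1$. 5. If $p>m+d+\mu$ and $\mathcal{R}_0>1+\frac{\varepsilon bc}{a\mu}$, then $E_1$ is unstable.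
   Context: System (SICMR) is the ODE system in $(S,I,C,M,R)$: $S'=\alpha-cSI-\mu S$, $I'=cSI-\frac{pC}{\varepsilon+I+aM}I-\gamma I-\mu I$, $C'=\frac{pC}{\varepsilon+I+aM}I-mC-dC-\mu C$, $M'=mC-qM-\mu M$, $R'=qM+\gamma I-\mu R$, where $\alpha,c,\mu,p,\varepsilon,a,\gamma,m,d,q$ are positive constants. $\Omega=\{(S,I,C,M,R)\in\mathbb{R}_{\ge0}^5: S+I+C+M+R\le \alpha/\mu\}$ (positively invariant for the system). The basic reproduction number is $\mathcal{R}_0=\frac{c\alpha}{\mu(\mu+\gamma)}$, and $b=\frac{a(m+d+\mu)}{p-m-d-\mu}$ (for $p\ne m+d+\mu$). For $\mathcal{R}_0>1$, $E_1=\left(\frac{\mu+\gamma}{c},\frac{\mu}{c}(\mathcal{R}_0-1),0,0,\frac{\gamma}{c}(\mathcal{R}_0-1)\right)$ is the boundary equilibrium. "Globally asymptotically stable in a set $X$" means locally asymptotically stable and attracting every solution with initial value in $X$. *)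

theory Defs
  imports "HOL-Analysis.Analysis"
begin

text \<open>States are vectors in R^5 with components (S, I, C, M, R) = (x$1, x$2, x$3, x$4, x$5).\<close>

definition mk5 :: "real \<Rightarrow> real \<Rightarrow> real \<Rightarrow> real \<Rightarrow> real \<Rightarrow> real^5" where
  "mk5 s i c m r = (\<chi> k. if k = 1 then s else if k = 2 then i else if k = 3 then c
                         else if k = 4 then m else r)"

definition sicmr :: "real \<Rightarrow> real \<Rightarrow> real \<Rightarrow> real \<Rightarrow> real \<Rightarrow> real \<Rightarrow> real \<Rightarrow> real \<Rightarrow> real \<Rightarrow> real
                      \<Rightarrow> real^5 \<Rightarrow> real^5" where
  "sicmr \<alpha> c \<mu> p \<epsilon> a \<gamma> m d q x =
     (let S = x$1; I = x$2; C = x$3; M = x$4; R = x$5 in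
      mk5 (\<alpha> - c*S*I - \<mu>*S)
          (c*S*I - (p*C/(\<epsilon> + I + a*M))*I - \<gamma>*I - \<mu>*I)
          ((p*C/(\<epsilon> + I + a*M))*I - m*C - d*C - \<mu>*C)
          (m*C - q*M - \<mu>*M)
          (q*M + \<gamma>*I - \<mu>*R))"

definition Omega :: "real \<Rightarrow> real \<Rightarrow> (real^5) set" where
  "Omega \<alpha> \<mu> = {x. (\<forall>k. 0 \<le> x$k) \<and> x$1 + x$2 + x$3 + x$4 + x$5 \<le> \<alpha>/\<mu>}"

definition R0 :: "real \<Rightarrow> real \<Rightarrow> real \<Rightarrow> real \<Rightarrow> real" where
  "R0 \<alpha> c \<mu> \<gamma> = c*\<alpha>/(\<mu>*(\<mu>+\<gamma>))"

definition bb :: "real \<Rightarrow> real \<Rightarrow> real \<Rightarrow> real \<Rightarrow> real \<Rightarrow> real" where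
  "bb a m d \<mu> p = a*(m+d+\<mu>)/(p-m-d-\<mu>)"

definition E0 :: "real \<Rightarrow> real \<Rightarrow> real^5" where
  "E0 \<alpha> \<mu> = mk5 (\<alpha>/\<mu>) 0 0 0 0"

definition E1 :: "real \<Rightarrow> real \<Rightarrow> real \<Rightarrow> real \<Rightarrow> real^5" where
  "E1 \<alpha> c \<mu> \<gamma> = mk5 ((\<mu>+\<gamma>)/c) (\<mu>/c*(R0 \<alpha> c \<mu> \<gamma> - 1)) 0 0 (\<gamma>/c*(R0 \<alpha> c \<mu> \<gamma> - 1))"

definition is_solution :: "('a::real_normed_vector \<Rightarrow> 'a) \<Rightarrow> (real \<Rightarrow> 'a) \<Rightarrow> bool" where
  "is_solution f x \<longleftrightarrow> (\<forall>t\<ge>0. (x has_vector_derivative f (x t)) (at t within {0..}))"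

definition stable_in :: "('a::real_normed_vector \<Rightarrow> 'a) \<Rightarrow> 'a set \<Rightarrow> 'a \<Rightarrow> bool" where
  "stable_in f X e \<longleftrightarrow>
     (\<forall>\<epsilon>>0. \<exists>\<delta>>0. \<forall>x. is_solution f x \<and> x 0 \<in> X \<and> dist (x 0) e < \<delta>
                     \<longrightarrow> (\<forall>t\<ge>0. dist (x t) e < \<epsilon>))"

definition unstable_in :: "('a::real_normed_vector \<Rightarrow> 'a) \<Rightarrow> 'a set \<Rightarrow> 'a \<Rightarrow> bool" where
  "unstable_in f X e \<longleftrightarrow> \<not> stable_in f X e"

definition locally_asymptotically_stable_in :: "('a::real_normed_vector \<Rightarrow> 'a) \<Rightarrow> 'a set \<Rightarrow> 'a \<Rightarrow> bool" where
  "locally_asymptotically_stable_in f X e \<longleftrightarrow> stable_in f X e \<and>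
     (\<exists>\<delta>>0. \<forall>x. is_solution f x \<and> x 0 \<in> X \<and> dist (x 0) e < \<delta> \<longrightarrow> (x \<longlongrightarrow> e) at_top)"

definition globally_asymptotically_stable_in :: "('a::real_normed_vector \<Rightarrow> 'a) \<Rightarrow> 'a set \<Rightarrow> 'a \<Rightarrow> bool" where
  "globally_asymptotically_stable_in f X e \<longleftrightarrow> locally_asymptotically_stable_in f X e \<and>
     (\<forall>x. is_solution f x \<and> x 0 \<in> X \<longrightarrow> (x \<longlongrightarrow> e) at_top)"

end

theory Submission
  imports Defs "HOL-Real_Asymp.Real_Asymp"
begin

lemma five_cases: "(k::5) = 1 \<or> k = 2 \<or> k = 3 \<or> k = 4 \<or> k = 5"
proof -
  have "{1,2,3,4,5::5} = UNIV"
    by (rule card_subset_eq) auto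
  thus ?thesis by auto
qed
lemma mk5_nth[simp]: "mk5 s i c m r $ 1 = s" "mk5 s i c m r $ 2 = i" "mk5 s i c m r $ 3 = c"
  "mk5 s i c m r $ 4 = m" "mk5 s i c m r $ 5 = r"
  by (simp_all add: mk5_def)
lemma comp_deriv: "(x has_vector_derivative v) F \<Longrightarrow> ((\<lambda>t. x t $ i) has_real_derivative v $ i) F"
  unfolding has_real_derivative_iff_has_vector_derivative
  by (rule bounded_linear.has_vector_derivative[OF bounded_linear_vec_nth])


lemma deriv_at_pos:
  assumes "(y has_real_derivative d) (at t within {0..})" "t > 0"
  shows "(y has_real_derivative d) (at t)"
proof -
  have "(y has_real_derivative d) (at t within {0<..})"
  proof (rule DERIV_subset[OF assms(1)]) qed auto
  thus ?thesis using at_within_open[of t "{0<..}"] assms(2) by auto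
qed

lemma cont_from_deriv:
  assumes "0 \<le> a" and d: "\<And>t. t \<in> {a..b} \<Longrightarrow> (y has_real_derivative y' t) (at t within {0..})"
  shows "continuous_on {a..b} y"
  unfolding continuous_on_eq_continuous_within
proof
  fix t assume t: "t \<in> {a..b}"
  have "continuous (at t within {0..}) y" using d[OF t] by (rule DERIV_continuous)
  then show "continuous (at t within {a..b}) y"
    by (rule continuous_within_subset) (use \<open>0\<le>a\<close> in auto)
qed

lemma mono_deriv:
  fixes y y' :: "real \<Rightarrow> real"
  assumes "0 \<le> a" "a \<le> b"
    and d: "\<And>t. t \<in> {a..b} \<Longrightarrow> (y has_real_derivative y' t) (at t within {0..})"
    and nn: "\<And>t. a < t \<Longrightarrow> t < b \<Longrightarrow> y' t \<ge> 0"
  shows "y a \<le> y b"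
proof (rule DERIV_nonneg_imp_increasing_open[OF \<open>a\<le>b\<close>])
  fix t assume t: "a < t" "t < b"
  then show "\<exists>yy. DERIV y t :> yy \<and> yy \<ge> 0" using d[of t] nn[OF t] \<open>0\<le>a\<close>
    by (intro exI[of _ "y' t"]) (auto intro: deriv_at_pos)
next
  show "continuous_on {a..b} y" by (rule cont_from_deriv[OF \<open>0\<le>a\<close> d])
qed

lemma stay_nonneg:
  fixes y y' :: "real \<Rightarrow> real"
  assumes "0 \<le> a"
    and d: "\<And>t. t \<in> {a..b} \<Longrightarrow> (y has_real_derivative y' t) (at t within {0..})"
    and y0: "y a \<ge> 0"
    and K: "\<And>t. t \<in> {a..b} \<Longrightarrow> y t < 0 \<Longrightarrow> y' t \<ge> K * y t"
    and t: "t \<in> {a..b}"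
  shows "y t \<ge> 0"
proof (rule ccontr)
  assume neg: "\<not> y t \<ge> 0"
  have cont: "continuous_on {a..t} y" using t by (intro cont_from_deriv[of a t y y'] \<open>0\<le>a\<close>) (use d t in auto)
  let ?A = "{a..t} \<inter> y -` {0..}"
  have "closed ?A" by (rule continuous_closed_preimage[OF cont]) auto
  moreover have "bounded ?A" by (rule bounded_subset[of "{a..t}"]) auto
  ultimately have "compact ?A" using compact_eq_bounded_closed by blast
  have "a \<in> ?A" using y0 t by auto
  then obtain s where s: "s \<in> ?A" "\<forall>u\<in>?A. u \<le> s" using compact_attains_sup[OF \<open>compact ?A\<close>] by blast
  have st: "s < t" using s neg by (cases "s = t") auto
  have neg2: "y u < 0" if "s < u" "u \<le> t" for u
  proof (rule ccontr)
    assume "\<not> y u < 0"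
    hence "u \<in> ?A" using that s(1) by auto
    thus False using s(2) that by force
  qed
  define z where "z u = y u * exp (-K*u)" for u
  have "z s \<le> z t"
  proof (rule mono_deriv[of s t z "\<lambda>u. (y' u - K*y u)*exp(-K*u)"])
    show "0 \<le> s" using s \<open>0\<le>a\<close> by auto
    show "s \<le> t" using st by simp
    fix u assume u: "u \<in> {s..t}"
    have "u \<in> {a..b}" using u s t by auto
    from d[OF this] show "(z has_real_derivative (y' u - K*y u)*exp(-K*u)) (at u within {0..})"
      unfolding z_def by (auto intro!: derivative_eq_intros simp: algebra_simps)
  next
    fix u assume u: "s < u" "u < t"
    have "u \<in> {a..b}" using u s t by auto
    with K[OF this] neg2[of u] u show "0 \<le> (y' u - K * y u) * exp (- K * u)" by auto
  qed
  moreover have "z s \<ge> 0" using s unfolding z_def by auto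
  moreover have "z t < 0" using neg unfolding z_def by (simp add: mult_neg_pos)
  ultimately show False by simp
qed

lemma exp_growth:
  fixes y y' :: "real \<Rightarrow> real"
  assumes "0 \<le> a" and d: "\<And>t. t \<ge> a \<Longrightarrow> (y has_real_derivative y' t) (at t within {0..})"
    and g: "\<And>t. t \<ge> a \<Longrightarrow> y' t \<ge> k * y t" and "t \<ge> a"
  shows "y t \<ge> y a * exp (k*(t-a))"
proof -
  define z where "z u = y u * exp (-k*u)" for u
  have "z a \<le> z t"
  proof (rule mono_deriv[of a t z "\<lambda>u. (y' u - k*y u)*exp(-k*u)"])
    fix u assume u: "u \<in> {a..t}"
    from d[of u] u show "(z has_real_derivative (y' u - k*y u)*exp(-k*u)) (at u within {0..})"
      unfolding z_def by (auto intro!: derivative_eq_intros simp: algebra_simps)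
  next
    fix u assume u: "a < u" "u < t"
    with g[of u] show "0 \<le> (y' u - k * y u) * exp (- k * u)" by auto
  qed (use assms in auto)
  hence "y a * exp (-k*a) * exp (k*t) \<le> y t * exp (-k*t) * exp (k*t)"
    unfolding z_def by (intro mult_right_mono) auto
  thus ?thesis by (simp add: mult.assoc flip: exp_add) (simp add: algebra_simps)
qed

lemma lin_upper:
  fixes y y' :: "real \<Rightarrow> real"
  assumes "0 \<le> a" and d: "\<And>t. t \<ge> a \<Longrightarrow> (y has_real_derivative y' t) (at t within {0..})"
    and \<beta>: "\<beta> > 0" and le: "\<And>t. t \<ge> a \<Longrightarrow> y' t \<le> A - \<beta> * y t" and "t \<ge> a"
  shows "y t \<le> A/\<beta> + (y a - A/\<beta>) * exp (-\<beta>*(t-a))"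
proof -
  define z where "z u = (A/\<beta> - y u) * exp (\<beta>*u)" for u
  have "z a \<le> z t"
  proof (rule mono_deriv[of a t z "\<lambda>u. (A - \<beta>*y u - y' u)*exp(\<beta>*u)"])
    fix u assume u: "u \<in> {a..t}"
    from d[of u] u \<beta> show "(z has_real_derivative (A - \<beta>*y u - y' u)*exp(\<beta>*u)) (at u within {0..})"
      unfolding z_def by (auto intro!: derivative_eq_intros simp: algebra_simps)
  next
    fix u assume u: "a < u" "u < t"
    with le[of u] show "0 \<le> (A - \<beta>*y u - y' u) * exp (\<beta> * u)" by auto
  qed (use assms in auto)
  hence "(A/\<beta> - y a) * exp (\<beta>*a) * exp (-\<beta>*t) \<le> (A/\<beta> - y t) * exp (\<beta>*t) * exp (-\<beta>*t)"
    unfolding z_def by (intro mult_right_mono) auto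
  hence "(A/\<beta> - y a) * exp (-\<beta>*(t-a)) \<le> (A/\<beta> - y t)"
    by (simp add: mult.assoc flip: exp_add) (simp add: algebra_simps)
  thus ?thesis by (simp add: algebra_simps)
qed

lemma lin_lower:
  fixes y y' :: "real \<Rightarrow> real"
  assumes "0 \<le> a" and d: "\<And>t. t \<ge> a \<Longrightarrow> (y has_real_derivative y' t) (at t within {0..})"
    and \<beta>: "\<beta> > 0" and le: "\<And>t. t \<ge> a \<Longrightarrow> y' t \<ge> A - \<beta> * y t" and "t \<ge> a"
  shows "y t \<ge> A/\<beta> + (y a - A/\<beta>) * exp (-\<beta>*(t-a))"
proof -
  have le': "- y' t \<le> (-A) - \<beta> * (- y t)" if "t \<ge> a" for t using le[OF that] by linarith
  have "- y t \<le> (-A)/\<beta> + (- y a - (-A)/\<beta>) * exp (-\<beta>*(t-a))"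
    by (rule lin_upper[of a "\<lambda>t. - y t" "\<lambda>t. - y' t"]) (use assms le' in \<open>auto intro!: derivative_eq_intros\<close>)
  thus ?thesis by (simp add: algebra_simps)
qed

lemma lin_upper_max:
  fixes y y' :: "real \<Rightarrow> real"
  assumes "0 \<le> a" and d: "\<And>t. t \<ge> a \<Longrightarrow> (y has_real_derivative y' t) (at t within {0..})"
    and \<beta>: "\<beta> > 0" and le: "\<And>t. t \<ge> a \<Longrightarrow> y' t \<le> A - \<beta> * y t" and "t \<ge> a"
  shows "y t \<le> max (y a) (A/\<beta>)"
proof -
  have e: "exp (-\<beta>*(t-a)) \<le> 1" "exp (-\<beta>*(t-a)) > 0" using \<beta> \<open>t\<ge>a\<close> by auto
  have "y t \<le> A/\<beta> + (y a - A/\<beta>) * exp (-\<beta>*(t-a))" by (rule lin_upper[OF assms])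
  moreover have "(y a - A/\<beta>) * exp (-\<beta>*(t-a)) \<le> max 0 (y a - A/\<beta>)"
    using e by (cases "y a - A/\<beta> \<ge> 0") (auto intro: mult_left_le mult_nonpos_nonneg)
  ultimately show ?thesis by auto
qed

lemma lin_lower_min:
  fixes y y' :: "real \<Rightarrow> real"
  assumes "0 \<le> a" and d: "\<And>t. t \<ge> a \<Longrightarrow> (y has_real_derivative y' t) (at t within {0..})"
    and \<beta>: "\<beta> > 0" and le: "\<And>t. t \<ge> a \<Longrightarrow> y' t \<ge> A - \<beta> * y t" and "t \<ge> a"
  shows "y t \<ge> min (y a) (A/\<beta>)"
proof -
  have le': "- y' t \<le> (-A) - \<beta> * (- y t)" if "t \<ge> a" for t using le[OF that] by linarith
  have "- y t \<le> max (- y a) ((-A)/\<beta>)"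
    by (rule lin_upper_max[of a "\<lambda>t. - y t" "\<lambda>t. - y' t"]) (use assms le' in \<open>auto intro!: derivative_eq_intros\<close>)
  thus ?thesis by auto
qed

lemma exp_decay_to0: "\<beta> > 0 \<Longrightarrow> ((\<lambda>t. D * exp (-\<beta>*(t-T))) \<longlongrightarrow> (0::real)) at_top"
  by real_asymp

lemma lin_limit:
  fixes y y' g :: "real \<Rightarrow> real"
  assumes "0 \<le> a" and d: "\<And>t. t \<ge> a \<Longrightarrow> (y has_real_derivative y' t) (at t within {0..})"
    and \<beta>: "\<beta> > 0" and eq: "\<And>t. t \<ge> a \<Longrightarrow> y' t = g t - \<beta> * y t"
    and g: "(g \<longlongrightarrow> L) at_top"
  shows "(y \<longlongrightarrow> L/\<beta>) at_top"
proof (rule tendstoI)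
  fix \<eta> :: real assume \<eta>: "\<eta> > 0"
  define \<eta>1 where "\<eta>1 = \<eta>*\<beta>/2"
  have \<eta>1: "\<eta>1 > 0" using \<eta> \<beta> by (simp add: \<eta>1_def)
  have "eventually (\<lambda>t. dist (g t) L < \<eta>1) at_top" using tendstoD[OF g \<eta>1] .
  then obtain T0 where T0: "\<And>t. t \<ge> T0 \<Longrightarrow> dist (g t) L < \<eta>1" by (auto simp: eventually_at_top_linorder)
  define T where "T = max T0 a"
  have T: "T \<ge> a" "T \<ge> 0" using \<open>0\<le>a\<close> by (auto simp: T_def)
  have gb: "g t \<le> L + \<eta>1" "g t \<ge> L - \<eta>1" if "t \<ge> T" for t
    using T0[of t] that by (auto simp: T_def dist_real_def abs_less_iff)
  have up: "y t \<le> (L+\<eta>1)/\<beta> + (y T - (L+\<eta>1)/\<beta>) * exp (-\<beta>*(t-T))" if "t \<ge> T" for t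
    by (rule lin_upper[of T y y']) (use that T d \<beta> eq gb in \<open>auto simp: T_def\<close>)
  have lo: "y t \<ge> (L-\<eta>1)/\<beta> + (y T - (L-\<eta>1)/\<beta>) * exp (-\<beta>*(t-T))" if "t \<ge> T" for t
    by (rule lin_lower[of T y y']) (use that T d \<beta> eq gb in \<open>auto simp: T_def\<close>)
  have e1: "eventually (\<lambda>t. dist ((y T - (L+\<eta>1)/\<beta>) * exp (-\<beta>*(t-T))) 0 < \<eta>/2) at_top"
    using tendstoD[OF exp_decay_to0[OF \<beta>, of "y T - (L+\<eta>1)/\<beta>" T], of "\<eta>/2"] \<eta> by simp
  have e2: "eventually (\<lambda>t. dist ((y T - (L-\<eta>1)/\<beta>) * exp (-\<beta>*(t-T))) 0 < \<eta>/2) at_top"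
    using tendstoD[OF exp_decay_to0[OF \<beta>, of "y T - (L-\<eta>1)/\<beta>" T], of "\<eta>/2"] \<eta> by simp
  have e3: "eventually (\<lambda>t. t \<ge> T) at_top" by simp
  show "eventually (\<lambda>t. dist (y t) (L/\<beta>) < \<eta>) at_top"
    using e1 e2 e3
  proof eventually_elim
    case (elim t)
    have q: "\<eta>1/\<beta> = \<eta>/2" using \<beta> by (simp add: \<eta>1_def)
    have q1: "(L+\<eta>1)/\<beta> = L/\<beta> + \<eta>/2" and q2: "(L-\<eta>1)/\<beta> = L/\<beta> - \<eta>/2"
      using q by (simp_all add: add_divide_distrib diff_divide_distrib)
    define X1 where "X1 = (y T - (L+\<eta>1)/\<beta>) * exp (-\<beta>*(t-T))"
    define X2 where "X2 = (y T - (L-\<eta>1)/\<beta>) * exp (-\<beta>*(t-T))"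
    have u1: "y t \<le> L/\<beta> + \<eta>/2 + X1" using up[OF elim(3)] q1 unfolding X1_def by simp
    have u2: "y t \<ge> L/\<beta> - \<eta>/2 + X2" using lo[OF elim(3)] q2 unfolding X2_def by simp
    have "\<bar>X1\<bar> < \<eta>/2" "\<bar>X2\<bar> < \<eta>/2" using elim(1,2) unfolding X1_def X2_def by (simp_all add: dist_real_def)
    with u1 u2 show ?case unfolding dist_real_def abs_less_iff by linarith
  qed
qed

lemma deriv_to_zero:
  fixes h h' :: "real \<Rightarrow> real"
  assumes "0 \<le> a" and d: "\<And>t. t \<ge> a \<Longrightarrow> (h has_real_derivative h' t) (at t within {0..})"
    and conv: "(h \<longlongrightarrow> l) at_top" and uc: "uniformly_continuous_on {a..} h'"
  shows "(h' \<longlongrightarrow> 0) at_top"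
proof (rule tendstoI)
  fix \<eta> :: real assume \<eta>: "\<eta> > 0"
  obtain \<delta> where \<delta>: "\<delta> > 0" "\<And>u v. u \<in> {a..} \<Longrightarrow> v \<in> {a..} \<Longrightarrow> dist u v < \<delta> \<Longrightarrow> dist (h' u) (h' v) < \<eta>/2"
    using uc \<eta> unfolding uniformly_continuous_on_def by (metis half_gt_zero)
  have "eventually (\<lambda>t. dist (h t) l < \<eta>*\<delta>/8) at_top" using tendstoD[OF conv, of "\<eta>*\<delta>/8"] \<eta> \<delta> by simp
  then obtain T0 where T0: "\<And>t. t \<ge> T0 \<Longrightarrow> dist (h t) l < \<eta>*\<delta>/8" by (auto simp: eventually_at_top_linorder)
  have "\<forall>t\<ge>max a T0. dist (h' t) 0 < \<eta>"
  proof (intro allI impI)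
    fix t assume t: "t \<ge> max a T0"
    let ?t2 = "t + \<delta>/2"
    have close: "\<bar>h' u - h' t\<bar> < \<eta>/2" if "u \<in> {t..?t2}" for u
      using \<delta>(2)[of u t] that t \<delta>(1) by (auto simp: dist_real_def)
    have a1: "\<bar>h t - l\<bar> < \<eta>*\<delta>/8" "\<bar>h ?t2 - l\<bar> < \<eta>*\<delta>/8"
      using T0[of t] T0[of ?t2] t \<delta> by (auto simp: dist_real_def)
    have hd: "\<bar>h ?t2 - h t\<bar> < \<eta>*\<delta>/4"
      using a1 unfolding abs_less_iff by linarith
    show "dist (h' t) 0 < \<eta>"
    proof (rule ccontr)
      assume "\<not> dist (h' t) 0 < \<eta>"
      hence "h' t \<ge> \<eta> \<or> h' t \<le> -\<eta>" by (auto simp: dist_real_def)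
      thus False
      proof
        assume pos: "h' t \<ge> \<eta>"
        have "(\<lambda>u. h u - \<eta>/2*u) t \<le> (\<lambda>u. h u - \<eta>/2*u) ?t2"
        proof (rule mono_deriv[of t ?t2 _ "\<lambda>u. h' u - \<eta>/2"])
          fix u assume u: "u \<in> {t..?t2}"
          with d[of u] t show "((\<lambda>u. h u - \<eta>/2*u) has_real_derivative h' u - \<eta>/2) (at u within {0..})"
            by (auto intro!: derivative_eq_intros)
        next
          fix u assume "t < u" "u < ?t2"
          hence "\<bar>h' u - h' t\<bar> < \<eta>/2" using close[of u] by auto
          with pos show "0 \<le> h' u - \<eta>/2" unfolding abs_less_iff by linarith
        qed (use t \<open>0\<le>a\<close> \<delta> in auto)
        hence "h ?t2 - h t \<ge> \<eta>*\<delta>/4" by (simp add: algebra_simps)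
        with hd show False unfolding abs_less_iff by linarith
      next
        assume neg: "h' t \<le> -\<eta>"
        have "(\<lambda>u. - h u - \<eta>/2*u) t \<le> (\<lambda>u. - h u - \<eta>/2*u) ?t2"
        proof (rule mono_deriv[of t ?t2 _ "\<lambda>u. - h' u - \<eta>/2"])
          fix u assume u: "u \<in> {t..?t2}"
          with d[of u] t show "((\<lambda>u. - h u - \<eta>/2*u) has_real_derivative - h' u - \<eta>/2) (at u within {0..})"
            by (auto intro!: derivative_eq_intros)
        next
          fix u assume "t < u" "u < ?t2"
          hence "\<bar>h' u - h' t\<bar> < \<eta>/2" using close[of u] by auto
          with neg show "0 \<le> - h' u - \<eta>/2" unfolding abs_less_iff by linarith
        qed (use t \<open>0\<le>a\<close> \<delta> in auto)
        hence "h t - h ?t2 \<ge> \<eta>*\<delta>/4" by (simp add: algebra_simps)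
        with hd show False unfolding abs_less_iff by linarith
      qed
    qed
  qed
  thus "eventually (\<lambda>t. dist (h' t) 0 < \<eta>) at_top" unfolding eventually_at_top_linorder by (intro exI[of _ "max a T0"]) auto
qed


lemma closed_invariance:
  fixes x :: "real \<Rightarrow> 'a::metric_space"
  assumes cont: "continuous_on {0..} x" and cl: "closed X" and x0: "x 0 \<in> X"
    and loc: "\<And>t1. t1 \<ge> 0 \<Longrightarrow> (\<forall>u\<in>{0..t1}. x u \<in> X) \<Longrightarrow> \<exists>\<eta>>0. \<forall>u\<in>{t1..t1+\<eta>}. x u \<in> X"
    and t: "t \<ge> 0"
  shows "x t \<in> X"
proof (rule ccontr)
  assume bad: "x t \<notin> X"
  define A where "A = {u. u \<ge> 0 \<and> x u \<notin> X}"
  have tA: "t \<in> A" using bad t by (auto simp: A_def)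
  define t1 where "t1 = Inf A"
  have bdd: "bdd_below A" by (auto simp: A_def bdd_below_def)
  have t1ge: "t1 \<ge> 0" unfolding t1_def using tA by (intro cInf_greatest) (auto simp: A_def)
  have below: "x u \<in> X" if "0 \<le> u" "u < t1" for u
  proof (rule ccontr)
    assume "x u \<notin> X"
    hence "u \<in> A" using that by (auto simp: A_def)
    hence "t1 \<le> u" unfolding t1_def using bdd by (rule cInf_lower)
    thus False using that by simp
  qed
  have xt1: "x t1 \<in> X"
  proof (cases "t1 = 0")
    case True thus ?thesis using x0 by simp
  next
    case False
    hence pos: "t1 > 0" using t1ge by simp
    have "continuous (at t1 within {0..}) x" using cont t1ge
      by (simp add: continuous_on_eq_continuous_within)
    hence "(x \<longlongrightarrow> x t1) (at t1 within {0..t1})"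
      unfolding continuous_within by (rule tendsto_within_subset) auto
    hence lim: "(x \<longlongrightarrow> x t1) (at_left t1)" using at_within_Icc_at_left[OF pos] by simp
    have ev: "eventually (\<lambda>u. x u \<in> X) (at_left t1)"
      using eventually_at_left_real[OF pos] by eventually_elim (auto intro: below)
    show ?thesis by (rule Lim_in_closed_set[OF cl ev _ lim]) simp
  qed
  have all: "\<forall>u\<in>{0..t1}. x u \<in> X" using below xt1 by (auto simp: le_less)
  obtain \<eta> where \<eta>: "\<eta> > 0" "\<forall>u\<in>{t1..t1+\<eta>}. x u \<in> X" using loc[OF t1ge all] by blast
  have "A \<noteq> {}" using tA by auto
  then obtain u where u: "u \<in> A" "u < t1 + \<eta>" using cInf_lessD[of A "t1+\<eta>"] \<eta>(1) unfolding t1_def by auto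
  have "t1 \<le> u" unfolding t1_def by (rule cInf_lower[OF u(1) bdd])
  with u \<eta>(2) show False by (auto simp: A_def)
qed

locale sys =
  fixes \<alpha> c \<mu> p \<epsilon> a \<gamma> m d q :: real
  assumes pos: "\<alpha> > 0" "c > 0" "\<mu> > 0" "p > 0" "\<epsilon> > 0" "a > 0" "\<gamma> > 0" "m > 0" "d > 0" "q > 0"
begin

abbreviation f where "f \<equiv> sicmr \<alpha> c \<mu> p \<epsilon> a \<gamma> m d q"
abbreviation Om where "Om \<equiv> Omega \<alpha> \<mu>"

lemma f_nth:
  "f x $ 1 = \<alpha> - c*(x$1)*(x$2) - \<mu>*(x$1)"
  "f x $ 2 = c*(x$1)*(x$2) - (p*(x$3)/(\<epsilon> + x$2 + a*(x$4)))*(x$2) - \<gamma>*(x$2) - \<mu>*(x$2)"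
  "f x $ 3 = (p*(x$3)/(\<epsilon> + x$2 + a*(x$4)))*(x$2) - m*(x$3) - d*(x$3) - \<mu>*(x$3)"
  "f x $ 4 = m*(x$3) - q*(x$4) - \<mu>*(x$4)"
  "f x $ 5 = q*(x$4) + \<gamma>*(x$2) - \<mu>*(x$5)"
  by (simp_all add: sicmr_def Let_def)

lemma Om_iff: "x \<in> Om \<longleftrightarrow> x$1 \<ge> 0 \<and> x$2 \<ge> 0 \<and> x$3 \<ge> 0 \<and> x$4 \<ge> 0 \<and> x$5 \<ge> 0 \<and>
    x$1+x$2+x$3+x$4+x$5 \<le> \<alpha>/\<mu>"
  apply (auto simp: Omega_def)
  subgoal for k using five_cases[of k] by auto
  done

lemma closed_Om: "closed Om"
  unfolding Omega_def
  by (intro closed_Collect_conj closed_Collect_all closed_Collect_le continuous_intros)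

lemma sol_deriv: "is_solution f x \<Longrightarrow> t \<ge> 0 \<Longrightarrow>
   ((\<lambda>t. x t $ i) has_real_derivative f (x t) $ i) (at t within {0..})"
  unfolding is_solution_def by (auto intro: comp_deriv)

lemma sol_cont: "is_solution f x \<Longrightarrow> continuous_on {0..} x"
  unfolding is_solution_def continuous_on_eq_continuous_within
  by (auto intro: has_vector_derivative_continuous)

lemma invariant:
  assumes sol: "is_solution f x" and x0: "x 0 \<in> Om" and t: "t \<ge> 0"
  shows "x t \<in> Om"
proof (rule closed_invariance[OF sol_cont[OF sol] closed_Om x0 _ t])
  fix t1 :: real assume t1: "t1 \<ge> 0" and "\<forall>u\<in>{0..t1}. x u \<in> Om"
  hence xt1: "x t1 \<in> Om" by auto
  define r where "r = min 1 (\<epsilon>/(2*(1+a)))"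
  have r: "r > 0" "r \<le> 1" using pos by (auto simp: r_def)
  have "r*(1+a) \<le> \<epsilon>/(2*(1+a))*(1+a)" using pos by (intro mult_right_mono) (auto simp: r_def)
  moreover have "\<epsilon>/(2*(1+a))*(1+a) = \<epsilon>/2" using pos by (simp add: field_simps)
  ultimately have r3: "r*(1+a) \<le> \<epsilon>/2" by linarith
  have "continuous (at t1 within {0..}) x" using sol_cont[OF sol] t1
    by (simp add: continuous_on_eq_continuous_within)
  then obtain \<eta> where \<eta>: "\<eta> > 0" "\<forall>u\<in>{0..}. dist u t1 < \<eta> \<longrightarrow> dist (x u) (x t1) < r"
    unfolding continuous_within_eps_delta using r(1) by blast
  define b where "b = t1 + \<eta>/2"
  have close: "\<bar>x u $ i - x t1 $ i\<bar> < r" if "u \<in> {t1..b}" for u i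
  proof -
    have "dist (x u) (x t1) < r" using \<eta> that t1 by (auto simp: b_def dist_real_def)
    moreover have "\<bar>x u $ i - x t1 $ i\<bar> \<le> dist (x u) (x t1)"
      using component_le_norm_cart[of "x u - x t1" i] by (simp add: dist_norm)
    ultimately show ?thesis by simp
  qed
  have x1: "x t1 $ 1 \<ge> 0" "x t1 $ 2 \<ge> 0" "x t1 $ 3 \<ge> 0" "x t1 $ 4 \<ge> 0" "x t1 $ 5 \<ge> 0"
    "x t1 $ 1 + x t1 $ 2 + x t1 $ 3 + x t1 $ 4 + x t1 $ 5 \<le> \<alpha>/\<mu>"
    using xt1 by (auto simp: Om_iff)
  have le1: "x t1 $ i \<le> \<alpha>/\<mu>" for i
  proof -
    have "x t1 $ i \<le> x t1 $ 1 + x t1 $ 2 + x t1 $ 3 + x t1 $ 4 + x t1 $ 5"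
      using five_cases[of i] x1 by auto
    thus ?thesis using x1 by simp
  qed
  have lo: "x u $ i \<ge> -1" and lo': "x u $ i \<ge> - r" and hi: "x u $ i \<le> \<alpha>/\<mu> + 1" if "u \<in> {t1..b}" for u i
  proof -
    have "x t1 $ i \<ge> 0" using five_cases[of i] x1 by auto
    thus "x u $ i \<ge> -1" "x u $ i \<ge> - r" "x u $ i \<le> \<alpha>/\<mu> + 1"
      using close[OF that, of i] le1[of i] r by (auto simp: abs_less_iff)
  qed
  have D: "\<epsilon> + x u $ 2 + a * x u $ 4 \<ge> \<epsilon>/2" if "u \<in> {t1..b}" for u
  proof -
    have "x u $ 2 \<ge> - r" using lo'[OF that] by auto
    moreover have "a * x u $ 4 \<ge> a * (- r)" using lo'[OF that, of 4] pos by (intro mult_left_mono) auto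
    ultimately have "x u $ 2 \<ge> - r" "a * x u $ 4 \<ge> a * (- r)" by auto
    thus ?thesis using r3 by (simp add: algebra_simps)
  qed
  have dv: "((\<lambda>t. x t $ i) has_real_derivative f (x u) $ i) (at u within {0..})" if "u \<in> {t1..b}" for u i
    using sol_deriv[OF sol] that t1 by auto
  have inv2: "1 / (\<epsilon> + x u $ 2 + a * x u $ 4) \<le> 2/\<epsilon>" "\<epsilon> + x u $ 2 + a * x u $ 4 > 0" if "u \<in> {t1..b}" for u
    using D[OF that] pos by (auto simp: field_simps)
  define H1 where "H1 = c*(\<alpha>/\<mu>+1) + 2*p/\<epsilon>"
  have I: "x u $ 2 \<ge> 0" if "u \<in> {t1..b}" for u
  proof (rule stay_nonneg[of t1 b "\<lambda>t. x t $ 2" "\<lambda>t. f (x t) $ 2" H1])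
    fix u assume u: "u \<in> {t1..b}" "x u $ 2 < 0"
    let ?D = "\<epsilon> + x u $ 2 + a * x u $ 4"
    have "- (x u $ 3) / ?D \<le> 1 / ?D" using lo[OF u(1), of 3] inv2[OF u(1)] by (intro divide_right_mono) auto
    hence cd: "- (x u $ 3) / ?D \<le> 2/\<epsilon>" using inv2[OF u(1)] by linarith
    have "c * x u $ 1 \<le> c*(\<alpha>/\<mu>+1)" using hi[OF u(1), of 1] pos by auto
    hence h: "c * x u $ 1 - p * (x u $ 3)/?D - \<gamma> - \<mu> \<le> H1"
    proof -
      have "p * (- (x u $ 3) / ?D) \<le> p * (2/\<epsilon>)" using cd pos by (intro mult_left_mono) auto
      moreover have "p * (x u $ 3) / ?D = - (p * (- (x u $ 3) / ?D))" by simp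
      moreover have "p * (2/\<epsilon>) = 2*p/\<epsilon>" by simp
      ultimately show ?thesis using \<open>c * x u $ 1 \<le> c*(\<alpha>/\<mu>+1)\<close> pos unfolding H1_def by linarith
    qed
    have "f (x u) $ 2 = x u $ 2 * (c * x u $ 1 - p * (x u $ 3)/?D - \<gamma> - \<mu>)"
      by (simp add: f_nth algebra_simps)
    also have "\<dots> \<ge> x u $ 2 * H1" using h u(2) by (intro mult_left_mono_neg) auto
    finally show "f (x u) $ 2 \<ge> H1 * x u $ 2" by (simp add: mult.commute)
  qed (use t1 dv x1 that in auto)
  define H2 where "H2 = 2*p*(\<alpha>/\<mu>+1)/\<epsilon>"
  have C: "x u $ 3 \<ge> 0" if "u \<in> {t1..b}" for u
  proof (rule stay_nonneg[of t1 b "\<lambda>t. x t $ 3" "\<lambda>t. f (x t) $ 3" H2])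
    fix u assume u: "u \<in> {t1..b}" "x u $ 3 < 0"
    let ?D = "\<epsilon> + x u $ 2 + a * x u $ 4"
    have "x u $ 2 / ?D \<le> (\<alpha>/\<mu>+1) / ?D" using hi[OF u(1), of 2] inv2[OF u(1)] by (intro divide_right_mono) auto
    also have "\<dots> \<le> (\<alpha>/\<mu>+1) * (2/\<epsilon>)" using inv2[OF u(1)] pos
      by (metis divide_inverse divide_nonneg_nonneg divide_pos_pos less_eq_real_def mult_left_mono mult_1_right zero_less_one zero_le_one inverse_eq_divide add_pos_pos)
    finally have "p * (x u $ 2 / ?D) \<le> p * ((\<alpha>/\<mu>+1) * (2/\<epsilon>))" using pos by (intro mult_left_mono) auto
    moreover have "p * (x u $ 2 / ?D) = p * x u $ 2 / ?D" by simp
    moreover have "p * ((\<alpha>/\<mu>+1) * (2/\<epsilon>)) = H2" unfolding H2_def by simp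
    ultimately have h: "p * x u $ 2 / ?D - m - d - \<mu> \<le> H2" using pos by linarith
    have "f (x u) $ 3 = x u $ 3 * (p * x u $ 2 / ?D - m - d - \<mu>)"
      by (simp add: f_nth algebra_simps)
    also have "\<dots> \<ge> x u $ 3 * H2" using h u(2) by (intro mult_left_mono_neg) auto
    finally show "f (x u) $ 3 \<ge> H2 * x u $ 3" by (simp add: mult.commute)
  qed (use t1 dv x1 that in auto)
  have M: "x u $ 4 \<ge> 0" if "u \<in> {t1..b}" for u
  proof (rule stay_nonneg[of t1 b "\<lambda>t. x t $ 4" "\<lambda>t. f (x t) $ 4" 0])
    fix u assume u: "u \<in> {t1..b}" "x u $ 4 < 0"
    have "m * x u $ 3 \<ge> 0" using C[OF u(1)] pos by auto
    moreover have "(q+\<mu>) * x u $ 4 \<le> 0" using u(2) pos by (intro mult_pos_neg[THEN less_imp_le]) auto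
    ultimately show "f (x u) $ 4 \<ge> 0 * x u $ 4" by (simp add: f_nth algebra_simps)
  qed (use t1 dv x1 that in auto)
  have S: "x u $ 1 \<ge> 0" if "u \<in> {t1..b}" for u
  proof (rule stay_nonneg[of t1 b "\<lambda>t. x t $ 1" "\<lambda>t. f (x t) $ 1" 0])
    fix u assume u: "u \<in> {t1..b}" "x u $ 1 < 0"
    have "(c * x u $ 2 + \<mu>) * x u $ 1 \<le> 0" using u(2) I[OF u(1)] pos
      by (intro mult_nonneg_nonpos) auto
    thus "f (x u) $ 1 \<ge> 0 * x u $ 1" using pos by (simp add: f_nth algebra_simps)
  qed (use t1 dv x1 that in auto)
  have R: "x u $ 5 \<ge> 0" if "u \<in> {t1..b}" for u
  proof (rule stay_nonneg[of t1 b "\<lambda>t. x t $ 5" "\<lambda>t. f (x t) $ 5" 0])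
    fix u assume u: "u \<in> {t1..b}" "x u $ 5 < 0"
    have "q * x u $ 4 \<ge> 0" "\<gamma> * x u $ 2 \<ge> 0" "\<mu> * x u $ 5 \<le> 0" using u M[OF u(1)] I[OF u(1)] pos
      by (auto intro: mult_pos_neg[THEN less_imp_le])
    thus "f (x u) $ 5 \<ge> 0 * x u $ 5" by (simp add: f_nth)
  qed (use t1 dv x1 that in auto)
  let ?N = "\<lambda>t. \<alpha>/\<mu> - (x t $ 1 + x t $ 2 + x t $ 3 + x t $ 4 + x t $ 5)"
  have N: "?N u \<ge> 0" if "u \<in> {t1..b}" for u
  proof (rule stay_nonneg[of t1 b ?N "\<lambda>t. - (f (x t) $ 1 + f (x t) $ 2 + f (x t) $ 3 + f (x t) $ 4 + f (x t) $ 5)" 0])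
    fix u assume u: "u \<in> {t1..b}" 
    show "(?N has_real_derivative - (f (x u) $ 1 + f (x u) $ 2 + f (x u) $ 3 + f (x u) $ 4 + f (x u) $ 5)) (at u within {0..})"
      using dv[OF u] by (auto intro!: derivative_eq_intros)
  next
    fix u assume u: "u \<in> {t1..b}" "?N u < 0"
    have e: "- (f (x u) $ 1 + f (x u) $ 2 + f (x u) $ 3 + f (x u) $ 4 + f (x u) $ 5) = \<mu> * (x u $ 1 + x u $ 2 + x u $ 3 + x u $ 4 + x u $ 5) + d * x u $ 3 - \<alpha>"
      by (simp add: f_nth algebra_simps)
    have "\<mu> * (x u $ 1 + x u $ 2 + x u $ 3 + x u $ 4 + x u $ 5) \<ge> \<mu> * (\<alpha>/\<mu>)"
      using u(2) pos by (intro mult_left_mono) auto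
    hence "\<mu> * (x u $ 1 + x u $ 2 + x u $ 3 + x u $ 4 + x u $ 5) \<ge> \<alpha>" using pos by simp
    moreover have "d * x u $ 3 \<ge> 0" using C[OF u(1)] pos by auto
    ultimately show "- (f (x u) $ 1 + f (x u) $ 2 + f (x u) $ 3 + f (x u) $ 4 + f (x u) $ 5) \<ge> 0 * ?N u"
      unfolding e by simp
  qed (use t1 x1 that in auto)
  show "\<exists>\<eta>>0. \<forall>u\<in>{t1..t1+\<eta>}. x u \<in> Om"
    using I C M S R N \<eta>(1) unfolding b_def by (intro exI[of _ "\<eta>/2"]) (auto simp: Om_iff)
qed

end


lemma integral_cpow: assumes t: "t \<ge> 0"
  shows "integral {0..t} (\<lambda>s::real. C * s^n) = C * t^(Suc n) / Suc n"
proof -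
  have "((\<lambda>s. C * s^n) has_integral ((\<lambda>s. C * s^Suc n / Suc n) t - (\<lambda>s. C * s^Suc n / Suc n) 0)) {0..t}"
  proof (rule fundamental_theorem_of_calculus[OF t])
    fix s :: real assume "s \<in> {0..t}"
    have d: "((\<lambda>s. s^Suc n) has_real_derivative real (Suc n) * s^n) (at s within {0..t})"
      using DERIV_pow[of "Suc n" s "{0..t}"] by simp
    have "((\<lambda>s. C * s^Suc n / Suc n) has_real_derivative C * (real (Suc n) * s^n) / Suc n) (at s within {0..t})"
      by (intro DERIV_cdivide DERIV_cmult d)
    moreover have "C * (real (Suc n) * s^n) / Suc n = C * s^n" by simp
    ultimately have "((\<lambda>s. C * s^Suc n / Suc n) has_real_derivative C * s^n) (at s within {0..t})" by simp
    thus "((\<lambda>s. C * s^Suc n / Suc n) has_vector_derivative C * s^n) (at s within {0..t})"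
      by (simp add: has_real_derivative_iff_has_vector_derivative)
  qed
  from integral_unique[OF this] show ?thesis by simp
qed

lemma lipschitz_cont:
  fixes F :: "'a::metric_space \<Rightarrow> 'b::metric_space"
  assumes lip: "\<And>x y. dist (F x) (F y) \<le> L * dist x y" and L: "L > 0"
  shows "continuous_on S F"
  unfolding continuous_on_iff
proof (intro ballI allI impI)
  fix x e assume "x \<in> S" "(e::real) > 0"
  show "\<exists>d>0. \<forall>x'\<in>S. dist x' x < d \<longrightarrow> dist (F x') (F x) < e"
  proof (intro exI[of _ "e/L"] conjI ballI impI)
    show "e/L > 0" using \<open>e>0\<close> L by simp
    fix x' assume "dist x' x < e/L"
    hence "L * dist x' x < e" using L by (simp add: field_simps)
    thus "dist (F x') (F x) < e" using lip[of x' x] by simp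
  qed
qed

lemma tail_to_zero:
  fixes a :: "nat \<Rightarrow> real"
  assumes "summable a"
  shows "(\<lambda>n. \<Sum>i. a (i + n)) \<longlonglongrightarrow> 0"
proof (rule tendstoI)
  fix e :: real assume "e > 0"
  from suminf_exist_split[OF this assms] obtain N where "\<forall>n\<ge>N. norm (\<Sum>i. a (i + n)) < e" by blast
  thus "eventually (\<lambda>n. dist (\<Sum>i. a (i + n)) 0 < e) sequentially"
    unfolding eventually_sequentially by auto
qed

locale picard =
  fixes F :: "'a::euclidean_space \<Rightarrow> 'a" and L B :: real and x0 :: 'a
  assumes lip: "\<And>x y. norm (F x - F y) \<le> L * norm (x - y)"
    and bnd: "\<And>x. norm (F x) \<le> B" and Lpos: "L > 0"
begin

lemma Bnn: "B \<ge> 0" using bnd[of x0] norm_ge_zero[of "F x0"] by linarith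

primrec phi :: "nat \<Rightarrow> real \<Rightarrow> 'a" where
  "phi 0 t = x0"
| "phi (Suc n) t = x0 + integral {0..t} (\<lambda>s. F (phi n s))"

lemma F_cont: "continuous_on S F"
  by (rule lipschitz_cont[OF _ Lpos]) (use lip in \<open>auto simp: dist_norm\<close>)

lemma phi_cont: "continuous_on {0..T} (phi n)"
proof (induction n arbitrary: T)
  case 0 thus ?case by simp
next
  case (Suc n)
  have c: "continuous_on {0..T} (\<lambda>s. F (phi n s))"
    by (rule continuous_on_compose2[OF F_cont Suc.IH]) auto
  show ?case
    unfolding continuous_on_eq_continuous_within
  proof
    fix t assume t: "t \<in> {0..T}"
    have "((\<lambda>u. integral {0..u} (\<lambda>s. F (phi n s))) has_vector_derivative F (phi n t)) (at t within {0..T})"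
      by (rule integral_has_vector_derivative[OF c t])
    hence "continuous (at t within {0..T}) (\<lambda>u. integral {0..u} (\<lambda>s. F (phi n s)))"
      by (rule has_vector_derivative_continuous)
    moreover have "phi (Suc n) = (\<lambda>u. x0 + integral {0..u} (\<lambda>s. F (phi n s)))" by (rule ext) simp
    ultimately show "continuous (at t within {0..T}) (phi (Suc n))" by (auto intro: continuous_intros)
  qed
qed

lemma Fphi_int: "(\<lambda>s. F (phi n s)) integrable_on {0..t}"
  by (rule integrable_continuous_interval, rule continuous_on_compose2[OF F_cont phi_cont]) auto

lemma phi_neg: "t < 0 \<Longrightarrow> phi n t = x0"
  by (cases n) auto

lemma phi_est: "t \<ge> 0 \<Longrightarrow> norm (phi (Suc n) t - phi n t) \<le> B * L^n * t^(Suc n) / fact (Suc n)"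
proof (induction n arbitrary: t)
  case 0
  have "norm (integral {0..t} (\<lambda>s. F x0)) = norm (t *\<^sub>R F x0)" using 0 by simp
  also have "\<dots> \<le> t * B" using 0 bnd[of x0] by (simp add: mult_left_mono)
  finally show ?case by (simp add: mult.commute)
next
  case (Suc n)
  have "phi (Suc (Suc n)) t - phi (Suc n) t = integral {0..t} (\<lambda>s. F (phi (Suc n) s)) - integral {0..t} (\<lambda>s. F (phi n s))"
    by simp
  also have "\<dots> = integral {0..t} (\<lambda>s. F (phi (Suc n) s) - F (phi n s))"
    by (rule Henstock_Kurzweil_Integration.integral_diff[symmetric]) (rule Fphi_int)+
  finally have eq: "phi (Suc (Suc n)) t - phi (Suc n) t = integral {0..t} (\<lambda>s. F (phi (Suc n) s) - F (phi n s))" .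
  have "norm (integral {0..t} (\<lambda>s. F (phi (Suc n) s) - F (phi n s))) \<le> integral {0..t} (\<lambda>s. (L * (B * L^n / fact (Suc n))) * s^(Suc n))"
  proof (rule Henstock_Kurzweil_Integration.integral_norm_bound_integral)
    show "(\<lambda>s. F (phi (Suc n) s) - F (phi n s)) integrable_on {0..t}"
      by (intro integrable_diff Fphi_int)
    show "(\<lambda>s. (L * (B * L^n / fact (Suc n))) * s^(Suc n)) integrable_on {0..t}"
      by (rule integrable_continuous_interval) (auto intro!: continuous_intros)
    fix s assume s: "s \<in> {0..t}"
    have "norm (F (phi (Suc n) s) - F (phi n s)) \<le> L * norm (phi (Suc n) s - phi n s)" by (rule lip)
    also have "\<dots> \<le> L * (B * L^n * s^(Suc n) / fact (Suc n))"
      using Suc.IH[of s] s Lpos by (intro mult_left_mono) auto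
    finally show "norm (F (phi (Suc n) s) - F (phi n s)) \<le> (L * (B * L^n / fact (Suc n))) * s^(Suc n)"
      by (simp add: field_simps)
  qed
  also have "\<dots> = (L * (B * L^n / fact (Suc n))) * t^(Suc (Suc n)) / Suc (Suc n)"
    by (rule integral_cpow[OF Suc.prems])
  also have "\<dots> = B * L^(Suc n) * t^(Suc (Suc n)) / fact (Suc (Suc n))"
    by (simp add: field_simps)
  finally show ?case unfolding eq .
qed

definition aa :: "real \<Rightarrow> nat \<Rightarrow> real" where "aa T n = B * T * ((L*T)^n / fact n)"

lemma aa_nn: "T \<ge> 0 \<Longrightarrow> aa T n \<ge> 0"
  unfolding aa_def using Bnn Lpos by auto

lemma aa_summable: "summable (aa T)"
proof -
  have "summable (\<lambda>n. inverse (fact n) * (L*T)^n)" by (rule summable_exp)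
  hence "summable (\<lambda>n. (B*T) * (inverse (fact n) * (L*T)^n))" by (rule summable_mult)
  thus ?thesis unfolding aa_def by (simp add: field_simps)
qed

lemma phi_est2: assumes "0 \<le> t" "t \<le> T" shows "norm (phi (Suc n) t - phi n t) \<le> aa T n"
proof -
  have "t^(Suc n) \<le> T^(Suc n)" using assms by (intro power_mono) auto
  hence le: "B * L^n * t^(Suc n) \<le> B * L^n * T^(Suc n)" using Bnn Lpos by (intro mult_left_mono) auto
  have "B * L^n * t^(Suc n) / fact (Suc n) \<le> B * L^n * T^(Suc n) / fact n"
    by (rule frac_le[OF _ le]) (use Bnn Lpos assms in \<open>auto intro!: mult_nonneg_nonneg fact_mono\<close>)
  also have "\<dots> = aa T n" by (simp add: aa_def power_mult_distrib field_simps)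
  finally show ?thesis using phi_est[OF assms(1), of n] by linarith
qed

definition tl :: "real \<Rightarrow> nat \<Rightarrow> real" where "tl T n = (\<Sum>i. aa T (i + n))"

lemma tl_to0: "(\<lambda>n. tl T n) \<longlonglongrightarrow> 0"
  unfolding tl_def by (rule tail_to_zero[OF aa_summable])

lemma phi_cauchy_est: assumes "0 \<le> t" "t \<le> T" shows "norm (phi (n + j) t - phi n t) \<le> tl T n"
proof -
  have "norm (phi (n + j) t - phi n t) \<le> (\<Sum>i<j. aa T (i + n))"
  proof (induction j)
    case 0 thus ?case by simp
  next
    case (Suc j)
    have "norm (phi (n + Suc j) t - phi n t) \<le> norm (phi (Suc (n + j)) t - phi (n+j) t) + norm (phi (n + j) t - phi n t)"
      using norm_triangle_ineq[of "phi (Suc (n + j)) t - phi (n+j) t" "phi (n + j) t - phi n t"] by simp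
    also have "\<dots> \<le> aa T (j + n) + (\<Sum>i<j. aa T (i + n))"
      using phi_est2[OF assms, of "n+j"] Suc.IH by (simp add: add.commute)
    finally show ?case by simp
  qed
  also have "\<dots> \<le> tl T n" unfolding tl_def
    by (rule sum_le_suminf) (use aa_summable[of T] assms aa_nn in \<open>auto simp: summable_iff_shift\<close>)
  finally show ?thesis .
qed

lemma phi_convergent: "convergent (\<lambda>n. phi n t)"
proof (cases "t < 0")
  case True thus ?thesis using phi_neg[OF True] by (simp add: convergent_const)
next
  case False
  hence t: "0 \<le> t" by simp
  have "Cauchy (\<lambda>n. phi n t)"
  proof (rule metric_CauchyI)
    fix e :: real assume "e > 0"
    then obtain N where N: "\<forall>n\<ge>N. dist (tl t n) 0 < e" using tl_to0[of t] unfolding lim_sequentially by blast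
    show "\<exists>M. \<forall>m\<ge>M. \<forall>n\<ge>M. dist (phi m t) (phi n t) < e"
    proof (intro exI[of _ N] allI impI)
      fix m n assume mn: "m \<ge> N" "n \<ge> N"
      show "dist (phi m t) (phi n t) < e"
      proof (cases "m \<le> n")
        case True
        then obtain j where "n = m + j" using le_Suc_ex by blast
        hence "dist (phi m t) (phi n t) \<le> tl t m" using phi_cauchy_est[OF t order.refl, of m j]
          by (simp add: dist_norm norm_minus_commute)
        also have "\<dots> < e" using N mn by (auto simp: dist_real_def)
        finally show ?thesis .
      next
        case False
        then obtain j where "m = n + j" using le_Suc_ex[of n m] by auto
        hence "dist (phi m t) (phi n t) \<le> tl t n" using phi_cauchy_est[OF t order.refl, of n j]
          by (simp add: dist_norm)
        also have "\<dots> < e" using N mn by (auto simp: dist_real_def)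
        finally show ?thesis .
      qed
    qed
  qed
  thus ?thesis by (simp add: Cauchy_convergent_iff)
qed

definition sol :: "real \<Rightarrow> 'a" where "sol t = lim (\<lambda>n. phi n t)"

lemma sol_lim: "(\<lambda>n. phi n t) \<longlonglongrightarrow> sol t"
  unfolding sol_def using phi_convergent convergent_LIMSEQ_iff by blast

lemma sol_err: assumes "0 \<le> t" "t \<le> T" shows "norm (sol t - phi n t) \<le> tl T n"
proof -
  have "(\<lambda>j. norm (phi (j + n) t - phi n t)) \<longlonglongrightarrow> norm (sol t - phi n t)"
    by (intro tendsto_intros LIMSEQ_ignore_initial_segment sol_lim)
  moreover have "\<forall>j\<ge>0. norm (phi (j + n) t - phi n t) \<le> tl T n"
    using phi_cauchy_est[OF assms, of n] by (simp add: add.commute)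
  ultimately show ?thesis by (rule Lim_bounded)
qed

lemma sol_neg: "t < 0 \<Longrightarrow> sol t = x0"
  using sol_lim[of t] phi_neg[of t] LIMSEQ_unique[OF _ tendsto_const] by auto

lemma phi_lip: assumes "0 \<le> s" "s \<le> t" shows "norm (phi n t - phi n s) \<le> B * (t - s)"
proof (cases n)
  case 0 thus ?thesis using Bnn assms by simp
next
  case (Suc k)
  have "integral {0..s} (\<lambda>u. F (phi k u)) + integral {s..t} (\<lambda>u. F (phi k u)) = integral {0..t} (\<lambda>u. F (phi k u))"
    by (rule Henstock_Kurzweil_Integration.integral_combine) (use assms Fphi_int in auto)
  hence eq: "phi n t - phi n s = integral {s..t} (\<lambda>u. F (phi k u))" using Suc by (simp add: algebra_simps)
  have "(\<lambda>u. F (phi k u)) integrable_on cbox s t"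
    using integrable_on_subinterval[OF Fphi_int[of k t], of s t] assms by auto
  from integrable_bound[OF Bnn this bnd] have "norm (integral (cbox s t) (\<lambda>u. F (phi k u))) \<le> B * (t - s)"
    using assms by simp
  thus ?thesis unfolding eq using assms by simp
qed

lemma sol_lip: assumes "0 \<le> s" "s \<le> t" shows "norm (sol t - sol s) \<le> B * (t - s)"
proof -
  have "(\<lambda>n. norm (phi n t - phi n s)) \<longlonglongrightarrow> norm (sol t - sol s)"
    by (intro tendsto_intros sol_lim)
  thus ?thesis using phi_lip[OF assms] by (intro Lim_bounded[of _ _ 0]) auto
qed

lemma sol_cont: "continuous_on {0..T} sol"
  unfolding continuous_on_iff
proof (intro ballI allI impI)
  fix x e assume x: "x \<in> {0..T}" and e: "(e::real) > 0"
  show "\<exists>d>0. \<forall>x'\<in>{0..T}. dist x' x < d \<longrightarrow> dist (sol x') (sol x) < e"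
  proof (intro exI[of _ "e/(B+1)"] conjI ballI impI)
    show "e/(B+1) > 0" using e Bnn by simp
    fix x' assume x': "x' \<in> {0..T}" "dist x' x < e/(B+1)"
    have "dist (sol x') (sol x) \<le> B * \<bar>x' - x\<bar>"
      using sol_lip[of x x'] sol_lip[of x' x] x x' by (cases "x \<le> x'") (auto simp: dist_norm norm_minus_commute)
    also have "\<dots> \<le> (B+1) * \<bar>x' - x\<bar>" by (simp add: mult_right_mono)
    also have "\<dots> < e" using x'(2) Bnn by (simp add: dist_real_def field_simps)
    finally show "dist (sol x') (sol x) < e" .
  qed
qed

lemma Fsol_int: "(\<lambda>s. F (sol s)) integrable_on {0..t}"
  by (rule integrable_continuous_interval, rule continuous_on_compose2[OF F_cont sol_cont]) auto

end

context picard begin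
lemma sol_eq: "sol t = x0 + integral {0..t} (\<lambda>s. F (sol s))"
proof (cases "t < 0")
  case True thus ?thesis using sol_neg by simp
next
  case False
  hence t: "t \<ge> 0" by simp
  have l1: "(\<lambda>n. phi (Suc n) t) \<longlonglongrightarrow> sol t" using sol_lim LIMSEQ_Suc by blast
  have bound: "norm (phi (Suc n) t - (x0 + integral {0..t} (\<lambda>s. F (sol s)))) \<le> L * t * tl t n" for n
  proof -
    have "phi (Suc n) t - (x0 + integral {0..t} (\<lambda>s. F (sol s))) = integral {0..t} (\<lambda>s. F (phi n s) - F (sol s))"
      by (simp add: Henstock_Kurzweil_Integration.integral_diff[OF Fphi_int Fsol_int])
    also have "norm \<dots> \<le> integral {0..t} (\<lambda>s. L * tl t n)"
    proof (rule Henstock_Kurzweil_Integration.integral_norm_bound_integral)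
      show "(\<lambda>s. F (phi n s) - F (sol s)) integrable_on {0..t}" by (intro integrable_diff Fphi_int Fsol_int)
      show "(\<lambda>s. L * tl t n) integrable_on {0..t}" by (intro integrable_continuous_interval continuous_on_const)
      fix s assume s: "s \<in> {0..t}"
      have "norm (F (phi n s) - F (sol s)) \<le> L * norm (phi n s - sol s)" by (rule lip)
      also have "\<dots> \<le> L * tl t n" using sol_err[of s t n] s Lpos
        by (intro mult_left_mono) (auto simp: norm_minus_commute)
      finally show "norm (F (phi n s) - F (sol s)) \<le> L * tl t n" .
    qed
    also have "\<dots> = L * t * tl t n" using t by simp
    finally show ?thesis .
  qed
  have "(\<lambda>n. L * t * tl t n) \<longlonglongrightarrow> 0" using tl_to0[of t] by (auto intro: tendsto_mult_right_zero)
  hence "(\<lambda>n. phi (Suc n) t - (x0 + integral {0..t} (\<lambda>s. F (sol s)))) \<longlonglongrightarrow> 0"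
    by (rule Lim_null_comparison[rotated]) (use bound in auto)
  hence "(\<lambda>n. phi (Suc n) t - (x0 + integral {0..t} (\<lambda>s. F (sol s))) + (x0 + integral {0..t} (\<lambda>s. F (sol s)))) \<longlonglongrightarrow> 0 + (x0 + integral {0..t} (\<lambda>s. F (sol s)))"
    by (intro tendsto_add tendsto_const)
  hence l2: "(\<lambda>n. phi (Suc n) t) \<longlonglongrightarrow> x0 + integral {0..t} (\<lambda>s. F (sol s))"
    by (simp only: diff_add_cancel add_0_left)
  show ?thesis by (rule LIMSEQ_unique[OF l1 l2])
qed

lemma sol_deriv: assumes t: "t \<ge> 0" shows "(sol has_vector_derivative F (sol t)) (at t within {0..})"
proof -
  have c: "continuous_on {0..t+1} (\<lambda>s. F (sol s))"
    by (rule continuous_on_compose2[OF F_cont sol_cont]) auto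
  have "((\<lambda>u. integral {0..u} (\<lambda>s. F (sol s))) has_vector_derivative F (sol t)) (at t within {0..t+1})"
    by (rule integral_has_vector_derivative[OF c]) (use t in auto)
  hence "((\<lambda>u. x0 + integral {0..u} (\<lambda>s. F (sol s))) has_vector_derivative F (sol t)) (at t within {0..t+1})"
    by (auto intro!: derivative_eq_intros)
  moreover have "(\<lambda>u. x0 + integral {0..u} (\<lambda>s. F (sol s))) = sol" by (rule ext) (rule sol_eq[symmetric])
  moreover have "at t within {0..t+1} = at t within {0..}"
    by (rule at_within_nhd[of _ "{..<t+1}"]) auto
  ultimately show ?thesis by simp
qed

lemma sol_0: "sol 0 = x0" using sol_eq[of 0] by simp

end

lemma picard_exists:
  fixes F :: "'a::euclidean_space \<Rightarrow> 'a"
  assumes lip: "\<And>x y. norm (F x - F y) \<le> L * norm (x - y)"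
    and bnd: "\<And>x. norm (F x) \<le> B" and Lpos: "L > 0"
  shows "\<exists>x. x 0 = x0 \<and> (\<forall>t\<ge>0. (x has_vector_derivative F (x t)) (at t within {0..}))"
proof -
  interpret picard F L B x0 using assms by unfold_locales
  show ?thesis using sol_0 sol_deriv by blast
qed


lemma sum5: "(\<Sum>i\<in>UNIV. g i) = g 1 + g 2 + g 3 + g 4 + g (5::5)"
proof -
  have U: "UNIV = {1,2,3,4,5::5}" using five_cases by auto
  show ?thesis unfolding U by (simp add: add.assoc)
qed

lemma norm5: "norm (x::real^5) \<le> \<bar>x$1\<bar> + \<bar>x$2\<bar> + \<bar>x$3\<bar> + \<bar>x$4\<bar> + \<bar>x$5\<bar>"
  using norm_le_l1_cart[of x] by (simp add: sum5)

lemma prod_lip: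
  fixes a1 a2 b1 b2 A :: real
  assumes "\<bar>a1\<bar> \<le> A" "\<bar>b2\<bar> \<le> A" "\<bar>a1 - a2\<bar> \<le> \<delta>" "\<bar>b1 - b2\<bar> \<le> \<delta>"
  shows "\<bar>a1*b1 - a2*b2\<bar> \<le> 2*A*\<delta>"
proof -
  have "a1*b1 - a2*b2 = a1*(b1 - b2) + b2*(a1 - a2)" by (simp add: algebra_simps)
  hence "\<bar>a1*b1 - a2*b2\<bar> \<le> \<bar>a1\<bar>*\<bar>b1 - b2\<bar> + \<bar>b2\<bar>*\<bar>a1 - a2\<bar>"
    by (simp add: abs_mult[symmetric] abs_triangle_ineq)
  also have "\<dots> \<le> A*\<delta> + A*\<delta>" using assms by (intro add_mono mult_mono) auto
  finally show ?thesis by simp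
qed

lemma tri2: "\<bar>a\<bar> \<le> A \<Longrightarrow> \<bar>b\<bar> \<le> B \<Longrightarrow> \<bar>a + b\<bar> \<le> A + B \<and> \<bar>a - b\<bar> \<le> A + B \<and> \<bar>- a - b\<bar> \<le> A + B"
  for a b A B :: real by arith
lemma tri3: "\<bar>a\<bar> \<le> A \<Longrightarrow> \<bar>b\<bar> \<le> B \<Longrightarrow> \<bar>e\<bar> \<le> E \<Longrightarrow> \<bar>a - b - e\<bar> \<le> A + B + E \<and> \<bar>a + b - e\<bar> \<le> A + B + E"
  for a b e A B E :: real by arith
lemma absm: "k \<ge> 0 \<Longrightarrow> \<bar>X\<bar> \<le> Z \<Longrightarrow> \<bar>k*X\<bar> \<le> k*Z" for k X Z :: real
  by (simp add: abs_mult mult_left_mono)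

lemma G_lip:
  fixes u2 u3 u4 w2 w3 w4 A \<epsilon> a \<delta> :: real
  assumes b: "0 \<le> u2" "u2 \<le> A" "0 \<le> u3" "u3 \<le> A" "0 \<le> u4" "0 \<le> w2" "w2 \<le> A" "0 \<le> w3" "w3 \<le> A" "0 \<le> w4"
    and d: "\<bar>u2 - w2\<bar> \<le> \<delta>" "\<bar>u3 - w3\<bar> \<le> \<delta>" "\<bar>u4 - w4\<bar> \<le> \<delta>" and pos: "\<epsilon> > 0" "a > 0"
  shows "\<bar>u3*u2/(\<epsilon>+u2+a * u4) - w3*w2/(\<epsilon>+w2+a * w4)\<bar> \<le> (2*A/\<epsilon> + A^2*(1+a)/\<epsilon>^2)*\<delta>"
proof -
  define Du where "Du = \<epsilon>+u2+a * u4"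
  define Dw where "Dw = \<epsilon>+w2+a * w4"
  have Du: "Du \<ge> \<epsilon>" and Dw: "Dw \<ge> \<epsilon>" using b pos by (auto simp: Du_def Dw_def)
  have Dpos: "Du > 0" "Dw > 0" using Du Dw pos by auto
  have eq: "u3*u2/Du - w3*w2/Dw = (u3*u2 - w3*w2)/Du + w3*w2*(Dw - Du)/(Du*Dw)"
    using Dpos by (simp add: field_simps)
  have n1: "\<bar>u3*u2 - w3*w2\<bar> \<le> 2*A*\<delta>" by (rule prod_lip) (use b d in auto)
  have "\<bar>(u3*u2 - w3*w2)/Du\<bar> = \<bar>u3*u2 - w3*w2\<bar>/Du" using Dpos by simp
  also have "\<dots> \<le> (2*A*\<delta>)/\<epsilon>" using n1 Du pos by (intro frac_le) auto
  finally have t1: "\<bar>(u3*u2 - w3*w2)/Du\<bar> \<le> 2*A/\<epsilon>*\<delta>" by simp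
  have "Dw - Du = (w2 - u2) + a * (w4 - u4)" unfolding Du_def Dw_def by (simp add: algebra_simps)
  hence "\<bar>Dw - Du\<bar> \<le> \<bar>w2 - u2\<bar> + \<bar>a * (w4 - u4)\<bar>" by (metis abs_triangle_ineq)
  also have "\<bar>a * (w4 - u4)\<bar> = a * \<bar>w4 - u4\<bar>" using pos by (simp add: abs_mult)
  finally have "\<bar>Dw - Du\<bar> \<le> \<bar>w2 - u2\<bar> + a * \<bar>w4 - u4\<bar>" .
  also have "\<dots> \<le> \<delta> + a * \<delta>" using d pos by (intro add_mono mult_left_mono) (auto simp: abs_minus_commute)
  finally have dd: "\<bar>Dw - Du\<bar> \<le> (1+a)*\<delta>" by (simp add: algebra_simps)
  have vv: "\<bar>w3*w2\<bar> \<le> A^2" using b by (auto simp: abs_mult power2_eq_square intro: mult_mono)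
  have "\<bar>w3*w2*(Dw - Du)\<bar> \<le> A^2 * ((1+a)*\<delta>)"
    unfolding abs_mult[of "w3*w2"] by (intro mult_mono vv dd) auto
  moreover have "\<epsilon>^2 \<le> Du*Dw" using Du Dw pos by (simp add: power2_eq_square mult_mono)
  ultimately have "\<bar>w3*w2*(Dw - Du)\<bar>/(Du*Dw) \<le> A^2 * ((1+a)*\<delta>) / \<epsilon>^2"
    using pos Dpos by (intro frac_le) auto
  hence t2: "\<bar>w3*w2*(Dw - Du)/(Du*Dw)\<bar> \<le> A^2*(1+a)/\<epsilon>^2*\<delta>" using Dpos by (simp add: abs_mult)
  have "\<bar>u3*u2/Du - w3*w2/Dw\<bar> \<le> \<bar>(u3*u2 - w3*w2)/Du\<bar> + \<bar>w3*w2*(Dw - Du)/(Du*Dw)\<bar>"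
    unfolding eq by (rule abs_triangle_ineq)
  also have "\<dots> \<le> 2*A/\<epsilon>*\<delta> + A^2*(1+a)/\<epsilon>^2*\<delta>" using t1 t2 by simp
  finally show ?thesis unfolding Du_def Dw_def by (simp add: algebra_simps)
qed

context sys begin

abbreviation AA where "AA \<equiv> \<alpha>/\<mu>"

definition cl :: "real \<Rightarrow> real" where "cl z = max 0 (min AA z)"
definition P :: "real^5 \<Rightarrow> real^5" where "P x = (\<chi> i. cl (x$i))"
definition FF where "FF x = f (P x)"

lemma AA_pos: "AA > 0" using pos by simp

lemma cl_bounds: "0 \<le> cl z" "cl z \<le> AA" using AA_pos by (auto simp: cl_def)
lemma cl_lip: "\<bar>cl z - cl w\<bar> \<le> \<bar>z - w\<bar>" by (auto simp: cl_def)
lemma cl_id: "0 \<le> z \<Longrightarrow> z \<le> AA \<Longrightarrow> cl z = z" by (auto simp: cl_def)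
lemma cl_neg: "z < 0 \<Longrightarrow> cl z = 0" using AA_pos by (auto simp: cl_def)
lemma P_nth[simp]: "P x $ i = cl (x $ i)" by (simp add: P_def)

lemma P_lip: "\<bar>P x $ i - P y $ i\<bar> \<le> norm (x - y)"
  using cl_lip[of "x$i" "y$i"] component_le_norm_cart[of "x - y" i] by simp

lemma P_idem: "P (P x) = P x"
  by (simp add: P_def cl_id cl_bounds vec_eq_iff)

lemma P_norm: "norm (P x) \<le> 5 * AA"
proof -
  have "norm (P x) \<le> \<bar>P x$1\<bar> + \<bar>P x$2\<bar> + \<bar>P x$3\<bar> + \<bar>P x$4\<bar> + \<bar>P x$5\<bar>" by (rule norm5)
  also have "\<dots> \<le> 5 * AA"
  proof -
    have "\<bar>P x $ i\<bar> \<le> AA" for i using cl_bounds[of "x$i"] by simp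
    from this[of 1] this[of 2] this[of 3] this[of 4] this[of 5] show ?thesis by linarith
  qed
  finally show ?thesis .
qed

definition LG where "LG = 2*AA/\<epsilon> + AA^2*(1+a)/\<epsilon>^2"
definition LL where "LL = (2*c*AA + \<mu>) + (2*c*AA + p*LG + \<gamma> + \<mu>) + (p*LG + (m+d+\<mu>)) + (m + q + \<mu>) + (q + \<gamma> + \<mu>)"

lemma LL_pos: "LL > 0"
  using pos AA_pos unfolding LL_def LG_def by (simp add: add_pos_pos)

lemma FF_lip: "norm (FF x - FF y) \<le> LL * norm (x - y)"
proof -
  define \<delta> where "\<delta> = norm (x - y)"
  let ?u = "P x" and ?v = "P y"
  have d: "\<bar>?u $ i - ?v $ i\<bar> \<le> \<delta>" for i unfolding \<delta>_def by (rule P_lip)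
  have bu: "0 \<le> ?u $ i" "?u $ i \<le> AA" "0 \<le> ?v $ i" "?v $ i \<le> AA" for i using cl_bounds by auto
  have bua: "\<bar>?u $ i\<bar> \<le> AA" "\<bar>?v $ i\<bar> \<le> AA" for i using bu[of i] by auto
  define G where "G w = w$3*w$2/(\<epsilon>+w$2+a*w$4)" for w :: "real^5"
  have Gl: "\<bar>G ?u - G ?v\<bar> \<le> LG * \<delta>" unfolding G_def LG_def
    by (rule G_lip) (use bu d pos in auto)
  have pG: "(p*(w$3)/(\<epsilon> + w$2 + a*(w$4)))*(w$2) = p * G w" for w by (simp add: G_def)
  have p12: "\<bar>?u$1*?u$2 - ?v$1*?v$2\<bar> \<le> 2*AA*\<delta>" by (rule prod_lip) (use bua d in auto)
  have c1: "\<bar>FF x $ 1 - FF y $ 1\<bar> \<le> (2*c*AA + \<mu>)*\<delta>"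
  proof -
    have "FF x $ 1 - FF y $ 1 = -c*(?u$1*?u$2 - ?v$1*?v$2) - \<mu>*(?u$1 - ?v$1)"
      unfolding FF_def f_nth by (simp add: algebra_simps)
    also have "\<bar>\<dots>\<bar> \<le> c*(2*AA*\<delta>) + \<mu>*\<delta>"
      using tri2[OF absm[OF _ p12] absm[OF _ d[of 1]]] pos by auto
    finally show ?thesis by (simp add: algebra_simps)
  qed
  have c2: "\<bar>FF x $ 2 - FF y $ 2\<bar> \<le> (2*c*AA + p*LG + \<gamma> + \<mu>)*\<delta>"
  proof -
    have "FF x $ 2 - FF y $ 2 = c*(?u$1*?u$2 - ?v$1*?v$2) - p*(G ?u - G ?v) - (\<gamma>+\<mu>)*(?u$2 - ?v$2)"
      unfolding FF_def f_nth pG by (simp add: algebra_simps)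
    also have "\<bar>\<dots>\<bar> \<le> c*(2*AA*\<delta>) + p*(LG*\<delta>) + (\<gamma>+\<mu>)*\<delta>"
      using tri3[OF absm[OF _ p12] absm[OF _ Gl] absm[OF _ d[of 2]]] pos by auto
    finally show ?thesis by (simp add: algebra_simps)
  qed
  have c3: "\<bar>FF x $ 3 - FF y $ 3\<bar> \<le> (p*LG + (m+d+\<mu>))*\<delta>"
  proof -
    have "FF x $ 3 - FF y $ 3 = p*(G ?u - G ?v) - (m+d+\<mu>)*(?u$3 - ?v$3)"
      unfolding FF_def f_nth pG by (simp add: algebra_simps)
    also have "\<bar>\<dots>\<bar> \<le> p*(LG*\<delta>) + (m+d+\<mu>)*\<delta>"
      using tri2[OF absm[OF _ Gl] absm[OF _ d[of 3]]] pos by auto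
    finally show ?thesis by (simp add: algebra_simps)
  qed
  have c4: "\<bar>FF x $ 4 - FF y $ 4\<bar> \<le> (m + q + \<mu>)*\<delta>"
  proof -
    have "FF x $ 4 - FF y $ 4 = m*(?u$3 - ?v$3) - (q+\<mu>)*(?u$4 - ?v$4)"
      unfolding FF_def f_nth by (simp add: algebra_simps)
    also have "\<bar>\<dots>\<bar> \<le> m*\<delta> + (q+\<mu>)*\<delta>"
      using tri2[OF absm[OF _ d[of 3]] absm[OF _ d[of 4]]] pos by auto
    finally show ?thesis by (simp add: algebra_simps)
  qed
  have c5: "\<bar>FF x $ 5 - FF y $ 5\<bar> \<le> (q + \<gamma> + \<mu>)*\<delta>"
  proof -
    have "FF x $ 5 - FF y $ 5 = q*(?u$4 - ?v$4) + \<gamma>*(?u$2 - ?v$2) - \<mu>*(?u$5 - ?v$5)"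
      unfolding FF_def f_nth by (simp add: algebra_simps)
    also have "\<bar>\<dots>\<bar> \<le> q*\<delta> + \<gamma>*\<delta> + \<mu>*\<delta>"
      using tri3[OF absm[OF _ d[of 4]] absm[OF _ d[of 2]] absm[OF _ d[of 5]]] pos by auto
    finally show ?thesis by (simp add: algebra_simps)
  qed
  have "norm (FF x - FF y) \<le> \<bar>FF x $ 1 - FF y $ 1\<bar> + \<bar>FF x $ 2 - FF y $ 2\<bar> + \<bar>FF x $ 3 - FF y $ 3\<bar> + \<bar>FF x $ 4 - FF y $ 4\<bar> + \<bar>FF x $ 5 - FF y $ 5\<bar>"
    using norm5[of "FF x - FF y"] by simp
  also have "\<dots> \<le> LL * \<delta>"
  proof -
    have "LL * \<delta> = (2*c*AA + \<mu>)*\<delta> + (2*c*AA + p*LG + \<gamma> + \<mu>)*\<delta> + (p*LG + (m+d+\<mu>))*\<delta> + (m + q + \<mu>)*\<delta> + (q + \<gamma> + \<mu>)*\<delta>"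
      unfolding LL_def by (simp only: distrib_right)
    thus ?thesis using c1 c2 c3 c4 c5 by linarith
  qed
  finally show ?thesis unfolding \<delta>_def .
qed

lemma FF_P: "FF (P x) = FF x" by (simp add: FF_def P_idem)

lemma FF_bnd: "norm (FF x) \<le> norm (FF 0) + LL * (5*AA)"
proof -
  have "norm (FF (P x)) \<le> norm (FF 0) + norm (FF (P x) - FF 0)" by (rule norm_triangle_sub)
  also have "norm (FF (P x) - FF 0) \<le> LL * norm (P x - 0)" by (rule FF_lip)
  also have "\<dots> \<le> LL * (5*AA)" using P_norm[of x] LL_pos by (intro mult_left_mono) auto
  finally show ?thesis by (simp add: FF_P)
qed

lemma exists_sol:
  assumes x0: "x0 \<in> Om"
  shows "\<exists>x. is_solution f x \<and> x 0 = x0"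
proof -
  obtain y where y0: "y 0 = x0" and dy: "\<And>t. t \<ge> 0 \<Longrightarrow> (y has_vector_derivative FF (y t)) (at t within {0..})"
    using picard_exists[OF FF_lip FF_bnd LL_pos, of x0] by blast
  have dyc: "((\<lambda>t. y t $ i) has_real_derivative FF (y t) $ i) (at t within {0..})" if "t \<ge> 0" for t i
    using comp_deriv[OF dy[OF that]] .
  have x0c: "x0 $ 1 \<ge> 0" "x0 $ 2 \<ge> 0" "x0 $ 3 \<ge> 0" "x0 $ 4 \<ge> 0" "x0 $ 5 \<ge> 0"
    "x0 $ 1 + x0 $ 2 + x0 $ 3 + x0 $ 4 + x0 $ 5 \<le> AA" using x0 by (auto simp: Om_iff)
  have nn: "y t $ i \<ge> 0" if t: "t \<ge> 0" for t i
  proof -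
    have "y 0 $ i \<ge> 0" using y0 x0c five_cases[of i] by auto
    have key: "FF (y u) $ i \<ge> 0" if "y u $ i < 0" for u
    proof -
      have z: "P (y u) $ i = 0" using that by (simp add: cl_neg)
      have b: "P (y u) $ j \<ge> 0" for j using cl_bounds by simp
      have "a * P (y u) $ 4 \<ge> 0" using pos b[of 4] by simp
      hence pp: "p > 0" "\<epsilon> + P (y u) $ 2 + a * P (y u) $ 4 > 0" using pos b[of 2] by auto
      show ?thesis using five_cases[of i]
      proof (elim disjE)
        assume "i = 1" thus ?thesis using z pos by (simp add: FF_def f_nth)
      next
        assume "i = 2" thus ?thesis using z by (simp add: FF_def f_nth)
      next
        assume "i = 3" thus ?thesis using z by (simp add: FF_def f_nth)
      next
        assume "i = 4" thus ?thesis using z pos b[of 3] by (simp add: FF_def f_nth)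
      next
        assume "i = 5" thus ?thesis using z pos b[of 2] b[of 4] by (simp add: FF_def f_nth)
      qed
    qed
    show ?thesis
      by (rule stay_nonneg[of 0 t "\<lambda>t. y t $ i" "\<lambda>t. FF (y t) $ i" 0]) (use \<open>y 0 $ i \<ge> 0\<close> dyc key t in auto)
  qed
  let ?N = "\<lambda>t. AA - (y t $ 1 + y t $ 2 + y t $ 3 + y t $ 4 + y t $ 5)"
  have Nn: "?N t \<ge> 0" if t: "t \<ge> 0" for t
  proof (rule stay_nonneg[of 0 t ?N "\<lambda>t. - (FF (y t) $ 1 + FF (y t) $ 2 + FF (y t) $ 3 + FF (y t) $ 4 + FF (y t) $ 5)" 0])
    fix u assume u: "u \<in> {0..t}"
    show "(?N has_real_derivative - (FF (y u) $ 1 + FF (y u) $ 2 + FF (y u) $ 3 + FF (y u) $ 4 + FF (y u) $ 5)) (at u within {0..})"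
      using dyc[of u] u by (auto intro!: derivative_eq_intros)
  next
    fix u assume u: "u \<in> {0..t}" "?N u < 0"
    let ?v = "P (y u)"
    have e: "- (FF (y u) $ 1 + FF (y u) $ 2 + FF (y u) $ 3 + FF (y u) $ 4 + FF (y u) $ 5) = \<mu> * (?v$1 + ?v$2 + ?v$3 + ?v$4 + ?v$5) + d * ?v$3 - \<alpha>"
      by (simp add: FF_def f_nth algebra_simps)
    have ge: "?v$1 + ?v$2 + ?v$3 + ?v$4 + ?v$5 \<ge> AA"
    proof (cases "\<forall>j. y u $ j \<le> AA")
      case True
      hence "?v $ j = y u $ j" for j using nn[of u j] u cl_id by auto
      thus ?thesis using u(2) by simp
    next
      case False
      then obtain j where j: "y u $ j > AA" by (auto simp: not_le)
      hence vj: "?v $ j = AA" using AA_pos by (simp add: cl_def)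
      have b: "?v $ i \<ge> 0" for i using cl_bounds by simp
      show ?thesis using five_cases[of j] vj b[of 1] b[of 2] b[of 3] b[of 4] b[of 5] by auto
    qed
    have "\<mu> * (?v$1 + ?v$2 + ?v$3 + ?v$4 + ?v$5) \<ge> \<mu> * AA" using ge pos by (intro mult_left_mono) auto
    hence "\<mu> * (?v$1 + ?v$2 + ?v$3 + ?v$4 + ?v$5) \<ge> \<alpha>" using pos by simp
    moreover have "d * ?v$3 \<ge> 0" using cl_bounds pos by simp
    ultimately show "- (FF (y u) $ 1 + FF (y u) $ 2 + FF (y u) $ 3 + FF (y u) $ 4 + FF (y u) $ 5) \<ge> 0 * ?N u"
      unfolding e by simp
  qed (use t y0 x0c in auto)
  have inOm: "y t \<in> Om" if "t \<ge> 0" for t using nn[OF that] Nn[OF that] by (simp add: Om_iff)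
  have Pid: "P (y t) = y t" if "t \<ge> 0" for t
  proof -
    have "y t $ i \<le> AA" for i
    proof -
      have "y t $ i \<le> y t $ 1 + y t $ 2 + y t $ 3 + y t $ 4 + y t $ 5"
        using five_cases[of i] nn[OF that] by (elim disjE) auto
      thus ?thesis using Nn[OF that] by simp
    qed
    thus ?thesis using nn[OF that] by (simp add: vec_eq_iff cl_id)
  qed
  have "is_solution f y" unfolding is_solution_def
    using dy Pid by (auto simp: FF_def)
  thus ?thesis using y0 by blast
qed

end


lemma uc_subset:
  fixes g :: "'a::metric_space \<Rightarrow> 'b::metric_space"
  assumes u: "uniformly_continuous_on S g" and T: "T \<subseteq> S" shows "uniformly_continuous_on T g"
  unfolding uniformly_continuous_on_def
proof (intro allI impI)
  fix e :: real assume "e > 0"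
  with u obtain d where "d > 0" "\<forall>x\<in>S. \<forall>x'\<in>S. dist x' x < d \<longrightarrow> dist (g x') (g x) < e"
    unfolding uniformly_continuous_on_def by blast
  thus "\<exists>d>0. \<forall>x\<in>T. \<forall>x'\<in>T. dist x' x < d \<longrightarrow> dist (g x') (g x) < e" using T by blast
qed

lemma antimono_conv:
  fixes h :: "real \<Rightarrow> real"
  assumes mono: "\<And>s t. a \<le> s \<Longrightarrow> s \<le> t \<Longrightarrow> h t \<le> h s" and lb: "\<And>t. t \<ge> a \<Longrightarrow> h t \<ge> b"
  shows "\<exists>l. (h \<longlongrightarrow> l) at_top"
proof -
  define l where "l = Inf (h ` {a..})"
  have bdd: "bdd_below (h ` {a..})" using lb by (auto simp: bdd_below_def)
  have ne: "h ` {a..} \<noteq> {}" by auto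
  have "(h \<longlongrightarrow> l) at_top"
  proof (rule tendstoI)
    fix e :: real assume e: "e > 0"
    have "Inf (h ` {a..}) < l + e" using e by (simp add: l_def)
    then obtain y where y: "y \<in> h ` {a..}" "y < l + e" using cInf_lessD[OF ne] by blast
    then obtain t1 where t1: "t1 \<ge> a" "h t1 < l + e" by auto
    have "\<forall>t\<ge>t1. dist (h t) l < e"
    proof (intro allI impI)
      fix t assume t: "t \<ge> t1"
      have "l \<le> h t" unfolding l_def using bdd t t1 by (intro cInf_lower) auto
      moreover have "h t \<le> h t1" using mono[of t1 t] t t1 by auto
      ultimately show "dist (h t) l < e" using t1 by (auto simp: dist_real_def)
    qed
    thus "eventually (\<lambda>t. dist (h t) l < e) at_top" unfolding eventually_at_top_linorder by blast
  qed
  thus ?thesis by blast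
qed

lemma sq_to:
  fixes g :: "real \<Rightarrow> real"
  assumes "((\<lambda>t. (g t - l)^2) \<longlongrightarrow> 0) F" shows "(g \<longlongrightarrow> l) F"
proof -
  have "((\<lambda>t. sqrt ((g t - l)^2)) \<longlongrightarrow> sqrt 0) F" by (intro tendsto_intros assms)
  hence "((\<lambda>t. \<bar>g t - l\<bar>) \<longlongrightarrow> 0) F" by simp
  hence "((\<lambda>t. g t - l) \<longlongrightarrow> 0) F" by (simp add: tendsto_rabs_zero_iff)
  thus ?thesis by (simp add: LIM_zero_iff)
qed

lemma phi_lb:
  fixes u Mx :: real
  assumes u: "0 < u" "u \<le> Mx" and M1: "1 \<le> Mx"
  shows "u - 1 - ln u \<ge> (u-1)^2/(2*Mx)"
proof -
  define \<psi> where "\<psi> v = v - 1 - ln v - (v-1)^2/(2*Mx)" for v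
  define \<psi>' where "\<psi>' v = (v - 1) * (Mx - v) / (v * Mx)" for v
  have Mpos: "Mx > 0" using M1 by simp
  have der: "(\<psi> has_real_derivative \<psi>' v) (at v within {0..})" if "v > 0" for v
  proof -
    have "(\<psi> has_real_derivative (1 - 1/v - 2*(v-1)/(2*Mx))) (at v within {0..})"
      unfolding \<psi>_def using that Mpos by (auto intro!: derivative_eq_intros simp: power2_eq_square field_simps)
    moreover have "1 - 1/v - 2*(v-1)/(2*Mx) = \<psi>' v" unfolding \<psi>'_def using that Mpos
      by (simp add: field_simps)
    ultimately show ?thesis by simp
  qed
  have p1: "\<psi> 1 = 0" by (simp add: \<psi>_def)
  show ?thesis
  proof (cases "u \<ge> 1")
    case True
    have "\<psi> 1 \<le> \<psi> u"
      by (rule mono_deriv[of 1 u \<psi> \<psi>']) (use True der u Mpos in \<open>auto simp: \<psi>'_def intro!: divide_nonneg_pos mult_nonneg_nonneg\<close>)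
    thus ?thesis using p1 by (simp add: \<psi>_def)
  next
    case False
    have "(\<lambda>v. - \<psi> v) u \<le> (\<lambda>v. - \<psi> v) 1"
    proof (rule mono_deriv[of u 1 _ "\<lambda>v. - \<psi>' v"])
      fix v assume "v \<in> {u..1}"
      hence "v > 0" using u by auto
      thus "((\<lambda>v. - \<psi> v) has_real_derivative - \<psi>' v) (at v within {0..})" using der by (auto intro: derivative_intros)
    next
      fix v assume v: "u < v" "v < 1"
      have "(1 - v)*(Mx - v) \<ge> 0" using v M1 by auto
      moreover have "v * Mx > 0" using v u Mpos by auto
      ultimately have "(1 - v) * (Mx - v) / (v * Mx) \<ge> 0" by simp
      moreover have "-((v - 1) * (Mx - v)) = (1 - v) * (Mx - v)" by (simp add: algebra_simps)
      ultimately show "0 \<le> - \<psi>' v" unfolding \<psi>'_def minus_divide_left by simp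
    qed (use u False in auto)
    thus ?thesis using p1 by (simp add: \<psi>_def)
  qed
qed

lemma hlog_nonneg: fixes x s :: real assumes "x > 0" "s > 0" shows "x - s*ln x \<ge> s - s*ln s"
proof -
  have "ln (x/s) \<le> x/s - 1" using assms by (intro ln_le_minus_one) auto
  hence "s * ln (x/s) \<le> s*(x/s - 1)" using assms by (intro mult_left_mono) auto
  thus ?thesis using assms by (simp add: ln_div algebra_simps)
qed

lemma hlog_quad:
  fixes x s X :: real
  assumes x: "x > 0" "x \<le> X" and s: "s > 0"
  shows "x - s*ln x - (s - s*ln s) \<ge> (x - s)^2 / (2 * s * max 1 (X / s))"
proof -
  define Mx where "Mx = max 1 (X/s)"
  have "x/s \<le> Mx" using x s by (auto simp: Mx_def field_simps max_def)
  hence "x/s - 1 - ln (x/s) \<ge> (x/s - 1)^2/(2*Mx)" using x s by (intro phi_lb) (auto simp: Mx_def)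
  hence "s*(x/s - 1 - ln (x/s)) \<ge> s*((x/s - 1)^2/(2*Mx))" using s by (intro mult_left_mono) auto
  moreover have "s*(x/s - 1 - ln (x/s)) = x - s*ln x - (s - s*ln s)" using x s by (simp add: ln_div field_simps)
  moreover have "Mx \<ge> 1" by (simp add: Mx_def)
  moreover have "s*((x/s - 1)^2/(2*Mx)) = (x - s)^2 / (2 * s * Mx)" using s \<open>Mx \<ge> 1\<close>
    by (simp add: field_simps power2_eq_square)
  ultimately show ?thesis unfolding Mx_def by simp
qed

context sys begin

lemma Om_bounds: assumes "v \<in> Om" shows "0 \<le> v $ i" "v $ i \<le> AA"
proof -
  have c: "v$1 \<ge> 0" "v$2 \<ge> 0" "v$3 \<ge> 0" "v$4 \<ge> 0" "v$5 \<ge> 0" "v$1+v$2+v$3+v$4+v$5 \<le> AA"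
    using assms by (auto simp: Om_iff)
  show "0 \<le> v $ i" using c five_cases[of i] by auto
  have "v $ i \<le> v$1+v$2+v$3+v$4+v$5" using c five_cases[of i] by (elim disjE) auto
  thus "v $ i \<le> AA" using c by simp
qed

lemma P_Om: "v \<in> Om \<Longrightarrow> P v = v"
  using Om_bounds by (simp add: vec_eq_iff cl_id)

definition Bf where "Bf = norm (FF 0) + LL * (5*AA)"

lemma f_bnd: assumes "v \<in> Om" shows "\<bar>f v $ i\<bar> \<le> Bf"
proof -
  have e: "f v = FF v" using P_Om[OF assms] by (simp add: FF_def)
  show ?thesis using component_le_norm_cart[of "FF v" i] FF_bnd[of v] e unfolding Bf_def by simp
qed

lemma Bf_nn: "Bf \<ge> 0"
proof -
  have "LL*(5*AA) \<ge> 0" using LL_pos AA_pos by (intro mult_nonneg_nonneg) auto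
  thus ?thesis unfolding Bf_def using norm_ge_zero[of "FF 0"] by linarith
qed

lemma D_ge: "v \<in> Om \<Longrightarrow> \<epsilon> + v$2 + a * v$4 \<ge> \<epsilon>"
  using Om_bounds[of v 2] Om_bounds[of v 4] pos by auto

lemma sol_in: "is_solution f x \<Longrightarrow> x 0 \<in> Om \<Longrightarrow> t \<ge> 0 \<Longrightarrow> x t \<in> Om"
  by (rule invariant)

lemma sol_comp_lip:
  assumes sol: "is_solution f x" and x0: "x 0 \<in> Om" and st: "0 \<le> s" "s \<le> t"
  shows "\<bar>x t $ i - x s $ i\<bar> \<le> Bf * (t - s)"
proof -
  have d: "((\<lambda>t. x t $ i) has_real_derivative f (x u) $ i) (at u within {0..})" if "u \<ge> 0" for u
    using sol_deriv[OF sol that] .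
  have b: "\<bar>f (x u) $ i\<bar> \<le> Bf" if "u \<ge> 0" for u using f_bnd[OF sol_in[OF sol x0 that]] .
  have "(\<lambda>u. Bf*u - x u $ i) s \<le> (\<lambda>u. Bf*u - x u $ i) t"
  proof (rule mono_deriv[of s t _ "\<lambda>u. Bf - f (x u) $ i"])
    fix u assume "u \<in> {s..t}"
    thus "((\<lambda>u. Bf*u - x u $ i) has_real_derivative Bf - f (x u) $ i) (at u within {0..})"
      using d[of u] st by (auto intro!: derivative_eq_intros)
  next
    fix u assume "s < u" "u < t"
    thus "0 \<le> Bf - f (x u) $ i" using b[of u] st by (auto simp: abs_le_iff)
  qed (use st in auto)
  moreover have "(\<lambda>u. Bf*u + x u $ i) s \<le> (\<lambda>u. Bf*u + x u $ i) t"
  proof (rule mono_deriv[of s t _ "\<lambda>u. Bf + f (x u) $ i"])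
    fix u assume "u \<in> {s..t}"
    thus "((\<lambda>u. Bf*u + x u $ i) has_real_derivative Bf + f (x u) $ i) (at u within {0..})"
      using d[of u] st by (auto intro!: derivative_eq_intros)
  next
    fix u assume "s < u" "u < t"
    thus "0 \<le> Bf + f (x u) $ i" using b[of u] st by (auto simp: abs_le_iff)
  qed (use st in auto)
  ultimately show ?thesis by (simp add: abs_le_iff algebra_simps)
qed

lemma sol_uc:
  assumes sol: "is_solution f x" and x0: "x 0 \<in> Om"
  shows "uniformly_continuous_on {0..} x"
  unfolding uniformly_continuous_on_def
proof (intro allI impI)
  fix e :: real assume e: "e > 0"
  show "\<exists>d>0. \<forall>u\<in>{0..}. \<forall>v\<in>{0..}. dist v u < d \<longrightarrow> dist (x v) (x u) < e"
  proof (intro exI[of _ "e/(5*Bf+1)"] conjI ballI impI)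
    show "e/(5*Bf+1) > 0" using e Bf_nn by simp
    fix u v :: real assume uv: "u \<in> {0..}" "v \<in> {0..}" "dist v u < e/(5*Bf+1)"
    have ci: "\<bar>x v $ i - x u $ i\<bar> \<le> Bf * \<bar>v - u\<bar>" for i
      using sol_comp_lip[OF sol x0, of u v i] sol_comp_lip[OF sol x0, of v u i] uv
      by (cases "u \<le> v") (auto simp: abs_minus_commute)
    have "dist (x v) (x u) \<le> \<bar>(x v - x u)$1\<bar> + \<bar>(x v - x u)$2\<bar> + \<bar>(x v - x u)$3\<bar> + \<bar>(x v - x u)$4\<bar> + \<bar>(x v - x u)$5\<bar>"
      unfolding dist_norm by (rule norm5)
    also have "\<dots> \<le> 5 * (Bf * \<bar>v - u\<bar>)" using ci[of 1] ci[of 2] ci[of 3] ci[of 4] ci[of 5] by simp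
    also have "\<dots> \<le> (5*Bf+1) * \<bar>v - u\<bar>" by (simp add: algebra_simps)
    also have "\<dots> < e" using uv(3) Bf_nn by (simp add: dist_real_def field_simps)
    finally show "dist (x v) (x u) < e" .
  qed
qed

lemma uc_comp:
  fixes \<Phi> :: "real^5 \<Rightarrow> real"
  assumes sol: "is_solution f x" and x0: "x 0 \<in> Om" and K: "compact K" and \<Phi>: "continuous_on K \<Phi>"
    and inK: "\<And>t. t \<ge> t0 \<Longrightarrow> x t \<in> K" and t0: "t0 \<ge> 0"
  shows "uniformly_continuous_on {t0..} (\<lambda>t. \<Phi> (x t))"
proof (rule uniformly_continuous_on_compose[of "{t0..}" x \<Phi>])
  show "uniformly_continuous_on {t0..} x" by (rule uc_subset[OF sol_uc[OF sol x0]]) (use t0 in auto)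
  show "uniformly_continuous_on (x ` {t0..}) \<Phi>"
    by (rule uc_subset[OF compact_uniformly_continuous[OF \<Phi> K]]) (use inK in auto)
qed

definition \<beta>S where "\<beta>S = c*AA + \<mu>"
lemma \<beta>S_pos: "\<beta>S > 0" unfolding \<beta>S_def using pos AA_pos by (simp add: add_pos_pos)

lemma S_lower:
  assumes sol: "is_solution f x" and x0: "x 0 \<in> Om" and t: "t \<ge> 0"
  shows "x t $ 1 \<ge> \<alpha>/\<beta>S + (x 0 $ 1 - \<alpha>/\<beta>S) * exp (-\<beta>S*(t-0))"
proof (rule lin_lower[of 0 "\<lambda>t. x t $ 1" "\<lambda>t. f (x t) $ 1" \<beta>S \<alpha> t])
  fix u :: real assume u: "u \<ge> 0"
  show "((\<lambda>t. x t $ 1) has_real_derivative f (x u) $ 1) (at u within {0..})" by (rule sol_deriv[OF sol u])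
  have v: "x u \<in> Om" by (rule sol_in[OF sol x0 u])
  have "c * x u $ 1 * x u $ 2 \<le> c * x u $ 1 * AA" using Om_bounds[OF v] pos
    by (intro mult_left_mono) auto
  thus "f (x u) $ 1 \<ge> \<alpha> - \<beta>S * x u $ 1" by (simp add: f_nth \<beta>S_def algebra_simps)
qed (use t \<beta>S_pos in auto)

definition smin where "smin = \<alpha>/\<beta>S * (1 - exp (-\<beta>S))"
lemma smin_pos: "smin > 0" unfolding smin_def using \<beta>S_pos pos by simp

lemma S_ge_smin:
  assumes sol: "is_solution f x" and x0: "x 0 \<in> Om" and t: "t \<ge> 1"
  shows "x t $ 1 \<ge> smin"
proof -
  have l: "x t $ 1 \<ge> \<alpha>/\<beta>S + (x 0 $ 1 - \<alpha>/\<beta>S) * exp (-\<beta>S*(t-0))" using S_lower[OF sol x0] t by simp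
  have "x 0 $ 1 * exp (-\<beta>S*t) \<ge> 0" using Om_bounds[OF x0, of 1] by simp
  moreover have "exp (-\<beta>S*t) \<le> exp (-\<beta>S)" using t \<beta>S_pos by simp
  hence "\<alpha>/\<beta>S * exp (-\<beta>S*t) \<le> \<alpha>/\<beta>S * exp (-\<beta>S)" using pos \<beta>S_pos by (intro mult_left_mono) auto
  ultimately show ?thesis using l unfolding smin_def by (simp add: algebra_simps)
qed

lemma S_pos_all:
  assumes sol: "is_solution f x" and x0: "x 0 \<in> Om" and S0: "x 0 $ 1 > 0" and t: "t \<ge> 0"
  shows "x t $ 1 \<ge> min (x 0 $ 1) (\<alpha>/\<beta>S)"
proof (rule lin_lower_min[of 0 "\<lambda>t. x t $ 1" "\<lambda>t. f (x t) $ 1" \<beta>S \<alpha> t])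
  fix u :: real assume u: "u \<ge> 0"
  show "((\<lambda>t. x t $ 1) has_real_derivative f (x u) $ 1) (at u within {0..})" by (rule sol_deriv[OF sol u])
  have v: "x u \<in> Om" by (rule sol_in[OF sol x0 u])
  have "c * x u $ 1 * x u $ 2 \<le> c * x u $ 1 * AA" using Om_bounds[OF v] pos
    by (intro mult_left_mono) auto
  thus "f (x u) $ 1 \<ge> \<alpha> - \<beta>S * x u $ 1" by (simp add: f_nth \<beta>S_def algebra_simps)
qed (use t \<beta>S_pos in auto)

definition HI where "HI = c*AA + p*AA/\<epsilon> + \<gamma> + \<mu>"

lemma I_pos:
  assumes sol: "is_solution f x" and x0: "x 0 \<in> Om" and I0: "x 0 $ 2 > 0" and t: "t \<ge> 0"
  shows "x t $ 2 \<ge> x 0 $ 2 * exp (- HI * t)" "x t $ 2 > 0"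
proof -
  have "x t $ 2 \<ge> x 0 $ 2 * exp (- HI * (t - 0))"
  proof (rule exp_growth[of 0 "\<lambda>t. x t $ 2" "\<lambda>t. f (x t) $ 2"])
    fix u :: real assume u: "u \<ge> 0"
    show "((\<lambda>t. x t $ 2) has_real_derivative f (x u) $ 2) (at u within {0..})" by (rule sol_deriv[OF sol u])
    have v: "x u \<in> Om" by (rule sol_in[OF sol x0 u])
    let ?D = "\<epsilon> + x u $ 2 + a * x u $ 4"
    have D: "?D \<ge> \<epsilon>" by (rule D_ge[OF v])
    have "x u $ 3 / ?D \<le> AA / \<epsilon>" using Om_bounds[OF v, of 3] D pos by (intro frac_le) auto
    hence g: "p * x u $ 3 / ?D \<le> p * AA / \<epsilon>" using pos by (simp add: mult_left_mono divide_right_mono times_divide_eq_right[symmetric] del: times_divide_eq_right)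
    have "c * x u $ 1 \<ge> 0" using Om_bounds[OF v, of 1] pos by simp
    hence h: "c * x u $ 1 - p * x u $ 3 / ?D - \<gamma> - \<mu> \<ge> - HI" using g Om_bounds[OF v] pos
      unfolding HI_def by (smt (verit) mult_nonneg_nonneg zero_le_divide_iff AA_pos)
    have "f (x u) $ 2 = x u $ 2 * (c * x u $ 1 - p * x u $ 3 / ?D - \<gamma> - \<mu>)" by (simp add: f_nth algebra_simps)
    also have "\<dots> \<ge> x u $ 2 * (- HI)" using h Om_bounds[OF v, of 2] by (intro mult_left_mono) auto
    finally show "f (x u) $ 2 \<ge> - HI * x u $ 2" by (simp add: algebra_simps)
  qed (use t in auto)
  thus "x t $ 2 \<ge> x 0 $ 2 * exp (- HI * t)" by simp
  thus "x t $ 2 > 0" using I0 by (smt (verit) exp_gt_zero mult_pos_pos)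
qed

lemma vec_lim5:
  assumes "((\<lambda>t. x t $ 1) \<longlongrightarrow> e $ 1) F" "((\<lambda>t. x t $ 2) \<longlongrightarrow> e $ 2) F" "((\<lambda>t. x t $ 3) \<longlongrightarrow> e $ 3) F"
    "((\<lambda>t. x t $ 4) \<longlongrightarrow> e $ 4) F" "((\<lambda>t. x t $ 5) \<longlongrightarrow> e $ (5::5)) F"
  shows "(x \<longlongrightarrow> (e::real^5)) F"
proof (rule vec_tendstoI)
  fix i :: 5 show "((\<lambda>t. x t $ i) \<longlongrightarrow> e $ i) F" using five_cases[of i] assms by auto
qed

end


lemma VD_identity:
  fixes S I C g s i al ga mu c th k :: real
  assumes "S \<noteq> 0" "I \<noteq> 0" "al = c * s * i + mu * s" "ga = c * s - mu"
  shows "(1 - s / S) * (al - c * S * I - mu * S) + (1 - i / I) * (c * S * I - g * I - ga * I - mu * I) + th * (g * I - k * C)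
    = -(mu + c * i) * (S - s)^2 / S + g * ((th - 1) * I + i) - th * k * C"
  using assms(1,2) unfolding assms(3,4) by (simp add: field_simps power2_eq_square)

context sys begin

definition "RR = R0 \<alpha> c \<mu> \<gamma>"
definition "Send = (\<mu>+\<gamma>)/c"
definition "Iend = \<mu>/c * (RR - 1)"
definition "Rend = \<gamma>/c * (RR - 1)"
definition "kk = m + d + \<mu>"

lemma Se_pos: "Send > 0" unfolding Send_def using pos by simp
lemma alpha_eq: "\<alpha> = c * Send * Iend + \<mu> * Send"
proof -
  have e1: "c * Iend = \<mu> * (RR - 1)" unfolding Iend_def using pos by simp
  have h: "\<mu> + \<gamma> \<noteq> 0" "\<mu> * (\<mu> + \<gamma>) \<noteq> 0" using pos by auto
  have h2: "\<gamma> * (\<mu> * c) + \<mu> * (\<mu> * c) > 0" using pos by (intro add_pos_pos mult_pos_pos) auto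
  have e2: "Send * (\<mu> * RR) = \<alpha>" unfolding Send_def RR_def R0_def using pos h h2 by (simp add: field_simps)
  have "c * Send * Iend + \<mu> * Send = Send * (c * Iend + \<mu>)" by (simp add: algebra_simps)
  also have "\<dots> = Send * (\<mu> * RR)" using e1 by (simp add: algebra_simps)
  finally show ?thesis using e2 by simp
qed
lemma gamma_eq: "\<gamma> = c * Send - \<mu>"
  using pos unfolding Send_def by (simp add: field_simps)
lemma Re_eq: "Rend = \<gamma> * Iend/\<mu>"
  using pos unfolding Rend_def Iend_def by (simp add: field_simps)
lemma Ie_pos: "RR > 1 \<Longrightarrow> Iend > 0" unfolding Iend_def using pos by simp
lemma E1_eq: "E1 \<alpha> c \<mu> \<gamma> = mk5 Send Iend 0 0 Rend"
  unfolding E1_def Send_def Iend_def Rend_def RR_def by simp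

definition V1 :: "real \<Rightarrow> real^5 \<Rightarrow> real" where
  "V1 \<theta> v = (v$1 - Send * ln(v$1)) + (v$2 - Iend * ln(v$2)) + \<theta> * v$3"
definition VD1 :: "real \<Rightarrow> real^5 \<Rightarrow> real" where
  "VD1 \<theta> v = (1 - Send/v$1) * (f v $ 1) + (1 - Iend/v$2) * (f v $ 2) + \<theta> * (f v $ 3)"

lemma V1_deriv:
  assumes sol: "is_solution f x" and t: "t \<ge> 0" and S: "x t $ 1 > 0" and I: "x t $ 2 > 0"
  shows "((\<lambda>t. V1 \<theta> (x t)) has_real_derivative VD1 \<theta> (x t)) (at t within {0..})"
proof -
  define S where "S t = x t $ 1" for t
  define II where "II t = x t $ 2" for t
  define C where "C t = x t $ 3" for t
  have dS: "(S has_real_derivative f (x t) $ 1) (at t within {0..})" unfolding S_def by (rule sol_deriv[OF sol t])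
  have dI: "(II has_real_derivative f (x t) $ 2) (at t within {0..})" unfolding II_def by (rule sol_deriv[OF sol t])
  have dC: "(C has_real_derivative f (x t) $ 3) (at t within {0..})" unfolding C_def by (rule sol_deriv[OF sol t])
  have e: "(\<lambda>t. V1 \<theta> (x t)) = (\<lambda>t. (S t - Send * ln(S t)) + (II t - Iend * ln(II t)) + \<theta> * C t)"
    by (simp add: V1_def S_def II_def C_def)
  have "((\<lambda>t. (S t - Send * ln(S t)) + (II t - Iend * ln(II t)) + \<theta> * C t) has_real_derivative
     (f (x t) $ 1 - Send * (f (x t) $ 1 / S t)) + (f (x t) $ 2 - Iend * (f (x t) $ 2 / II t)) + \<theta> * f (x t) $ 3) (at t within {0..})"
    using S I unfolding S_def[symmetric] II_def[symmetric]
    by (auto intro!: derivative_eq_intros dS dI dC simp: divide_inverse)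
  moreover have "(f (x t) $ 1 - Send * (f (x t) $ 1 / S t)) + (f (x t) $ 2 - Iend * (f (x t) $ 2 / II t)) + \<theta> * f (x t) $ 3 = VD1 \<theta> (x t)"
    unfolding VD1_def S_def II_def using S I by (simp add: algebra_simps)
  ultimately show ?thesis unfolding e by simp
qed

lemma VD1_le:
  assumes v: "v \<in> Om" and S: "v$1 > 0" and I: "v$2 > 0"
    and th: "\<theta> > 0" "\<theta> * (p - kk) \<le> p" "p * Iend \<le> \<theta> * kk * \<epsilon>"
  shows "VD1 \<theta> v \<le> -(\<mu> + c * Iend) * (v$1 - Send)^2/v$1"
proof -
  define D where "D = \<epsilon> + v$2 + a * v$4"
  have D: "D \<ge> \<epsilon>" "D > 0" using D_ge[OF v] pos unfolding D_def by auto
  define g where "g = p * v$3/D"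
  have f1: "f v $ 1 = \<alpha> - c * v$1 * v$2 - \<mu> * v$1" by (simp add: f_nth)
  have f2: "f v $ 2 = c * v$1 * v$2 - g * v$2 - \<gamma> * v$2 - \<mu> * v$2" by (simp add: f_nth g_def D_def)
  have f3: "f v $ 3 = g * v$2 - kk * v$3" by (simp add: f_nth g_def D_def kk_def algebra_simps)
  have step1: "VD1 \<theta> v = -(\<mu> + c * Iend) * (v$1 - Send)^2/v$1 + g * ((\<theta> - 1) * v$2 + Iend) - \<theta> * kk * v$3"
    unfolding VD1_def f1 f2 f3
    by (rule VD_identity) (use alpha_eq gamma_eq S I in auto)
  have step2: "g * ((\<theta> - 1) * v$2 + Iend) - \<theta> * kk * v$3 = (v$3/D) * (p * ((\<theta> - 1) * v$2 + Iend) - \<theta> * kk * D)"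
    unfolding g_def using D by (simp add: field_simps)
  have Q: "p * ((\<theta> - 1) * v$2 + Iend) - \<theta> * kk * D \<le> 0"
  proof -
    have e: "p * ((\<theta> - 1) * v$2 + Iend) - \<theta> * kk * D = (\<theta> * (p - kk) - p) * v$2 + (p * Iend - \<theta> * kk * \<epsilon>) - \<theta> * kk * a * v$4"
      unfolding D_def by (simp add: algebra_simps)
    have "(\<theta> * (p - kk) - p) * v$2 \<le> 0" using th I by (intro mult_nonpos_nonneg) auto
    moreover have "\<theta> * kk * a * v$4 \<ge> 0" using th pos Om_bounds[OF v, of 4] unfolding kk_def by simp
    ultimately show ?thesis unfolding e using th by linarith
  qed
  have "(v$3/D) * (p * ((\<theta> - 1) * v$2 + Iend) - \<theta> * kk * D) \<le> 0"
    using Q Om_bounds[OF v, of 3] D by (intro mult_nonneg_nonpos) auto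
  thus ?thesis using step1 step2 by simp
qed

end


context sys begin

lemma bounded_Om: "bounded Om"
  unfolding bounded_iff
proof (intro exI ballI)
  fix v assume v: "v \<in> Om"
  have "norm v \<le> \<bar>v$1\<bar> + \<bar>v$2\<bar> + \<bar>v$3\<bar> + \<bar>v$4\<bar> + \<bar>v$5\<bar>" by (rule norm5)
  also have "\<dots> \<le> 5 * AA"
  proof -
    have "\<bar>v$i\<bar> \<le> AA" for i using Om_bounds[OF v, of i] by simp
    from this[of 1] this[of 2] this[of 3] this[of 4] this[of 5] show ?thesis by linarith
  qed
  finally show "norm v \<le> 5 * AA" .
qed

lemma compact_K: "compact {v. v \<in> Om \<and> s0 \<le> v$1 \<and> i0 \<le> v$2}"
proof -
  have "closed {v. v \<in> Om \<and> s0 \<le> v$1 \<and> i0 \<le> v$2}"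
    by (intro closed_Collect_conj closed_Collect_le continuous_intros) (use closed_Om in simp)
  moreover have "bounded {v. v \<in> Om \<and> s0 \<le> v$1 \<and> i0 \<le> v$2}"
    by (rule bounded_subset[OF bounded_Om]) auto
  ultimately show ?thesis using compact_eq_bounded_closed by blast
qed

lemma vec_lim_transform:
  fixes g h :: "real \<Rightarrow> real"
  assumes "(g \<longlongrightarrow> l) at_top" "eventually (\<lambda>t. g t = h t) at_top"
  shows "(h \<longlongrightarrow> l) at_top"
  using assms by (rule Lim_transform_eventually)

theorem conv_E1:
  assumes R1: "RR > 1" and th: "\<theta> > 0" "\<theta> * (p - kk) \<le> p" "p * Iend \<le> \<theta> * kk * \<epsilon>"
    and sol: "is_solution f x" and x0: "x 0 \<in> Om" and I0: "x 0 $ 2 > 0"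
  shows "(x \<longlongrightarrow> E1 \<alpha> c \<mu> \<gamma>) at_top"
proof -
  have Ip: "Iend > 0" by (rule Ie_pos[OF R1])
  have inOm: "x t \<in> Om" if "t \<ge> 0" for t using sol_in[OF sol x0 that] .
  have Ipos: "x t $ 2 > 0" if "t \<ge> 0" for t using I_pos(2)[OF sol x0 I0 that] .
  have Sge: "x t $ 1 \<ge> smin" if "t \<ge> 1" for t using S_ge_smin[OF sol x0 that] .
  have Spos: "x t $ 1 > 0" if "t \<ge> 1" for t using Sge[OF that] smin_pos by linarith
  define V where "V t = V1 \<theta> (x t)" for t
  have Vd: "(V has_real_derivative VD1 \<theta> (x t)) (at t within {0..})" if "t \<ge> 1" for t
    unfolding V_def using V1_deriv[OF sol _ Spos[OF that] Ipos] that by auto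
  have VDle: "VD1 \<theta> (x t) \<le> -(\<mu> + c * Iend) * (x t $ 1 - Send)^2 / x t $ 1" if "t \<ge> 1" for t
    using VD1_le[OF inOm Spos Ipos th] that by auto
  have VDle2: "(\<mu> + c * Iend) * (x t $ 1 - Send)^2 / x t $ 1 \<le> - VD1 \<theta> (x t)" if "t \<ge> 1" for t
  proof -
    have "-(\<mu> + c * Iend) * (x t $ 1 - Send)^2 / x t $ 1 = - ((\<mu> + c * Iend) * (x t $ 1 - Send)^2 / x t $ 1)"
      by (simp only: minus_divide_left mult_minus_left)
    thus ?thesis using VDle[OF that] by linarith
  qed
  have A0: "\<mu> + c * Iend > 0" using pos Ip by (simp add: add_pos_pos)
  have VDnp: "VD1 \<theta> (x t) \<le> 0" if "t \<ge> 1" for t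
  proof -
    have "(\<mu> + c * Iend) * (x t $ 1 - Send)^2 / x t $ 1 \<ge> 0" using A0 Spos[OF that] by simp
    moreover have "-(\<mu> + c * Iend) * (x t $ 1 - Send)^2 / x t $ 1 = - ((\<mu> + c * Iend) * (x t $ 1 - Send)^2 / x t $ 1)"
      by (simp only: minus_divide_left mult_minus_left)
    ultimately show ?thesis using VDle[OF that] by linarith
  qed
  have Vmono: "V t \<le> V s" if "1 \<le> s" "s \<le> t" for s t
  proof -
    have "(\<lambda>u. - V u) s \<le> (\<lambda>u. - V u) t"
    proof (rule mono_deriv[of s t _ "\<lambda>u. - VD1 \<theta> (x u)"])
      fix u assume "u \<in> {s..t}"
      hence "u \<ge> 1" using that by auto
      thus "((\<lambda>u. - V u) has_real_derivative - VD1 \<theta> (x u)) (at u within {0..})"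
        using Vd by (auto intro!: derivative_eq_intros)
    next
      fix u assume "s < u" "u < t"
      thus "0 \<le> - VD1 \<theta> (x u)" using VDnp[of u] that by auto
    qed (use that in auto)
    thus ?thesis by simp
  qed
  define Vlow where "Vlow = (Send - Send * ln Send) + (Iend - Iend * ln Iend)"
  have Vexp: "V t = (x t $ 1 - Send * ln (x t $ 1)) + (x t $ 2 - Iend * ln (x t $ 2)) + \<theta> * x t $ 3" for t
    by (simp add: V_def V1_def)
  have h1: "x t $ 1 - Send * ln (x t $ 1) \<ge> Send - Send * ln Send" if "t \<ge> 1" for t
    by (rule hlog_nonneg) (use Spos[OF that] Se_pos in auto)
  have h2: "x t $ 2 - Iend * ln (x t $ 2) \<ge> Iend - Iend * ln Iend" if "t \<ge> 1" for t
    by (rule hlog_nonneg) (use Ipos that Ip in auto)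
  have h3: "\<theta> * x t $ 3 \<ge> 0" if "t \<ge> 1" for t using th Om_bounds[OF inOm, of t 3] that by simp
  have Vlb: "V t \<ge> Vlow" if "t \<ge> 1" for t
    using h1[OF that] h2[OF that] h3[OF that] unfolding Vexp Vlow_def by linarith
  obtain lV where lV: "(V \<longlongrightarrow> lV) at_top" using antimono_conv[of 1 V Vlow] Vmono Vlb by blast
  define imin where "imin = exp ((Send - Send * ln Send - V 1) / Iend)"
  have imin_pos: "imin > 0" by (simp add: imin_def)
  have Ige: "x t $ 2 \<ge> imin" if t: "t \<ge> 1" for t
  proof -
    have "V t \<le> V 1" using Vmono t by auto
    moreover have "x t $ 2 \<ge> 0" using Ipos t by (meson less_imp_le order_trans zero_le_one)
    ultimately have "- (Iend * ln (x t $ 2)) \<le> V 1 - (Send - Send * ln Send)"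
      using h1[OF t] h3[OF t] unfolding Vexp[of t] by linarith
    hence "Iend * ((Send - Send * ln Send - V 1) / Iend) \<le> Iend * ln (x t $ 2)"
      using Ip by simp
    hence "(Send - Send * ln Send - V 1) / Iend \<le> ln (x t $ 2)"
      using Ip by (simp only: mult_le_cancel_left_pos)
    hence "imin \<le> exp (ln (x t $ 2))" unfolding imin_def by simp
    thus ?thesis using Ipos t by simp
  qed
  define K where "K = {v. v \<in> Om \<and> smin \<le> v$1 \<and> imin \<le> v$2}"
  have cK: "compact K" unfolding K_def by (rule compact_K)
  have inK: "x t \<in> K" if "t \<ge> 1" for t using inOm Sge Ige that by (auto simp: K_def)
  have Kne: "v$1 \<noteq> 0" "v$2 \<noteq> 0" "\<epsilon> + v$2 + a * v$4 \<noteq> 0" if "v \<in> K" for v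
  proof -
    have "v$1 \<ge> smin" "v$2 \<ge> imin" "v \<in> Om" using that by (auto simp: K_def)
    thus "v$1 \<noteq> 0" "v$2 \<noteq> 0" "\<epsilon> + v$2 + a * v$4 \<noteq> 0" using smin_pos imin_pos D_ge[of v] pos by auto
  qed
  have contVD: "continuous_on K (VD1 \<theta>)"
    unfolding VD1_def f_nth by (intro continuous_intros) (auto simp: Kne)
  have ucVD: "uniformly_continuous_on {1..} (\<lambda>t. VD1 \<theta> (x t))"
    by (rule uc_comp[OF sol x0 cK contVD inK]) auto
  have VD0: "((\<lambda>t. VD1 \<theta> (x t)) \<longlongrightarrow> 0) at_top"
    by (rule deriv_to_zero[of 1 V "\<lambda>t. VD1 \<theta> (x t)" lV]) (use Vd lV ucVD in auto)
  have sq: "((\<lambda>t. (x t $ 1 - Send)^2) \<longlongrightarrow> 0) at_top"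
  proof (rule tendsto_sandwich[of "\<lambda>t. 0" _ _ "\<lambda>t. AA / (\<mu> + c * Iend) * (- VD1 \<theta> (x t))"])
    show "eventually (\<lambda>t. 0 \<le> (x t $ 1 - Send)^2) at_top" by simp
    have "(x t $ 1 - Send)^2 \<le> AA / (\<mu> + c * Iend) * (- VD1 \<theta> (x t))" if t: "t \<ge> 1" for t
    proof -
      define Q where "Q = (\<mu> + c * Iend) * (x t $ 1 - Send)^2"
      have Q0: "Q \<ge> 0" using A0 by (simp add: Q_def)
      have "Q / AA \<le> Q / x t $ 1"
        using Q0 Spos[OF t] Om_bounds[OF inOm, of t 1] t by (intro divide_left_mono) (use pos in auto)
      also have "\<dots> \<le> - VD1 \<theta> (x t)" using VDle2[OF t] unfolding Q_def by simp
      finally have qa: "Q / AA \<le> - VD1 \<theta> (x t)" .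
      have "Q \<le> AA * (- VD1 \<theta> (x t))" using qa AA_pos by (metis mult.commute pos_divide_le_eq)
      hence "(x t $ 1 - Send)^2 \<le> (AA * (- VD1 \<theta> (x t))) / (\<mu> + c * Iend)"
        unfolding Q_def using A0 by (metis mult.commute pos_le_divide_eq)
      thus ?thesis by (metis times_divide_eq_left)
    qed
    thus "eventually (\<lambda>t. (x t $ 1 - Send)^2 \<le> AA / (\<mu> + c * Iend) * (- VD1 \<theta> (x t))) at_top"
      unfolding eventually_at_top_linorder by blast
    show "((\<lambda>t. 0) \<longlongrightarrow> 0) at_top" by simp
    show "((\<lambda>t. AA / (\<mu> + c * Iend) * (- VD1 \<theta> (x t))) \<longlongrightarrow> 0) at_top"
    proof -
      have "((\<lambda>t. - VD1 \<theta> (x t)) \<longlongrightarrow> 0) at_top" using tendsto_minus[OF VD0] by simp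
      thus ?thesis using tendsto_mult_right_zero[of "\<lambda>t. - VD1 \<theta> (x t)" at_top "AA / (\<mu> + c * Iend)"] by simp
    qed
  qed
  have Slim: "((\<lambda>t. x t $ 1) \<longlongrightarrow> Send) at_top" by (rule sq_to[OF sq])
  have contf1: "continuous_on K (\<lambda>v. f v $ 1)" unfolding f_nth by (intro continuous_intros)
  have Sd0: "((\<lambda>t. f (x t) $ 1) \<longlongrightarrow> 0) at_top"
    by (rule deriv_to_zero[of 1 "\<lambda>t. x t $ 1" _ Send]) (use sol_deriv[OF sol] Slim uc_comp[OF sol x0 cK contf1 inK] in auto)
  have Ieq: "eventually (\<lambda>t. (\<alpha> - \<mu> * x t $ 1 - f (x t) $ 1) / (c * x t $ 1) = x t $ 2) at_top"
  proof -
    have "(\<alpha> - \<mu> * x t $ 1 - f (x t) $ 1) / (c * x t $ 1) = x t $ 2" if t: "t \<ge> 1" for t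
      using Spos[OF t] pos by (simp add: f_nth field_simps)
    thus ?thesis unfolding eventually_at_top_linorder by blast
  qed
  have Ilim: "((\<lambda>t. x t $ 2) \<longlongrightarrow> Iend) at_top"
  proof -
    have "((\<lambda>t. (\<alpha> - \<mu> * x t $ 1 - f (x t) $ 1) / (c * x t $ 1)) \<longlongrightarrow> (\<alpha> - \<mu> * Send - 0) / (c * Send)) at_top"
      by (intro tendsto_intros Slim Sd0) (use pos Se_pos in auto)
    moreover have "(\<alpha> - \<mu> * Send - 0) / (c * Send) = Iend"
      using pos Se_pos by (subst alpha_eq) (simp add: field_simps)
    ultimately show ?thesis using Ieq by (auto intro: Lim_transform_eventually)
  qed
  have contf2: "continuous_on K (\<lambda>v. f v $ 2)" unfolding f_nth by (intro continuous_intros) (auto simp: Kne)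
  have Id0: "((\<lambda>t. f (x t) $ 2) \<longlongrightarrow> 0) at_top"
    by (rule deriv_to_zero[of 1 "\<lambda>t. x t $ 2" _ Iend]) (use sol_deriv[OF sol] Ilim uc_comp[OF sol x0 cK contf2 inK] in auto)
  define g where "g t = p * x t $ 3 / (\<epsilon> + x t $ 2 + a * x t $ 4)" for t
  have geq: "eventually (\<lambda>t. c * x t $ 1 - \<gamma> - \<mu> - f (x t) $ 2 / x t $ 2 = g t) at_top"
  proof -
    have "c * x t $ 1 - \<gamma> - \<mu> - f (x t) $ 2 / x t $ 2 = g t" if t: "t \<ge> 1" for t
    proof -
      have e: "f (x t) $ 2 = x t $ 2 * (c * x t $ 1 - g t - \<gamma> - \<mu>)" unfolding g_def by (simp add: f_nth algebra_simps)
      have "f (x t) $ 2 / x t $ 2 = c * x t $ 1 - g t - \<gamma> - \<mu>" unfolding e using Ipos[of t] t by simp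
      thus ?thesis by simp
    qed
    thus ?thesis unfolding eventually_at_top_linorder by blast
  qed
  have glim: "(g \<longlongrightarrow> 0) at_top"
  proof -
    have "((\<lambda>t. c * x t $ 1 - \<gamma> - \<mu> - f (x t) $ 2 / x t $ 2) \<longlongrightarrow> c * Send - \<gamma> - \<mu> - 0 / Iend) at_top"
      by (intro tendsto_intros Slim Ilim Id0) (use Ip in auto)
    moreover have "c * Send - \<gamma> - \<mu> - 0 / Iend = 0" using gamma_eq by simp
    ultimately show ?thesis using geq by (auto intro: Lim_transform_eventually)
  qed
  define Dmax where "Dmax = \<epsilon> + AA + a * AA"
  have Clim: "((\<lambda>t. x t $ 3) \<longlongrightarrow> 0) at_top"
  proof (rule tendsto_sandwich[of "\<lambda>t. 0" _ _ "\<lambda>t. g t * Dmax / p"])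
    show "eventually (\<lambda>t. 0 \<le> x t $ 3) at_top"
      unfolding eventually_at_top_linorder using Om_bounds[OF inOm] by (intro exI[of _ 0]) auto
    have "x t $ 3 \<le> g t * Dmax / p" if t: "t \<ge> 0" for t
    proof -
      have v: "x t \<in> Om" by (rule inOm[OF t])
      define D where "D = \<epsilon> + x t $ 2 + a * x t $ 4"
      have D1: "D \<ge> \<epsilon>" using D_ge[OF v] unfolding D_def .
      have "a * x t $ 4 \<le> a * AA" using Om_bounds[OF v, of 4] pos by (intro mult_left_mono) auto
      hence D2: "D \<le> Dmax" using Om_bounds[OF v, of 2] unfolding D_def Dmax_def by linarith
      have D: "D > 0" "D \<le> Dmax" using D1 D2 pos by auto
      have "x t $ 3 = g t * D / p" unfolding g_def D_def[symmetric] using D pos by simp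
      also have "\<dots> \<le> g t * Dmax / p" unfolding g_def D_def[symmetric]
        using D pos Om_bounds[OF v, of 3] by (intro divide_right_mono mult_left_mono) auto
      finally show ?thesis .
    qed
    thus "eventually (\<lambda>t. x t $ 3 \<le> g t * Dmax / p) at_top" unfolding eventually_at_top_linorder by blast
    show "((\<lambda>t. 0) \<longlongrightarrow> 0) at_top" by simp
    show "((\<lambda>t. g t * Dmax / p) \<longlongrightarrow> 0) at_top" using tendsto_mult[OF glim tendsto_const[of "Dmax / p"]] by simp
  qed
  have Mlim: "((\<lambda>t. x t $ 4) \<longlongrightarrow> 0 / (q + \<mu>)) at_top"
  proof (rule lin_limit[of 0 _ "\<lambda>t. f (x t) $ 4" "q + \<mu>" "\<lambda>t. m * x t $ 3"])
    show "((\<lambda>t. m * x t $ 3) \<longlongrightarrow> 0) at_top" using tendsto_mult_right_zero[OF Clim] by simp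
    show "\<And>t. t \<ge> 0 \<Longrightarrow> ((\<lambda>t. x t $ 4) has_real_derivative f (x t) $ 4) (at t within {0..})" by (rule sol_deriv[OF sol])
    show "\<And>t. t \<ge> 0 \<Longrightarrow> f (x t) $ 4 = m * x t $ 3 - (q + \<mu>) * x t $ 4" by (simp add: f_nth algebra_simps)
  qed (use pos in auto)
  have Rlim: "((\<lambda>t. x t $ 5) \<longlongrightarrow> (q * 0 + \<gamma> * Iend) / \<mu>) at_top"
  proof (rule lin_limit[of 0 _ "\<lambda>t. f (x t) $ 5" "\<mu>" "\<lambda>t. q * x t $ 4 + \<gamma> * x t $ 2"])
    show "((\<lambda>t. q * x t $ 4 + \<gamma> * x t $ 2) \<longlongrightarrow> q * 0 + \<gamma> * Iend) at_top"
      using Mlim Ilim by (intro tendsto_intros) auto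
    show "\<And>t. t \<ge> 0 \<Longrightarrow> ((\<lambda>t. x t $ 5) has_real_derivative f (x t) $ 5) (at t within {0..})" by (rule sol_deriv[OF sol])
    show "\<And>t. t \<ge> 0 \<Longrightarrow> f (x t) $ 5 = q * x t $ 4 + \<gamma> * x t $ 2 - \<mu> * x t $ 5" by (simp add: f_nth)
  qed (use pos in auto)
  show ?thesis unfolding E1_eq
    by (rule vec_lim5) (use Slim Ilim Clim Mlim Rlim Re_eq in auto)
qed

end


context sys begin

lemma MR_bounds:
  assumes sol: "is_solution f x" and x0: "x 0 \<in> Om"
    and e: "e2 \<ge> 0" "e3 \<ge> 0" "e4 \<ge> 0"
    and Cb: "\<And>t. t \<ge> 0 \<Longrightarrow> x t $ 3 \<le> e3" and Ib: "\<And>t. t \<ge> 0 \<Longrightarrow> \<bar>x t $ 2 - i\<bar> \<le> e2"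
    and M0: "x 0 $ 4 \<le> e4" and R0: "\<bar>x 0 $ 5 - \<gamma> * i / \<mu>\<bar> \<le> e4" and t: "t \<ge> 0"
  shows "x t $ 4 \<le> max e4 (m * e3 / (q + \<mu>))"
    and "\<bar>x t $ 5 - \<gamma> * i / \<mu>\<bar> \<le> max e4 ((q * max e4 (m * e3 / (q + \<mu>)) + \<gamma> * e2) / \<mu>)"
proof -
  have inOm: "x u \<in> Om" if "u \<ge> 0" for u using sol_in[OF sol x0 that] .
  define Mm where "Mm = max e4 (m * e3 / (q + \<mu>))"
  have Mb: "x u $ 4 \<le> Mm" if u: "u \<ge> 0" for u
  proof -
    have "x u $ 4 \<le> max (x 0 $ 4) (m * e3 / (q + \<mu>))"
    proof (rule lin_upper_max[of 0 "\<lambda>t. x t $ 4" "\<lambda>t. f (x t) $ 4" "q + \<mu>" "m * e3" u])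
      fix v :: real assume v: "v \<ge> 0"
      show "((\<lambda>t. x t $ 4) has_real_derivative f (x v) $ 4) (at v within {0..})" by (rule sol_deriv[OF sol v])
      have "m * x v $ 3 \<le> m * e3" using Cb[OF v] pos by (intro mult_left_mono) auto
      thus "f (x v) $ 4 \<le> m * e3 - (q + \<mu>) * x v $ 4" by (simp add: f_nth algebra_simps)
    qed (use u pos in auto)
    thus ?thesis using M0 unfolding Mm_def by auto
  qed
  thus "x t $ 4 \<le> max e4 (m * e3 / (q + \<mu>))" using t unfolding Mm_def by auto
  have Mm0: "Mm \<ge> 0" unfolding Mm_def using e by auto
  define r where "r = \<gamma> * i / \<mu>"
  have up: "x t $ 5 \<le> max (x 0 $ 5) ((q * Mm + \<gamma> * (i + e2)) / \<mu>)"
  proof (rule lin_upper_max[of 0 "\<lambda>t. x t $ 5" "\<lambda>t. f (x t) $ 5" "\<mu>" "q * Mm + \<gamma> * (i + e2)" t])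
    fix v :: real assume v: "v \<ge> 0"
    show "((\<lambda>t. x t $ 5) has_real_derivative f (x v) $ 5) (at v within {0..})" by (rule sol_deriv[OF sol v])
    have "q * x v $ 4 \<le> q * Mm" using Mb[OF v] pos by (intro mult_left_mono) auto
    moreover have "\<gamma> * x v $ 2 \<le> \<gamma> * (i + e2)" using Ib[OF v] pos by (intro mult_left_mono) (auto simp: abs_le_iff)
    ultimately show "f (x v) $ 5 \<le> q * Mm + \<gamma> * (i + e2) - \<mu> * x v $ 5" by (simp add: f_nth)
  qed (use t pos in auto)
  have lo: "x t $ 5 \<ge> min (x 0 $ 5) ((\<gamma> * (i - e2)) / \<mu>)"
  proof (rule lin_lower_min[of 0 "\<lambda>t. x t $ 5" "\<lambda>t. f (x t) $ 5" "\<mu>" "\<gamma> * (i - e2)" t])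
    fix v :: real assume v: "v \<ge> 0"
    show "((\<lambda>t. x t $ 5) has_real_derivative f (x v) $ 5) (at v within {0..})" by (rule sol_deriv[OF sol v])
    have "q * x v $ 4 \<ge> 0" using Om_bounds[OF inOm[OF v], of 4] pos by simp
    moreover have "\<gamma> * x v $ 2 \<ge> \<gamma> * (i - e2)" using Ib[OF v] pos by (intro mult_left_mono) (auto simp: abs_le_iff)
    ultimately show "f (x v) $ 5 \<ge> \<gamma> * (i - e2) - \<mu> * x v $ 5" by (simp add: f_nth)
  qed (use t pos in auto)
  have e1: "(q * Mm + \<gamma> * (i + e2)) / \<mu> - r = (q * Mm + \<gamma> * e2) / \<mu>"
    unfolding r_def using pos by (simp add: field_simps)
  have e2': "(\<gamma> * (i - e2)) / \<mu> - r = - (\<gamma> * e2 / \<mu>)"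
    unfolding r_def using pos by (simp add: field_simps)
  have g1: "\<gamma> * e2 / \<mu> \<le> (q * Mm + \<gamma> * e2) / \<mu>"
    using pos Mm0 by (intro divide_right_mono) auto
  have "x t $ 5 - r \<le> max (x 0 $ 5 - r) ((q * Mm + \<gamma> * e2) / \<mu>)" using up e1 by linarith
  moreover have "x t $ 5 - r \<ge> min (x 0 $ 5 - r) (- (\<gamma> * e2 / \<mu>))" using lo e2' by linarith
  ultimately have "\<bar>x t $ 5 - r\<bar> \<le> max \<bar>x 0 $ 5 - r\<bar> ((q * Mm + \<gamma> * e2) / \<mu>)"
    using g1 by (auto simp: abs_le_iff max_def min_def split: if_splits)
  thus "\<bar>x t $ 5 - \<gamma> * i / \<mu>\<bar> \<le> max e4 ((q * max e4 (m * e3 / (q + \<mu>)) + \<gamma> * e2) / \<mu>)"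
    using R0 unfolding r_def Mm_def by auto
qed

lemma comp_le_dist: "\<bar>u $ j - w $ j\<bar> \<le> dist u w"
  using component_le_norm_cart[of "u - w" j] by (simp add: dist_norm)

lemma stab_generic:
  assumes i: "i \<ge> 0"
    and H: "\<And>\<rho>. \<rho> > 0 \<Longrightarrow> \<exists>\<delta>>0. \<forall>x. is_solution f x \<and> x 0 \<in> Om \<and> dist (x 0) (mk5 s i 0 0 (\<gamma> * i / \<mu>)) < \<delta> \<longrightarrow>
        (\<forall>t\<ge>0. \<bar>x t $ 1 - s\<bar> < \<rho> \<and> \<bar>x t $ 2 - i\<bar> < \<rho> \<and> x t $ 3 < \<rho>)"
  shows "stable_in f Om (mk5 s i 0 0 (\<gamma> * i / \<mu>))"
  unfolding stable_in_def
proof (intro allI impI)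
  fix \<eta> :: real assume \<eta>: "\<eta> > 0"
  let ?E = "mk5 s i 0 0 (\<gamma> * i / \<mu>)"
  define \<tau> where "\<tau> = \<eta> / 5"
  define k1 where "k1 = 1 + m / (q + \<mu>)"
  define Kc where "Kc = k1 + (q * k1 + \<gamma>) / \<mu>"
  have k1: "k1 \<ge> 1" unfolding k1_def using pos by simp
  have Kc: "Kc > k1" unfolding Kc_def using pos k1 by (simp add: add_pos_pos)
  define \<rho> where "\<rho> = \<tau> / Kc"
  have \<tau>: "\<tau> > 0" using \<eta> by (simp add: \<tau>_def)
  have \<rho>: "\<rho> > 0" using \<tau> Kc k1 by (simp add: \<rho>_def)
  have \<rho>Kc: "\<rho> * Kc = \<tau>" using Kc k1 by (simp add: \<rho>_def)
  obtain \<delta> where \<delta>: "\<delta> > 0" "\<forall>x. is_solution f x \<and> x 0 \<in> Om \<and> dist (x 0) ?E < \<delta> \<longrightarrow>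
        (\<forall>t\<ge>0. \<bar>x t $ 1 - s\<bar> < \<rho> \<and> \<bar>x t $ 2 - i\<bar> < \<rho> \<and> x t $ 3 < \<rho>)"
    using H[OF \<rho>] by blast
  show "\<exists>\<delta>>0. \<forall>x. is_solution f x \<and> x 0 \<in> Om \<and> dist (x 0) ?E < \<delta> \<longrightarrow> (\<forall>t\<ge>0. dist (x t) ?E < \<eta>)"
  proof (intro exI[of _ "min \<delta> \<rho>"] conjI allI impI)
    show "min \<delta> \<rho> > 0" using \<delta> \<rho> by simp
    fix x t assume A: "is_solution f x \<and> x 0 \<in> Om \<and> dist (x 0) ?E < min \<delta> \<rho>" and t: "(t::real) \<ge> 0"
    have sol: "is_solution f x" and x0: "x 0 \<in> Om" using A by auto
    have bnd: "\<forall>t\<ge>0. \<bar>x t $ 1 - s\<bar> < \<rho> \<and> \<bar>x t $ 2 - i\<bar> < \<rho> \<and> x t $ 3 < \<rho>" using \<delta>(2) A by auto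
    have M0: "x 0 $ 4 \<le> \<rho>" using comp_le_dist[of "x 0" 4 ?E] A by auto
    have R0: "\<bar>x 0 $ 5 - \<gamma> * i / \<mu>\<bar> \<le> \<rho>" using comp_le_dist[of "x 0" 5 ?E] A by auto
    have MR: "x t $ 4 \<le> max \<rho> (m * \<rho> / (q + \<mu>))"
       "\<bar>x t $ 5 - \<gamma> * i / \<mu>\<bar> \<le> max \<rho> ((q * max \<rho> (m * \<rho> / (q + \<mu>)) + \<gamma> * \<rho>) / \<mu>)"
      using MR_bounds[OF sol x0, of \<rho> \<rho> \<rho> i, OF _ _ _ _ _ M0 R0 t] \<rho> bnd by (auto simp: less_imp_le)
    have Mm: "max \<rho> (m * \<rho> / (q + \<mu>)) \<le> \<rho> * k1"
      unfolding k1_def using \<rho> pos by (auto simp: field_simps)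
    have "\<rho> * k1 < \<tau>" using \<rho>Kc Kc \<rho> by (metis mult_strict_left_mono)
    hence Mlt: "x t $ 4 < \<tau>" using MR(1) Mm by linarith
    have "(q * max \<rho> (m * \<rho> / (q + \<mu>)) + \<gamma> * \<rho>) / \<mu> \<le> (q * (\<rho> * k1) + \<gamma> * \<rho>) / \<mu>"
      using Mm pos by (intro divide_right_mono add_right_mono mult_left_mono) auto
    also have "\<dots> = \<rho> * ((q * k1 + \<gamma>) / \<mu>)" by (simp add: algebra_simps)
    also have "\<dots> < \<tau>"
    proof -
      have "(q * k1 + \<gamma>) / \<mu> < Kc" unfolding Kc_def using k1 by simp
      thus ?thesis using \<rho>Kc \<rho> by (metis mult_strict_left_mono)
    qed
    finally have "(q * max \<rho> (m * \<rho> / (q + \<mu>)) + \<gamma> * \<rho>) / \<mu> < \<tau>" .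
    moreover have "\<rho> < \<tau>" using \<rho>Kc \<rho> Kc k1 by (metis less_le_trans mult_strict_left_mono mult.right_neutral le_less_trans[OF k1] order.strict_trans1)
    ultimately have Rlt: "\<bar>x t $ 5 - \<gamma> * i / \<mu>\<bar> < \<tau>" using MR(2) by linarith
    have inOm: "x t \<in> Om" by (rule sol_in[OF sol x0 t])
    have "dist (x t) ?E = norm (x t - ?E)" by (simp add: dist_norm)
    also have "\<dots> \<le> \<bar>(x t - ?E)$1\<bar> + \<bar>(x t - ?E)$2\<bar> + \<bar>(x t - ?E)$3\<bar> + \<bar>(x t - ?E)$4\<bar> + \<bar>(x t - ?E)$5\<bar>"
      by (rule norm5)
    also have "\<dots> < \<tau> + \<tau> + \<tau> + \<tau> + \<tau>"
      using bnd t Mlt Rlt \<open>\<rho> < \<tau>\<close> Om_bounds[OF inOm, of 3] Om_bounds[OF inOm, of 4] by auto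
    finally show "dist (x t) ?E < \<eta>" unfolding \<tau>_def by simp
  qed
qed

end


lemma VD0_identity:
  fixes S I C g A al ga mu c k :: real
  assumes "S \<noteq> 0" "al = mu * A"
  shows "(1 - A / S) * (al - c * S * I - mu * S) + (c * S * I - g * I - ga * I - mu * I) + (g * I - k * C)
    = - mu * (S - A)^2 / S + (c * A - ga - mu) * I - k * C"
  using assms(1) unfolding assms(2) by (simp add: field_simps power2_eq_square)

lemma sq_lt: fixes u r :: real assumes "u^2 < r^2" "r > 0" shows "\<bar>u\<bar> < r"
  using power2_less_imp_less[of "\<bar>u\<bar>" r] assms by simp

context sys begin

lemma H_E1:
  assumes R1: "RR > 1" and th: "\<theta> > 0" "\<theta> * (p - kk) \<le> p" "p * Iend \<le> \<theta> * kk * \<epsilon>" and \<rho>: "\<rho> > 0"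
  shows "\<exists>\<delta>>0. \<forall>x. is_solution f x \<and> x 0 \<in> Om \<and> dist (x 0) (mk5 Send Iend 0 0 (\<gamma> * Iend / \<mu>)) < \<delta> \<longrightarrow>
        (\<forall>t\<ge>0. \<bar>x t $ 1 - Send\<bar> < \<rho> \<and> \<bar>x t $ 2 - Iend\<bar> < \<rho> \<and> x t $ 3 < \<rho>)"
proof -
  let ?E = "mk5 Send Iend 0 0 (\<gamma> * Iend / \<mu>)"
  have Ip: "Iend > 0" by (rule Ie_pos[OF R1])
  have Sp: "Send > 0" by (rule Se_pos)
  define MS where "MS = max 1 (AA / Send)"
  define MI where "MI = max 1 (AA / Iend)"
  have MS: "MS \<ge> 1" "MI \<ge> 1" by (auto simp: MS_def MI_def)
  define KS where "KS = 2 * Send * MS"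
  define KI where "KI = 2 * Iend * MI"
  have K: "KS > 0" "KI > 0" using MS Sp Ip by (auto simp: KS_def KI_def)
  define \<omega> where "\<omega> = min (\<rho>^2 / KS) (min (\<rho>^2 / KI) (\<theta> * \<rho>))"
  have \<omega>: "\<omega> > 0" using \<rho> K th by (simp add: \<omega>_def)
  have contV: "continuous (at ?E) (V1 \<theta>)" unfolding V1_def by (intro continuous_intros) (use Sp Ip in auto)
  obtain \<delta>1 where \<delta>1: "\<delta>1 > 0" "\<forall>v. dist v ?E < \<delta>1 \<longrightarrow> dist (V1 \<theta> v) (V1 \<theta> ?E) < \<omega>"
    using contV \<omega> unfolding continuous_at_eps_delta by blast
  define \<delta> where "\<delta> = min \<delta>1 (min Send Iend)"
  have VE: "V1 \<theta> ?E = (Send - Send * ln Send) + (Iend - Iend * ln Iend)" by (simp add: V1_def)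
  show ?thesis
  proof (rule exI[of _ \<delta>], rule conjI)
    show "\<delta> > 0" using \<delta>1 Sp Ip by (simp add: \<delta>_def)
  next
    show "\<forall>x. is_solution f x \<and> x 0 \<in> Om \<and> dist (x 0) ?E < \<delta> \<longrightarrow>
        (\<forall>t\<ge>0. \<bar>x t $ 1 - Send\<bar> < \<rho> \<and> \<bar>x t $ 2 - Iend\<bar> < \<rho> \<and> x t $ 3 < \<rho>)"
    proof (intro allI impI)
    fix x t assume A: "is_solution f x \<and> x 0 \<in> Om \<and> dist (x 0) ?E < \<delta>" and t: "(t::real) \<ge> 0"
    have sol: "is_solution f x" and x0: "x 0 \<in> Om" using A by auto
    have S0: "x 0 $ 1 > 0" using comp_le_dist[of "x 0" 1 ?E] A by (auto simp: \<delta>_def abs_le_iff)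
    have I0: "x 0 $ 2 > 0" using comp_le_dist[of "x 0" 2 ?E] A by (auto simp: \<delta>_def abs_le_iff)
    have Spos: "x u $ 1 > 0" if "u \<ge> 0" for u
      using S_pos_all[OF sol x0 S0 that] S0 pos \<beta>S_pos by (smt (verit) divide_pos_pos)
    have Ipos: "x u $ 2 > 0" if "u \<ge> 0" for u using I_pos(2)[OF sol x0 I0 that] .
    have inOm: "x u \<in> Om" if "u \<ge> 0" for u using sol_in[OF sol x0 that] .
    have VDnp: "VD1 \<theta> (x u) \<le> 0" if "u \<ge> 0" for u
    proof -
      have "VD1 \<theta> (x u) \<le> -(\<mu> + c * Iend) * (x u $ 1 - Send)^2 / x u $ 1"
        by (rule VD1_le[OF inOm[OF that] Spos[OF that] Ipos[OF that] th])
      moreover have "(\<mu> + c * Iend) * (x u $ 1 - Send)^2 / x u $ 1 \<ge> 0"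
        using Spos[OF that] pos Ip by (intro divide_nonneg_pos mult_nonneg_nonneg) auto
      moreover have "-(\<mu> + c * Iend) * (x u $ 1 - Send)^2 / x u $ 1 = - ((\<mu> + c * Iend) * (x u $ 1 - Send)^2 / x u $ 1)"
        by (simp only: minus_divide_left mult_minus_left)
      ultimately show ?thesis by linarith
    qed
    have "(\<lambda>u. - V1 \<theta> (x u)) 0 \<le> (\<lambda>u. - V1 \<theta> (x u)) t"
    proof (rule mono_deriv[of 0 t _ "\<lambda>u. - VD1 \<theta> (x u)"])
      fix u assume "u \<in> {0..t}"
      hence u: "u \<ge> 0" by auto
      show "((\<lambda>u. - V1 \<theta> (x u)) has_real_derivative - VD1 \<theta> (x u)) (at u within {0..})"
        using V1_deriv[OF sol u Spos[OF u] Ipos[OF u]] by (auto intro!: derivative_eq_intros)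
    next
      fix u assume "0 < u" "u < t"
      thus "0 \<le> - VD1 \<theta> (x u)" using VDnp[of u] by auto
    qed (use t in auto)
    hence Vle: "V1 \<theta> (x t) \<le> V1 \<theta> (x 0)" by simp
    have "dist (x 0) ?E < \<delta>1" using A by (simp add: \<delta>_def)
    hence "V1 \<theta> (x 0) - V1 \<theta> ?E < \<omega>" using \<delta>1(2) by (auto simp: dist_real_def abs_less_iff)
    hence W: "V1 \<theta> (x t) - V1 \<theta> ?E < \<omega>" using Vle by linarith
    have St: "x t $ 1 \<le> AA" "x t $ 2 \<le> AA" using Om_bounds[OF inOm[OF t]] by auto
    have hS: "(x t $ 1 - Send)^2 / KS \<le> x t $ 1 - Send * ln (x t $ 1) - (Send - Send * ln Send)"
      unfolding KS_def MS_def by (rule hlog_quad) (use Spos[OF t] St Sp in auto)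
    have hI: "(x t $ 2 - Iend)^2 / KI \<le> x t $ 2 - Iend * ln (x t $ 2) - (Iend - Iend * ln Iend)"
      unfolding KI_def MI_def by (rule hlog_quad) (use Ipos[OF t] St Ip in auto)
    have p1: "(x t $ 1 - Send)^2 / KS \<ge> 0" "(x t $ 2 - Iend)^2 / KI \<ge> 0" using K by auto
    have p3: "\<theta> * x t $ 3 \<ge> 0" using th Om_bounds[OF inOm[OF t], of 3] by simp
    have sum: "V1 \<theta> (x t) - V1 \<theta> ?E = (x t $ 1 - Send * ln (x t $ 1) - (Send - Send * ln Send))
        + (x t $ 2 - Iend * ln (x t $ 2) - (Iend - Iend * ln Iend)) + \<theta> * x t $ 3"
      unfolding VE by (simp add: V1_def)
    have a1: "(x t $ 1 - Send)^2 / KS < \<rho>^2 / KS" using W hS hI p1 p3 unfolding sum \<omega>_def by linarith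
    have a2: "(x t $ 2 - Iend)^2 / KI < \<rho>^2 / KI" using W hS hI p1 p3 unfolding sum \<omega>_def by linarith
    have a3: "\<theta> * x t $ 3 < \<theta> * \<rho>" using W hS hI p1 p3 unfolding sum \<omega>_def by linarith
    have "(x t $ 1 - Send)^2 < \<rho>^2" using a1 K by (simp add: divide_strict_right_mono_neg divide_less_cancel)
    hence b1: "\<bar>x t $ 1 - Send\<bar> < \<rho>" using \<rho> by (rule sq_lt)
    have "(x t $ 2 - Iend)^2 < \<rho>^2" using a2 K by (simp add: divide_less_cancel)
    hence b2: "\<bar>x t $ 2 - Iend\<bar> < \<rho>" using \<rho> by (rule sq_lt)
    have b3: "x t $ 3 < \<rho>" using a3 th by simp
    from b1 b2 b3 show "\<bar>x t $ 1 - Send\<bar> < \<rho> \<and> \<bar>x t $ 2 - Iend\<bar> < \<rho> \<and> x t $ 3 < \<rho>" by blast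
    qed
  qed
qed

lemma stable_E1:
  assumes R1: "RR > 1" and th: "\<theta> > 0" "\<theta> * (p - kk) \<le> p" "p * Iend \<le> \<theta> * kk * \<epsilon>"
  shows "stable_in f Om (E1 \<alpha> c \<mu> \<gamma>)"
proof -
  have "stable_in f Om (mk5 Send Iend 0 0 (\<gamma> * Iend / \<mu>))"
    by (rule stab_generic) (use Ie_pos[OF R1] H_E1[OF R1 th] in auto)
  thus ?thesis by (simp add: E1_eq Re_eq)
qed

definition V0 :: "real^5 \<Rightarrow> real" where "V0 v = (v$1 - AA * ln (v$1)) + v$2 + v$3"
definition VD0 :: "real^5 \<Rightarrow> real" where "VD0 v = (1 - AA / v$1) * (f v $ 1) + f v $ 2 + f v $ 3"

lemma V0_deriv:
  assumes sol: "is_solution f x" and t: "t \<ge> 0" and S: "x t $ 1 > 0"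
  shows "((\<lambda>t. V0 (x t)) has_real_derivative VD0 (x t)) (at t within {0..})"
proof -
  define S where "S t = x t $ 1" for t
  define II where "II t = x t $ 2" for t
  define C where "C t = x t $ 3" for t
  have dS: "(S has_real_derivative f (x t) $ 1) (at t within {0..})" unfolding S_def by (rule sol_deriv[OF sol t])
  have dI: "(II has_real_derivative f (x t) $ 2) (at t within {0..})" unfolding II_def by (rule sol_deriv[OF sol t])
  have dC: "(C has_real_derivative f (x t) $ 3) (at t within {0..})" unfolding C_def by (rule sol_deriv[OF sol t])
  have e: "(\<lambda>t. V0 (x t)) = (\<lambda>t. (S t - AA * ln (S t)) + II t + C t)"
    by (simp add: V0_def S_def II_def C_def)
  have "((\<lambda>t. (S t - AA * ln (S t)) + II t + C t) has_real_derivative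
     (f (x t) $ 1 - AA * (f (x t) $ 1 / S t)) + f (x t) $ 2 + f (x t) $ 3) (at t within {0..})"
    using S unfolding S_def[symmetric]
    by (auto intro!: derivative_eq_intros dS dI dC simp: divide_inverse)
  moreover have "(f (x t) $ 1 - AA * (f (x t) $ 1 / S t)) + f (x t) $ 2 + f (x t) $ 3 = VD0 (x t)"
    unfolding VD0_def S_def using S by (simp add: algebra_simps)
  ultimately show ?thesis unfolding e by simp
qed

lemma RR_le: "RR \<le> 1 \<Longrightarrow> c * AA - \<gamma> - \<mu> \<le> 0"
proof -
  assume "RR \<le> 1"
  hence "c * \<alpha> / (\<mu> * (\<mu> + \<gamma>)) \<le> 1" by (simp add: RR_def R0_def)
  hence "c * \<alpha> \<le> \<mu> * (\<mu> + \<gamma>)" using pos by (simp add: divide_le_eq)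
  hence "c * \<alpha> / \<mu> \<le> \<mu> + \<gamma>" using pos by (simp add: divide_le_eq mult.commute)
  thus ?thesis by simp
qed

lemma VD0_le:
  assumes v: "v \<in> Om" and S: "v$1 > 0" and R: "RR \<le> 1"
  shows "VD0 v \<le> - \<mu> * (v$1 - AA)^2 / v$1 - kk * v$3"
proof -
  define D where "D = \<epsilon> + v$2 + a * v$4"
  define g where "g = p * v$3 / D"
  have f1: "f v $ 1 = \<alpha> - c * v$1 * v$2 - \<mu> * v$1" by (simp add: f_nth)
  have f2: "f v $ 2 = c * v$1 * v$2 - g * v$2 - \<gamma> * v$2 - \<mu> * v$2" by (simp add: f_nth g_def D_def)
  have f3: "f v $ 3 = g * v$2 - kk * v$3" by (simp add: f_nth g_def D_def kk_def algebra_simps)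
  have "VD0 v = - \<mu> * (v$1 - AA)^2 / v$1 + (c * AA - \<gamma> - \<mu>) * v$2 - kk * v$3"
    unfolding VD0_def f1 f2 f3 by (rule VD0_identity) (use S pos in auto)
  moreover have "(c * AA - \<gamma> - \<mu>) * v$2 \<le> 0" using RR_le[OF R] Om_bounds[OF v, of 2]
    by (intro mult_nonpos_nonneg) auto
  ultimately show ?thesis by linarith
qed

lemma VD0_le2:
  assumes v: "v \<in> Om" and S: "v$1 > 0" and R: "RR \<le> 1"
  shows "\<mu> * (v$1 - AA)^2 / v$1 + kk * v$3 \<le> - VD0 v"
proof -
  have "- \<mu> * (v$1 - AA)^2 / v$1 = - (\<mu> * (v$1 - AA)^2 / v$1)" by (simp only: minus_divide_left mult_minus_left)
  thus ?thesis using VD0_le[OF assms] by linarith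
qed

lemma kk_pos: "kk > 0" unfolding kk_def using pos by simp

end


context sys begin

theorem conv_E0:
  assumes R: "RR \<le> 1" and sol: "is_solution f x" and x0: "x 0 \<in> Om"
  shows "(x \<longlongrightarrow> E0 \<alpha> \<mu>) at_top"
proof -
  have inOm: "x t \<in> Om" if "t \<ge> 0" for t using sol_in[OF sol x0 that] .
  have Sge: "x t $ 1 \<ge> smin" if "t \<ge> 1" for t using S_ge_smin[OF sol x0 that] .
  have Spos: "x t $ 1 > 0" if "t \<ge> 1" for t using Sge[OF that] smin_pos by linarith
  define V where "V t = V0 (x t)" for t
  have Vd: "(V has_real_derivative VD0 (x t)) (at t within {0..})" if "t \<ge> 1" for t
    unfolding V_def using V0_deriv[OF sol _ Spos[OF that]] that by auto
  have VDle2: "\<mu> * (x t $ 1 - AA)^2 / x t $ 1 + kk * x t $ 3 \<le> - VD0 (x t)" if "t \<ge> 1" for t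
    using VD0_le2[OF inOm Spos R] that by auto
  have nn1: "\<mu> * (x t $ 1 - AA)^2 / x t $ 1 \<ge> 0" if "t \<ge> 1" for t using Spos[OF that] pos by simp
  have nn2: "kk * x t $ 3 \<ge> 0" if "t \<ge> 1" for t using kk_pos Om_bounds[OF inOm, of t 3] that by simp
  have VDnp: "VD0 (x t) \<le> 0" if "t \<ge> 1" for t using VDle2[OF that] nn1[OF that] nn2[OF that] by linarith
  have Vmono: "V t \<le> V s" if "1 \<le> s" "s \<le> t" for s t
  proof -
    have "(\<lambda>u. - V u) s \<le> (\<lambda>u. - V u) t"
    proof (rule mono_deriv[of s t _ "\<lambda>u. - VD0 (x u)"])
      fix u assume "u \<in> {s..t}"
      hence "u \<ge> 1" using that by auto
      thus "((\<lambda>u. - V u) has_real_derivative - VD0 (x u)) (at u within {0..})"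
        using Vd by (auto intro!: derivative_eq_intros)
    next
      fix u assume "s < u" "u < t"
      thus "0 \<le> - VD0 (x u)" using VDnp[of u] that by auto
    qed (use that in auto)
    thus ?thesis by simp
  qed
  have Vlb: "V t \<ge> AA - AA * ln AA" if "t \<ge> 1" for t
  proof -
    have "x t $ 1 - AA * ln (x t $ 1) \<ge> AA - AA * ln AA" by (rule hlog_nonneg) (use Spos[OF that] AA_pos in auto)
    moreover have "x t $ 2 \<ge> 0" "x t $ 3 \<ge> 0" using Om_bounds[OF inOm] that by auto
    ultimately show ?thesis unfolding V_def V0_def by linarith
  qed
  obtain lV where lV: "(V \<longlongrightarrow> lV) at_top" using antimono_conv[of 1 V "AA - AA * ln AA"] Vmono Vlb by blast
  define K where "K = {v. v \<in> Om \<and> smin \<le> v$1 \<and> 0 \<le> v$2}"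
  have cK: "compact K" unfolding K_def by (rule compact_K)
  have inK: "x t \<in> K" if "t \<ge> 1" for t using inOm Sge Om_bounds[OF inOm] that by (auto simp: K_def)
  have Kne: "v$1 \<noteq> 0" "\<epsilon> + v$2 + a * v$4 \<noteq> 0" if "v \<in> K" for v
  proof -
    have "v$1 \<ge> smin" "v \<in> Om" using that by (auto simp: K_def)
    thus "v$1 \<noteq> 0" "\<epsilon> + v$2 + a * v$4 \<noteq> 0" using smin_pos D_ge[of v] pos by auto
  qed
  have contVD: "continuous_on K VD0"
    unfolding VD0_def f_nth by (intro continuous_intros) (auto simp: Kne)
  have ucVD: "uniformly_continuous_on {1..} (\<lambda>t. VD0 (x t))"
    by (rule uc_comp[OF sol x0 cK contVD inK]) auto
  have VD0: "((\<lambda>t. VD0 (x t)) \<longlongrightarrow> 0) at_top"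
    by (rule deriv_to_zero[of 1 V "\<lambda>t. VD0 (x t)" lV]) (use Vd lV ucVD in auto)
  have mVD: "((\<lambda>t. - VD0 (x t)) \<longlongrightarrow> 0) at_top" using tendsto_minus[OF VD0] by simp
  have sq: "((\<lambda>t. (x t $ 1 - AA)^2) \<longlongrightarrow> 0) at_top"
  proof (rule tendsto_sandwich[of "\<lambda>t. 0" _ _ "\<lambda>t. AA / \<mu> * (- VD0 (x t))"])
    show "eventually (\<lambda>t. 0 \<le> (x t $ 1 - AA)^2) at_top" by simp
    have "(x t $ 1 - AA)^2 \<le> AA / \<mu> * (- VD0 (x t))" if t: "t \<ge> 1" for t
    proof -
      define Q where "Q = \<mu> * (x t $ 1 - AA)^2"
      have Q0: "Q \<ge> 0" using pos by (simp add: Q_def)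
      have "Q / AA \<le> Q / x t $ 1"
        using Q0 Spos[OF t] Om_bounds[OF inOm, of t 1] t by (intro divide_left_mono) (use pos in auto)
      also have "\<dots> \<le> - VD0 (x t)" using VDle2[OF t] nn2[OF t] unfolding Q_def by simp
      finally have qa: "Q / AA \<le> - VD0 (x t)" .
      have "Q \<le> AA * (- VD0 (x t))" using qa AA_pos by (metis mult.commute pos_divide_le_eq)
      hence "(x t $ 1 - AA)^2 \<le> (AA * (- VD0 (x t))) / \<mu>"
        unfolding Q_def using pos by (metis mult.commute pos_le_divide_eq)
      thus ?thesis by (metis times_divide_eq_left)
    qed
    thus "eventually (\<lambda>t. (x t $ 1 - AA)^2 \<le> AA / \<mu> * (- VD0 (x t))) at_top"
      unfolding eventually_at_top_linorder by blast
    show "((\<lambda>t. 0) \<longlongrightarrow> 0) at_top" by simp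
    show "((\<lambda>t. AA / \<mu> * (- VD0 (x t))) \<longlongrightarrow> 0) at_top"
      using tendsto_mult_right_zero[OF mVD, of "AA / \<mu>"] by simp
  qed
  have Slim: "((\<lambda>t. x t $ 1) \<longlongrightarrow> AA) at_top" by (rule sq_to[OF sq])
  have Clim: "((\<lambda>t. x t $ 3) \<longlongrightarrow> 0) at_top"
  proof (rule tendsto_sandwich[of "\<lambda>t. 0" _ _ "\<lambda>t. (- VD0 (x t)) / kk"])
    show "eventually (\<lambda>t. 0 \<le> x t $ 3) at_top"
      unfolding eventually_at_top_linorder using Om_bounds[OF inOm] by (intro exI[of _ 0]) auto
    have "x t $ 3 \<le> (- VD0 (x t)) / kk" if t: "t \<ge> 1" for t
    proof -
      have "kk * x t $ 3 \<le> - VD0 (x t)" using VDle2[OF t] nn1[OF t] by linarith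
      thus ?thesis using kk_pos by (metis mult.commute pos_le_divide_eq)
    qed
    thus "eventually (\<lambda>t. x t $ 3 \<le> (- VD0 (x t)) / kk) at_top"
      unfolding eventually_at_top_linorder by blast
    show "((\<lambda>t. 0) \<longlongrightarrow> 0) at_top" by simp
    show "((\<lambda>t. (- VD0 (x t)) / kk) \<longlongrightarrow> 0) at_top" using tendsto_divide[OF mVD tendsto_const[of kk]] kk_pos by simp
  qed
  have contf1: "continuous_on K (\<lambda>v. f v $ 1)" unfolding f_nth by (intro continuous_intros)
  have Sd0: "((\<lambda>t. f (x t) $ 1) \<longlongrightarrow> 0) at_top"
    by (rule deriv_to_zero[of 1 "\<lambda>t. x t $ 1" _ AA]) (use sol_deriv[OF sol] Slim uc_comp[OF sol x0 cK contf1 inK] in auto)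
  have Ieq: "eventually (\<lambda>t. (\<alpha> - \<mu> * x t $ 1 - f (x t) $ 1) / (c * x t $ 1) = x t $ 2) at_top"
  proof -
    have "(\<alpha> - \<mu> * x t $ 1 - f (x t) $ 1) / (c * x t $ 1) = x t $ 2" if t: "t \<ge> 1" for t
      using Spos[OF t] pos by (simp add: f_nth field_simps)
    thus ?thesis unfolding eventually_at_top_linorder by blast
  qed
  have Ilim: "((\<lambda>t. x t $ 2) \<longlongrightarrow> 0) at_top"
  proof -
    have "((\<lambda>t. (\<alpha> - \<mu> * x t $ 1 - f (x t) $ 1) / (c * x t $ 1)) \<longlongrightarrow> (\<alpha> - \<mu> * AA - 0) / (c * AA)) at_top"
      by (intro tendsto_intros Slim Sd0) (use pos AA_pos in auto)
    moreover have "(\<alpha> - \<mu> * AA - 0) / (c * AA) = 0" using pos by simp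
    ultimately show ?thesis using Ieq by (auto intro: Lim_transform_eventually)
  qed
  have Mlim: "((\<lambda>t. x t $ 4) \<longlongrightarrow> 0 / (q + \<mu>)) at_top"
  proof (rule lin_limit[of 0 _ "\<lambda>t. f (x t) $ 4" "q + \<mu>" "\<lambda>t. m * x t $ 3"])
    show "((\<lambda>t. m * x t $ 3) \<longlongrightarrow> 0) at_top" using tendsto_mult_right_zero[OF Clim] by simp
    show "\<And>t. t \<ge> 0 \<Longrightarrow> ((\<lambda>t. x t $ 4) has_real_derivative f (x t) $ 4) (at t within {0..})" by (rule sol_deriv[OF sol])
    show "\<And>t. t \<ge> 0 \<Longrightarrow> f (x t) $ 4 = m * x t $ 3 - (q + \<mu>) * x t $ 4" by (simp add: f_nth algebra_simps)
  qed (use pos in auto)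
  have Rlim: "((\<lambda>t. x t $ 5) \<longlongrightarrow> (q * 0 + \<gamma> * 0) / \<mu>) at_top"
  proof (rule lin_limit[of 0 _ "\<lambda>t. f (x t) $ 5" "\<mu>" "\<lambda>t. q * x t $ 4 + \<gamma> * x t $ 2"])
    show "((\<lambda>t. q * x t $ 4 + \<gamma> * x t $ 2) \<longlongrightarrow> q * 0 + \<gamma> * 0) at_top"
      using Mlim Ilim by (intro tendsto_intros) auto
    show "\<And>t. t \<ge> 0 \<Longrightarrow> ((\<lambda>t. x t $ 5) has_real_derivative f (x t) $ 5) (at t within {0..})" by (rule sol_deriv[OF sol])
    show "\<And>t. t \<ge> 0 \<Longrightarrow> f (x t) $ 5 = q * x t $ 4 + \<gamma> * x t $ 2 - \<mu> * x t $ 5" by (simp add: f_nth)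
  qed (use pos in auto)
  show ?thesis unfolding E0_def
    by (rule vec_lim5) (use Slim Ilim Clim Mlim Rlim in auto)
qed

lemma H_E0:
  assumes R: "RR \<le> 1" and \<rho>: "\<rho> > 0"
  shows "\<exists>\<delta>>0. \<forall>x. is_solution f x \<and> x 0 \<in> Om \<and> dist (x 0) (mk5 AA 0 0 0 (\<gamma> * 0 / \<mu>)) < \<delta> \<longrightarrow>
        (\<forall>t\<ge>0. \<bar>x t $ 1 - AA\<bar> < \<rho> \<and> \<bar>x t $ 2 - 0\<bar> < \<rho> \<and> x t $ 3 < \<rho>)"
proof -
  let ?E = "mk5 AA 0 0 0 (\<gamma> * 0 / \<mu>)"
  define KS where "KS = 2 * AA * max 1 (AA / AA)"
  have K: "KS > 0" using AA_pos by (simp add: KS_def)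
  define \<omega> where "\<omega> = min (\<rho>^2 / KS) \<rho>"
  have \<omega>: "\<omega> > 0" using \<rho> K by (simp add: \<omega>_def)
  have contV: "continuous (at ?E) V0" unfolding V0_def by (intro continuous_intros) (use AA_pos in auto)
  obtain \<delta>1 where \<delta>1: "\<delta>1 > 0" "\<forall>v. dist v ?E < \<delta>1 \<longrightarrow> dist (V0 v) (V0 ?E) < \<omega>"
    using contV \<omega> unfolding continuous_at_eps_delta by blast
  define \<delta> where "\<delta> = min \<delta>1 AA"
  have VE: "V0 ?E = AA - AA * ln AA" by (simp add: V0_def)
  show ?thesis
  proof (rule exI[of _ \<delta>], rule conjI)
    show "\<delta> > 0" using \<delta>1 AA_pos by (simp add: \<delta>_def)
  next
    show "\<forall>x. is_solution f x \<and> x 0 \<in> Om \<and> dist (x 0) ?E < \<delta> \<longrightarrow>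
        (\<forall>t\<ge>0. \<bar>x t $ 1 - AA\<bar> < \<rho> \<and> \<bar>x t $ 2 - 0\<bar> < \<rho> \<and> x t $ 3 < \<rho>)"
    proof (intro allI impI)
    fix x t assume A: "is_solution f x \<and> x 0 \<in> Om \<and> dist (x 0) ?E < \<delta>" and t: "(t::real) \<ge> 0"
    have sol: "is_solution f x" and x0: "x 0 \<in> Om" using A by auto
    have S0: "x 0 $ 1 > 0" using comp_le_dist[of "x 0" 1 ?E] A by (auto simp: \<delta>_def abs_le_iff)
    have Spos: "x u $ 1 > 0" if "u \<ge> 0" for u
      using S_pos_all[OF sol x0 S0 that] S0 pos \<beta>S_pos by (smt (verit) divide_pos_pos)
    have inOm: "x u \<in> Om" if "u \<ge> 0" for u using sol_in[OF sol x0 that] .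
    have VDnp: "VD0 (x u) \<le> 0" if "u \<ge> 0" for u
    proof -
      have "\<mu> * (x u $ 1 - AA)^2 / x u $ 1 + kk * x u $ 3 \<le> - VD0 (x u)"
        by (rule VD0_le2[OF inOm[OF that] Spos[OF that] R])
      moreover have "\<mu> * (x u $ 1 - AA)^2 / x u $ 1 \<ge> 0" using Spos[OF that] pos by simp
      moreover have "kk * x u $ 3 \<ge> 0" using kk_pos Om_bounds[OF inOm[OF that], of 3] by simp
      ultimately show ?thesis by linarith
    qed
    have "(\<lambda>u. - V0 (x u)) 0 \<le> (\<lambda>u. - V0 (x u)) t"
    proof (rule mono_deriv[of 0 t _ "\<lambda>u. - VD0 (x u)"])
      fix u assume "u \<in> {0..t}"
      hence u: "u \<ge> 0" by auto
      show "((\<lambda>u. - V0 (x u)) has_real_derivative - VD0 (x u)) (at u within {0..})"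
        using V0_deriv[OF sol u Spos[OF u]] by (auto intro!: derivative_eq_intros)
    next
      fix u assume "0 < u" "u < t"
      thus "0 \<le> - VD0 (x u)" using VDnp[of u] by auto
    qed (use t in auto)
    hence Vle: "V0 (x t) \<le> V0 (x 0)" by simp
    have "dist (x 0) ?E < \<delta>1" using A by (simp add: \<delta>_def)
    hence "V0 (x 0) - V0 ?E < \<omega>" using \<delta>1(2) by (auto simp: dist_real_def abs_less_iff)
    hence W: "V0 (x t) - V0 ?E < \<omega>" using Vle by linarith
    have St: "x t $ 1 \<le> AA" using Om_bounds[OF inOm[OF t]] by auto
    have hS: "(x t $ 1 - AA)^2 / KS \<le> x t $ 1 - AA * ln (x t $ 1) - (AA - AA * ln AA)"
      unfolding KS_def by (rule hlog_quad) (use Spos[OF t] St AA_pos in auto)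
    have p1: "(x t $ 1 - AA)^2 / KS \<ge> 0" using K by auto
    have p2: "x t $ 2 \<ge> 0" "x t $ 3 \<ge> 0" using Om_bounds[OF inOm[OF t]] by auto
    have sum: "V0 (x t) - V0 ?E = (x t $ 1 - AA * ln (x t $ 1) - (AA - AA * ln AA)) + x t $ 2 + x t $ 3"
      unfolding VE by (simp add: V0_def)
    have a1: "(x t $ 1 - AA)^2 / KS < \<rho>^2 / KS" using W hS p1 p2 unfolding sum \<omega>_def by linarith
    have a2: "x t $ 2 < \<rho>" "x t $ 3 < \<rho>" using W hS p1 p2 unfolding sum \<omega>_def by linarith+
    have "(x t $ 1 - AA)^2 < \<rho>^2" using a1 K by (simp add: divide_less_cancel)
    hence b1: "\<bar>x t $ 1 - AA\<bar> < \<rho>" using \<rho> by (rule sq_lt)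
    from b1 a2 p2 show "\<bar>x t $ 1 - AA\<bar> < \<rho> \<and> \<bar>x t $ 2 - 0\<bar> < \<rho> \<and> x t $ 3 < \<rho>" by auto
    qed
  qed
qed

lemma stable_E0:
  assumes R: "RR \<le> 1"
  shows "stable_in f Om (E0 \<alpha> \<mu>)"
proof -
  have "stable_in f Om (mk5 AA 0 0 0 (\<gamma> * 0 / \<mu>))"
    by (rule stab_generic) (use H_E0[OF R] in auto)
  thus ?thesis by (simp add: E0_def)
qed

end


lemma grow_unbounded:
  fixes y y' :: "real \<Rightarrow> real"
  assumes d: "\<And>t. t \<ge> 0 \<Longrightarrow> (y has_real_derivative y' t) (at t within {0..})"
    and g: "\<And>t. t \<ge> 0 \<Longrightarrow> y' t \<ge> \<kappa> * y t" and \<kappa>: "\<kappa> > 0" and y0: "y 0 > 0"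
  shows "\<exists>t\<ge>0. y t > B"
proof -
  define t where "t = \<bar>B\<bar> / (y 0 * \<kappa>)"
  have t0: "t \<ge> 0" unfolding t_def using \<kappa> y0 by simp
  have "y t \<ge> y 0 * exp (\<kappa> * (t - 0))" by (rule exp_growth[of 0 y y']) (use d g t0 in auto)
  moreover have "exp (\<kappa> * t) \<ge> 1 + \<kappa> * t" by (rule exp_ge_add_one_self)
  hence "y 0 * exp (\<kappa> * t) \<ge> y 0 * (1 + \<kappa> * t)" using y0 by (intro mult_left_mono) auto
  moreover have "y 0 * (1 + \<kappa> * t) = y 0 + \<bar>B\<bar>" unfolding t_def using y0 \<kappa> by (simp add: field_simps)
  ultimately have "y t \<ge> y 0 + \<bar>B\<bar>" by simp
  thus ?thesis using t0 y0 by (intro exI[of _ t]) auto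
qed

lemma lem_half: "w \<noteq> 0 \<Longrightarrow> a / (2 * w) * w = a / (2::real)" by (simp add: field_simps)
lemma lemRR: fixes g c mu al :: real assumes "c \<noteq> 0" "mu \<noteq> 0" "g \<noteq> 0"
  shows "g * (c * al / (mu * g)) / c = al / mu" using assms by (simp add: field_simps)

context sys begin

lemma dist_mk5_le:
  "dist (mk5 s1 s2 s3 s4 s5) (mk5 u1 u2 u3 u4 u5) \<le> \<bar>s1 - u1\<bar> + \<bar>s2 - u2\<bar> + \<bar>s3 - u3\<bar> + \<bar>s4 - u4\<bar> + \<bar>s5 - u5\<bar>"
  using norm5[of "mk5 s1 s2 s3 s4 s5 - mk5 u1 u2 u3 u4 u5"] by (simp add: dist_norm)

theorem unstable_E0:
  assumes R: "RR > 1"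
  shows "unstable_in f Om (E0 \<alpha> \<mu>)"
  unfolding unstable_in_def
proof
  assume st: "stable_in f Om (E0 \<alpha> \<mu>)"
  define \<kappa>0 where "\<kappa>0 = c * AA - \<gamma> - \<mu>"
  have \<kappa>0: "\<kappa>0 > 0"
  proof -
    have "c * \<alpha> / (\<mu> * (\<mu> + \<gamma>)) > 1" using R by (simp add: RR_def R0_def)
    hence "c * \<alpha> > \<mu> * (\<mu> + \<gamma>)" using pos by (simp add: less_divide_eq)
    hence "c * \<alpha> / \<mu> > \<mu> + \<gamma>" using pos by (simp add: less_divide_eq mult.commute)
    thus ?thesis unfolding \<kappa>0_def by simp
  qed
  define e0 where "e0 = min (AA/2) (\<kappa>0 / (2 * (c + p / \<epsilon>)))"
  have cp: "c + p / \<epsilon> > 0" using pos by (simp add: add_pos_pos)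
  have e0: "e0 > 0" using AA_pos \<kappa>0 cp by (simp add: e0_def)
  have e0b: "e0 * (c + p / \<epsilon>) \<le> \<kappa>0 / 2"
  proof -
    have "e0 \<le> \<kappa>0 / (2 * (c + p / \<epsilon>))" by (simp add: e0_def)
    hence "e0 * (c + p / \<epsilon>) \<le> \<kappa>0 / (2 * (c + p / \<epsilon>)) * (c + p / \<epsilon>)" using cp by (intro mult_right_mono) auto
    also have "\<dots> = \<kappa>0 / 2" using cp by (intro lem_half) auto
    finally show ?thesis .
  qed
  obtain \<delta> where \<delta>: "\<delta> > 0" "\<forall>x. is_solution f x \<and> x 0 \<in> Om \<and> dist (x 0) (E0 \<alpha> \<mu>) < \<delta> \<longrightarrow> (\<forall>t\<ge>0. dist (x t) (E0 \<alpha> \<mu>) < e0)"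
    using st e0 unfolding stable_in_def by blast
  define \<delta>' where "\<delta>' = min (\<delta>/3) (AA/2)"
  have \<delta>': "\<delta>' > 0" "\<delta>' \<le> \<delta>/3" "\<delta>' \<le> AA/2" using \<delta> AA_pos by (auto simp: \<delta>'_def)
  define x0 where "x0 = mk5 (AA - \<delta>') \<delta>' 0 0 0"
  have x0Om: "x0 \<in> Om" unfolding x0_def Om_iff using \<delta>' by simp
  obtain x where sol: "is_solution f x" and xx0: "x 0 = x0" using exists_sol[OF x0Om] by blast
  have x0': "x 0 \<in> Om" using xx0 x0Om by simp
  have "dist (x 0) (E0 \<alpha> \<mu>) \<le> \<bar>(AA - \<delta>') - AA\<bar> + \<bar>\<delta>' - 0\<bar> + \<bar>0 - 0\<bar> + \<bar>0 - 0\<bar> + \<bar>0 - 0\<bar>"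
    unfolding xx0 x0_def E0_def by (rule dist_mk5_le)
  also have "\<dots> = 2 * \<delta>'" using \<delta>' by simp
  also have "\<dots> < \<delta>" using \<delta>' \<delta> by simp
  finally have near: "dist (x 0) (E0 \<alpha> \<mu>) < \<delta>" .
  have bnd: "dist (x t) (E0 \<alpha> \<mu>) < e0" if "t \<ge> 0" for t using \<delta>(2) sol x0' near that by blast
  have inOm: "x t \<in> Om" if "t \<ge> 0" for t using sol_in[OF sol x0' that] .
  have I0: "x 0 $ 2 > 0" using xx0 \<delta>' by (simp add: x0_def)
  obtain t where t: "t \<ge> 0" "x t $ 2 > e0"
  proof -
    have "\<exists>t\<ge>0. x t $ 2 > e0"
    proof (rule grow_unbounded[of "\<lambda>t. x t $ 2" "\<lambda>t. f (x t) $ 2" "\<kappa>0 / 2"])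
      fix u :: real assume u: "u \<ge> 0"
      show "((\<lambda>t. x t $ 2) has_real_derivative f (x u) $ 2) (at u within {0..})" by (rule sol_deriv[OF sol u])
      have v: "x u \<in> Om" by (rule inOm[OF u])
      have S: "x u $ 1 \<ge> AA - e0" using comp_le_dist[of "x u" 1 "E0 \<alpha> \<mu>"] bnd[OF u] by (auto simp: E0_def abs_le_iff)
      have C: "x u $ 3 \<le> e0" using comp_le_dist[of "x u" 3 "E0 \<alpha> \<mu>"] bnd[OF u] by (auto simp: E0_def abs_le_iff)
      let ?D = "\<epsilon> + x u $ 2 + a * x u $ 4"
      have D: "?D \<ge> \<epsilon>" by (rule D_ge[OF v])
      have "x u $ 3 / ?D \<le> e0 / \<epsilon>" using C D pos Om_bounds[OF v, of 3] by (intro frac_le) auto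
      hence g: "p * x u $ 3 / ?D \<le> p * e0 / \<epsilon>" using pos
        by (metis mult_left_mono less_imp_le times_divide_eq_right)
      have "c * x u $ 1 \<ge> c * (AA - e0)" using S pos by (intro mult_left_mono) auto
      moreover have "c * (AA - e0) = c * AA - c * e0" by (simp add: algebra_simps)
      moreover have "p * e0 / \<epsilon> = e0 * (p / \<epsilon>)" by simp
      moreover have "e0 * (c + p / \<epsilon>) = c * e0 + e0 * (p / \<epsilon>)" by (simp add: algebra_simps)
      moreover note \<kappa>0_def
      ultimately have h: "c * x u $ 1 - p * x u $ 3 / ?D - \<gamma> - \<mu> \<ge> \<kappa>0 / 2"
        using g e0b by linarith
      have "f (x u) $ 2 = x u $ 2 * (c * x u $ 1 - p * x u $ 3 / ?D - \<gamma> - \<mu>)" by (simp add: f_nth algebra_simps)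
      also have "\<dots> \<ge> x u $ 2 * (\<kappa>0 / 2)" using h Om_bounds[OF v, of 2] by (intro mult_left_mono) auto
      finally show "f (x u) $ 2 \<ge> \<kappa>0 / 2 * x u $ 2" by (simp add: mult.commute)
    qed (use \<kappa>0 I0 in auto)
    thus ?thesis using that by blast
  qed
  have "x t $ 2 \<le> dist (x t) (E0 \<alpha> \<mu>)" using comp_le_dist[of "x t" 2 "E0 \<alpha> \<mu>"] by (simp add: E0_def)
  thus False using bnd[OF t(1)] t(2) by simp
qed

lemma sum_E1: "Send + Iend + Rend = AA"
proof -
  have h: "\<mu> + \<gamma> \<noteq> 0" "c \<noteq> 0" "\<mu> \<noteq> 0" using pos by auto
  have "Send + Iend + Rend = (\<mu> + \<gamma>) * RR / c" unfolding Send_def Iend_def Rend_def using h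
    by (simp add: field_simps)
  also have "\<dots> = AA" unfolding RR_def R0_def by (rule lemRR[OF h(2) h(3) h(1)])
  finally show ?thesis .
qed

theorem unstable_E1:
  assumes pk: "p > kk" and Ith: "Iend > \<epsilon> * kk / (p - kk)"
  shows "unstable_in f Om (E1 \<alpha> c \<mu> \<gamma>)"
  unfolding unstable_in_def
proof
  assume st: "stable_in f Om (E1 \<alpha> c \<mu> \<gamma>)"
  have pk0: "p - kk > 0" using pk by simp
  have Ip: "Iend > 0" using Ith pos kk_pos pk0 by (smt (verit) divide_pos_pos mult_pos_pos)
  have "0 < \<mu>/c * (RR - 1)" using Ip unfolding Iend_def .
  hence RR1: "RR > 1" using zero_less_mult_pos[of "\<mu>/c" "RR - 1"] pos by simp
  have Rp: "Rend \<ge> 0" using RR1 pos unfolding Rend_def by simp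
  have Sp: "Send > 0" by (rule Se_pos)
  define \<psi> where "\<psi> e = p * (Iend - e) / (\<epsilon> + Iend + (1 + a) * e)" for e
  define \<kappa>1 where "\<kappa>1 = \<psi> 0 - kk"
  have \<kappa>1: "\<kappa>1 > 0"
  proof -
    have "(p - kk) * Iend > \<epsilon> * kk" using Ith pk0 by (simp add: divide_less_eq mult.commute)
    hence "p * Iend > kk * (\<epsilon> + Iend)" by (simp add: algebra_simps)
    hence "p * Iend / (\<epsilon> + Iend) > kk" using pos Ip by (simp add: less_divide_eq)
    thus ?thesis unfolding \<kappa>1_def \<psi>_def by simp
  qed
  have "continuous (at 0) \<psi>" unfolding \<psi>_def using pos Ip by (intro continuous_intros) auto
  then obtain e1 where e1: "e1 > 0" "\<forall>e. dist e 0 < e1 \<longrightarrow> dist (\<psi> e) (\<psi> 0) < \<kappa>1 / 2"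
    using \<kappa>1 unfolding continuous_at_eps_delta by (metis half_gt_zero)
  define e0 where "e0 = min (e1 / 2) (Iend / 2)"
  have e0: "e0 > 0" "e0 < e1" "e0 \<le> Iend / 2" using e1 Ip by (auto simp: e0_def)
  have \<psi>e0: "\<psi> e0 \<ge> kk + \<kappa>1 / 2"
  proof -
    have "dist (\<psi> e0) (\<psi> 0) < \<kappa>1 / 2" using e1(2) e0 by (auto simp: dist_real_def)
    hence a: "\<psi> 0 - \<psi> e0 < \<kappa>1 / 2" unfolding dist_real_def abs_less_iff by (elim conjE) linarith
    have b: "kk + \<kappa>1 / 2 = \<psi> 0 - \<kappa>1 / 2" unfolding \<kappa>1_def by (simp add: field_simps)
    show ?thesis using a b by linarith
  qed
  obtain \<delta> where \<delta>: "\<delta> > 0" "\<forall>x. is_solution f x \<and> x 0 \<in> Om \<and> dist (x 0) (E1 \<alpha> c \<mu> \<gamma>) < \<delta> \<longrightarrow> (\<forall>t\<ge>0. dist (x t) (E1 \<alpha> c \<mu> \<gamma>) < e0)"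
    using st e0 unfolding stable_in_def by blast
  define \<delta>' where "\<delta>' = min (\<delta>/3) (Send/2)"
  have \<delta>': "\<delta>' > 0" "\<delta>' \<le> \<delta>/3" "\<delta>' \<le> Send/2" using \<delta> Sp by (auto simp: \<delta>'_def)
  define x0 where "x0 = mk5 (Send - \<delta>') Iend \<delta>' 0 Rend"
  have x0Om: "x0 \<in> Om" unfolding x0_def Om_iff using \<delta>' Ip Rp sum_E1 by simp
  obtain x where sol: "is_solution f x" and xx0: "x 0 = x0" using exists_sol[OF x0Om] by blast
  have x0': "x 0 \<in> Om" using xx0 x0Om by simp
  have "dist (x 0) (E1 \<alpha> c \<mu> \<gamma>) \<le> \<bar>(Send - \<delta>') - Send\<bar> + \<bar>Iend - Iend\<bar> + \<bar>\<delta>' - 0\<bar> + \<bar>0 - 0\<bar> + \<bar>Rend - Rend\<bar>"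
    unfolding xx0 x0_def E1_eq by (rule dist_mk5_le)
  also have "\<dots> = 2 * \<delta>'" using \<delta>' by simp
  also have "\<dots> < \<delta>" using \<delta>' \<delta> by simp
  finally have near: "dist (x 0) (E1 \<alpha> c \<mu> \<gamma>) < \<delta>" .
  have bnd: "dist (x t) (E1 \<alpha> c \<mu> \<gamma>) < e0" if "t \<ge> 0" for t using \<delta>(2) sol x0' near that by blast
  have inOm: "x t \<in> Om" if "t \<ge> 0" for t using sol_in[OF sol x0' that] .
  have C0: "x 0 $ 3 > 0" using xx0 \<delta>' by (simp add: x0_def)
  obtain t where t: "t \<ge> 0" "x t $ 3 > e0"
  proof -
    have "\<exists>t\<ge>0. x t $ 3 > e0"
    proof (rule grow_unbounded[of "\<lambda>t. x t $ 3" "\<lambda>t. f (x t) $ 3" "\<kappa>1 / 2"])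
      fix u :: real assume u: "u \<ge> 0"
      show "((\<lambda>t. x t $ 3) has_real_derivative f (x u) $ 3) (at u within {0..})" by (rule sol_deriv[OF sol u])
      have v: "x u \<in> Om" by (rule inOm[OF u])
      have I: "\<bar>x u $ 2 - Iend\<bar> < e0" using comp_le_dist[of "x u" 2 "E1 \<alpha> c \<mu> \<gamma>"] bnd[OF u] by (auto simp: E1_eq)
      have M: "x u $ 4 < e0" using comp_le_dist[of "x u" 4 "E1 \<alpha> c \<mu> \<gamma>"] bnd[OF u] by (auto simp: E1_eq)
      have M0: "x u $ 4 \<ge> 0" using Om_bounds[OF v] by auto
      let ?D = "\<epsilon> + x u $ 2 + a * x u $ 4"
      let ?Dm = "\<epsilon> + Iend + (1 + a) * e0"
      have Ilo: "x u $ 2 \<ge> Iend - e0" using I by (auto simp: abs_less_iff)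
      have Ilo0: "Iend - e0 > 0" using e0 Ip by simp
      have "a * x u $ 4 \<le> a * e0" using M pos by (intro mult_left_mono) auto
      hence Dle: "?D \<le> ?Dm" using I by (auto simp: abs_less_iff algebra_simps)
      have Dpos: "?D > 0" using D_ge[OF v] pos by auto
      have "p * (Iend - e0) / ?Dm \<le> p * (Iend - e0) / ?D"
        using Dle Dpos Ilo0 pos by (intro divide_left_mono mult_pos_pos) auto
      also have "\<dots> \<le> p * x u $ 2 / ?D" using Ilo Dpos pos by (intro divide_right_mono mult_left_mono) auto
      finally have "\<psi> e0 \<le> p * x u $ 2 / ?D" unfolding \<psi>_def .
      hence h: "p * x u $ 2 / ?D - m - d - \<mu> \<ge> \<kappa>1 / 2" using \<psi>e0 unfolding kk_def by linarith
      have "f (x u) $ 3 = x u $ 3 * (p * x u $ 2 / ?D - m - d - \<mu>)" by (simp add: f_nth algebra_simps)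
      also have "\<dots> \<ge> x u $ 3 * (\<kappa>1 / 2)" using h Om_bounds[OF v, of 3] by (intro mult_left_mono) auto
      finally show "f (x u) $ 3 \<ge> \<kappa>1 / 2 * x u $ 3" by (simp add: mult.commute)
    qed (use \<kappa>1 C0 in auto)
    thus ?thesis using that by blast
  qed
  have "x t $ 3 \<le> dist (x t) (E1 \<alpha> c \<mu> \<gamma>)" using comp_le_dist[of "x t" 3 "E1 \<alpha> c \<mu> \<gamma>"] by (simp add: E1_eq)
  thus False using bnd[OF t(1)] t(2) by simp
qed

end


theorem theorem2:
  fixes \<alpha> c \<mu> p \<epsilon> a \<gamma> m d q :: real
  assumes pos: "\<alpha> > 0" "c > 0" "\<mu> > 0" "p > 0" "\<epsilon> > 0" "a > 0" "\<gamma> > 0" "m > 0" "d > 0" "q > 0"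
  defines "f \<equiv> sicmr \<alpha> c \<mu> p \<epsilon> a \<gamma> m d q"
      and "\<Omega> \<equiv> Omega \<alpha> \<mu>"
      and "\<R> \<equiv> R0 \<alpha> c \<mu> \<gamma>"
      and "b \<equiv> bb a m d \<mu> p"
  shows
    "(\<R> \<le> 1 \<longrightarrow> globally_asymptotically_stable_in f \<Omega> (E0 \<alpha> \<mu>)) \<and>
     (\<R> > 1 \<longrightarrow> unstable_in f \<Omega> (E0 \<alpha> \<mu>)) \<and>
     (p < m+d+\<mu> \<and> 1 < \<R> \<and> \<R> < 1 + \<epsilon>*b*c/(a*\<mu>) \<longrightarrow> unstable_in f \<Omega> (E1 \<alpha> c \<mu> \<gamma>)) \<and>
     (p < m+d+\<mu> \<and> \<R> > 1 \<and> \<R> \<ge> 1 + \<epsilon>*b*c/(a*\<mu>) \<longrightarrow>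
        locally_asymptotically_stable_in f \<Omega> (E1 \<alpha> c \<mu> \<gamma>) \<and>
        (\<forall>x. is_solution f x \<and> x 0 \<in> \<Omega> \<and> x 0 $ 2 > 0 \<longrightarrow> (x \<longlongrightarrow> E1 \<alpha> c \<mu> \<gamma>) at_top)) \<and>
     (p > m+d+\<mu> \<and> 1 < \<R> \<and> \<R> \<le> 1 + \<epsilon>*b*c/(a*\<mu>) \<longrightarrow>
        locally_asymptotically_stable_in f \<Omega> (E1 \<alpha> c \<mu> \<gamma>) \<and>
        (\<forall>x. is_solution f x \<and> x 0 \<in> \<Omega> \<and> x 0 $ 2 > 0 \<longrightarrow> (x \<longlongrightarrow> E1 \<alpha> c \<mu> \<gamma>) at_top)) \<and>
     (p > m+d+\<mu> \<and> \<R> > 1 + \<epsilon>*b*c/(a*\<mu>) \<longrightarrow> unstable_in f \<Omega> (E1 \<alpha> c \<mu> \<gamma>))"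
proof -
  interpret S: sys \<alpha> c \<mu> p \<epsilon> a \<gamma> m d q using pos by unfold_locales
  have RRe: "\<R> = S.RR" unfolding \<R>_def S.RR_def ..
  have kke: "S.kk = m + d + \<mu>" by (simp add: S.kk_def)
  define X where "X = \<epsilon>*b*c/(a*\<mu>)"
  have Ie: "S.Iend = \<mu>/c * (\<R> - 1)" unfolding S.Iend_def RRe ..
  have be: "b = a * S.kk / (p - S.kk)" unfolding b_def bb_def kke by (simp add: algebra_simps)
  have muc: "\<mu>/c > 0" using pos by simp
  have Xe: "p \<noteq> S.kk \<Longrightarrow> \<mu>/c * X = \<epsilon> * S.kk / (p - S.kk)"
    unfolding X_def be using pos by (simp add: field_simps)
  have E1res: "locally_asymptotically_stable_in f \<Omega> (E1 \<alpha> c \<mu> \<gamma>) \<and>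
        (\<forall>x. is_solution f x \<and> x 0 \<in> \<Omega> \<and> x 0 $ 2 > 0 \<longrightarrow> (x \<longlongrightarrow> E1 \<alpha> c \<mu> \<gamma>) at_top)"
    if R1: "\<R> > 1" and th: "\<theta> > 0" "\<theta> * (p - S.kk) \<le> p" "p * S.Iend \<le> \<theta> * S.kk * \<epsilon>" for \<theta>
  proof -
    have R1': "S.RR > 1" using R1 RRe by simp
    have Ip: "S.Iend > 0" by (rule S.Ie_pos[OF R1'])
    have conv: "\<forall>x. is_solution f x \<and> x 0 \<in> \<Omega> \<and> x 0 $ 2 > 0 \<longrightarrow> (x \<longlongrightarrow> E1 \<alpha> c \<mu> \<gamma>) at_top"
      unfolding f_def \<Omega>_def using S.conv_E1[OF R1' th] by blast
    have "\<forall>x. is_solution f x \<and> x 0 \<in> \<Omega> \<and> dist (x 0) (E1 \<alpha> c \<mu> \<gamma>) < S.Iend \<longrightarrow> (x \<longlongrightarrow> E1 \<alpha> c \<mu> \<gamma>) at_top"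
    proof (intro allI impI)
      fix x assume A: "is_solution f x \<and> x 0 \<in> \<Omega> \<and> dist (x 0) (E1 \<alpha> c \<mu> \<gamma>) < S.Iend"
      have "\<bar>x 0 $ 2 - S.Iend\<bar> < S.Iend" using S.comp_le_dist[of "x 0" 2 "E1 \<alpha> c \<mu> \<gamma>"] A
        by (simp add: S.E1_eq)
      hence "x 0 $ 2 > 0" by (simp add: abs_less_iff)
      thus "(x \<longlongrightarrow> E1 \<alpha> c \<mu> \<gamma>) at_top" using conv A by blast
    qed
    moreover have "stable_in f \<Omega> (E1 \<alpha> c \<mu> \<gamma>)" unfolding f_def \<Omega>_def by (rule S.stable_E1[OF R1' th])
    ultimately show ?thesis using conv Ip unfolding locally_asymptotically_stable_in_def by blast
  qed
  show ?thesis
  proof (intro conjI impI)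
    assume R: "\<R> \<le> 1"
    hence R': "S.RR \<le> 1" using RRe by simp
    have conv: "\<forall>x. is_solution f x \<and> x 0 \<in> \<Omega> \<longrightarrow> (x \<longlongrightarrow> E0 \<alpha> \<mu>) at_top"
      unfolding f_def \<Omega>_def using S.conv_E0[OF R'] by blast
    have st: "stable_in f \<Omega> (E0 \<alpha> \<mu>)" unfolding f_def \<Omega>_def by (rule S.stable_E0[OF R'])
    show "globally_asymptotically_stable_in f \<Omega> (E0 \<alpha> \<mu>)"
      unfolding globally_asymptotically_stable_in_def locally_asymptotically_stable_in_def
      using st conv by (intro conjI exI[of _ 1]) auto
  next
    assume "\<R> > 1"
    hence R': "S.RR > 1" using RRe by simp
    show "unstable_in f \<Omega> (E0 \<alpha> \<mu>)" unfolding f_def \<Omega>_def by (rule S.unstable_E0[OF R'])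
  next
    assume A: "p < m+d+\<mu> \<and> 1 < \<R> \<and> \<R> < 1 + \<epsilon>*b*c/(a*\<mu>)"
    have "p - S.kk < 0" using A kke by simp
    hence "b < 0" unfolding be using pos S.kk_pos by (simp add: divide_pos_neg)
    hence "\<epsilon>*b < 0" using pos by (simp add: mult_pos_neg)
    hence "\<epsilon>*b*c < 0" using pos by (simp add: mult_neg_pos)
    hence "\<epsilon>*b*c/(a*\<mu>) < 0" using pos by (intro divide_neg_pos) auto
    hence False using A by simp
    thus "unstable_in f \<Omega> (E1 \<alpha> c \<mu> \<gamma>)" ..
  next
    assume A: "p < m+d+\<mu> \<and> \<R> > 1 \<and> \<R> \<ge> 1 + \<epsilon>*b*c/(a*\<mu>)"
    define \<theta> where "\<theta> = max 1 (p * S.Iend / (S.kk * \<epsilon>))"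
    have kp: "S.kk * \<epsilon> > 0" using S.kk_pos pos by simp
    have th1: "\<theta> > 0" by (simp add: \<theta>_def)
    have "p - S.kk < 0" using A kke by simp
    hence th2: "\<theta> * (p - S.kk) \<le> p" using th1 pos by (smt (verit) mult_pos_neg)
    have "p * S.Iend / (S.kk * \<epsilon>) \<le> \<theta>" by (simp add: \<theta>_def)
    hence th3: "p * S.Iend \<le> \<theta> * S.kk * \<epsilon>" using kp by (simp add: divide_le_eq mult.assoc)
    show "locally_asymptotically_stable_in f \<Omega> (E1 \<alpha> c \<mu> \<gamma>)" using E1res[OF _ th1 th2 th3] A by blast
    show "\<forall>x. is_solution f x \<and> x 0 \<in> \<Omega> \<and> x 0 $ 2 > 0 \<longrightarrow> (x \<longlongrightarrow> E1 \<alpha> c \<mu> \<gamma>) at_top"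
      using E1res[OF _ th1 th2 th3] A by blast
  next
    assume A: "p > m+d+\<mu> \<and> 1 < \<R> \<and> \<R> \<le> 1 + \<epsilon>*b*c/(a*\<mu>)"
    have pk: "p - S.kk > 0" using A kke by simp
    define \<theta> where "\<theta> = p / (p - S.kk)"
    have th1: "\<theta> > 0" using pk pos by (simp add: \<theta>_def)
    have th2: "\<theta> * (p - S.kk) \<le> p" using pk by (simp add: \<theta>_def)
    have "\<R> - 1 \<le> X" using A unfolding X_def by simp
    hence "\<mu>/c * (\<R> - 1) \<le> \<mu>/c * X" using muc by (intro mult_left_mono) auto
    hence "S.Iend \<le> \<epsilon> * S.kk / (p - S.kk)" using Xe pk Ie by simp
    hence "p * S.Iend \<le> p * (\<epsilon> * S.kk / (p - S.kk))" using pos by (intro mult_left_mono) auto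
    also have "\<dots> = \<theta> * S.kk * \<epsilon>" unfolding \<theta>_def by (simp add: field_simps)
    finally have th3: "p * S.Iend \<le> \<theta> * S.kk * \<epsilon>" .
    show "locally_asymptotically_stable_in f \<Omega> (E1 \<alpha> c \<mu> \<gamma>)" using E1res[OF _ th1 th2 th3] A by blast
    show "\<forall>x. is_solution f x \<and> x 0 \<in> \<Omega> \<and> x 0 $ 2 > 0 \<longrightarrow> (x \<longlongrightarrow> E1 \<alpha> c \<mu> \<gamma>) at_top"
      using E1res[OF _ th1 th2 th3] A by blast
  next
    assume A: "p > m+d+\<mu> \<and> \<R> > 1 + \<epsilon>*b*c/(a*\<mu>)"
    have pk: "p > S.kk" using A kke by simp
    have "\<R> - 1 > X" using A unfolding X_def by simp
    hence "\<mu>/c * (\<R> - 1) > \<mu>/c * X" using muc by (intro mult_strict_left_mono) auto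
    hence "S.Iend > \<epsilon> * S.kk / (p - S.kk)" using Xe pk Ie by simp
    thus "unstable_in f \<Omega> (E1 \<alpha> c \<mu> \<gamma>)" unfolding f_def \<Omega>_def by (rule S.unstable_E1[OF pk])
  qed
qed


end
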